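(* In the setting of the context, let $\tilde\rho_\alpha>\rho_\alpha$ be the number satisfying $\{(c^2\gamma+b^2e^{-2\tilde\rho_\alpha\delta})(2\tilde\rho_\alpha)^{-\alpha}+|b|(1+e^{-\tilde\rho_\alpha\delta})\}\tilde\rho_\alpha^{-\alpha}=\frac12$. Then for any $\mu>\tilde\rho_\alpha$ and $\lambda\ge2\mu$: (i) $k_\lambda$ is a Fredholm kernel of type $L^{2,-\mu}$ on $[0,\infty)$; (ii) there exists a unique Fredholm resolvent $r_\lambda$ of type $L^{2,-\mu}$ of $k_\lambda$ on $[0,\infty)$, i.e. a unique Fredholm kernel $r_\lambda$ of type $L^{2,-\mu}$ on $[0,\infty)$ with $r_\lambda(t,s)+\int_0^\infty k_\lambda(t,\theta)r_\lambda(\theta,s)d\theta=r_\lambda(t,s)+\int_0^\infty r_\lambda(t,\theta)k_\lambda(\theta,s)d\theta=k_\lambda(t,s)$ for a.e. $t,s\ge0$; (iii) for every $a\in L^{2,-\mu}(0,\infty;\mathbb{R})$, the equation $x(t)+\int_0^\infty k_\lambda(t,s)x(s)ds=a(t)$, $t\ge0$, has a unique solution $x\in L^{2,-\mu}(0,\infty;\mathbb{R})$, given by $x(t)=a(t)-\int_0^\infty r_\lambda(t,s)a(s)ds$ for a.e. $t\ge0$.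
   Context: Constants: $b\in\mathbb{R}$, $c\in\mathbb{R}\setminus\{0\}$, $\gamma>0$, $\alpha\in(\frac12,1]$, $\delta\ge0$, $\lambda>0$. $\rho_\alpha:=0$ if $b=0$; if $b\neq0$, $\rho_\alpha>0$ satisfies $|b|(1+e^{-\rho_\alpha\delta})\rho_\alpha^{-\alpha}=1$. $g_\lambda(\tau):=\frac{c^2\gamma+b^2e^{-\lambda\delta}}{\Gamma(\alpha)^2}\int_0^\infty e^{-\lambda\theta}\theta^{\alpha-1}(\theta+\tau)^{\alpha-1}d\theta-\frac{b}{\Gamma(\alpha)}(\tau-\delta)_+^{\alpha-1}$, $\tau\ge0$, with $x_+^{\alpha-1}:=x^{\alpha-1}\mathbf{1}_{(0,\infty)}(x)$; $k_\lambda(t,s):=g_\lambda(t-s)$ for $0\le s\le t$, $k_\lambda(t,s):=e^{-\lambda(s-t)}g_\lambda(s-t)$ for $0\le t\le s$. $L^{p,\beta}(0,\infty;\mathbb{R})$: measurable $f$ with $\int_0^\infty e^{p\beta t}|f(t)|^pdt<\infty$; $L^p=L^{p,0}$. For $p,q\in[1,\infty]$ with $\frac1p+\frac1q=1$, a measurable $k:[0,\infty)^2\to\mathbb{R}$ is a Fredholm kernel of type $L^p$ on $[0,\infty)$ if $\sup\int_0^\infty\int_0^\infty|g(t)k(t,s)f(s)|dsdt<\infty$, the supremum over $\|g\|_{L^q}\le1$, $\|f\|_{L^p}\le1$; for $\eta\in\mathbb{R}$, $k$ is a Fredholm kernel of type $L^{p,\eta}$ if $(t,s)\mapsto e^{\eta(t-s)}k(t,s)$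 is a Fredholm kernel of type $L^p$. *)

theory Defs
  imports "HOL-Analysis.Analysis"
begin

definition M0 :: "real measure" where
  "M0 = restrict_space lborel {0..}"

definition pospow :: "real \<Rightarrow> real \<Rightarrow> real" where
  "pospow x a = (if x > 0 then x powr a else 0)"

definition rho_alpha :: "real \<Rightarrow> real \<Rightarrow> real \<Rightarrow> real" where
  "rho_alpha b alpha delta =
     (if b = 0 then 0
      else (THE r. r > 0 \<and> \<bar>b\<bar> * (1 + exp (- r * delta)) * r powr (- alpha) = 1))"

definition g_lam :: "real \<Rightarrow> real \<Rightarrow> real \<Rightarrow> real \<Rightarrow> real \<Rightarrow> real \<Rightarrow> real \<Rightarrow> real" where
  "g_lam b c gamma alpha delta lam tau =
     (c^2 * gamma + b^2 * exp (- lam * delta)) / (Gamma alpha)^2 *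
       (LINT \<theta>:{0<..}|lborel. exp (- lam * \<theta>) * \<theta> powr (alpha - 1) * (\<theta> + tau) powr (alpha - 1))
     - b / Gamma alpha * pospow (tau - delta) (alpha - 1)"

definition k_lam :: "real \<Rightarrow> real \<Rightarrow> real \<Rightarrow> real \<Rightarrow> real \<Rightarrow> real \<Rightarrow> real \<Rightarrow> real \<Rightarrow> real" where
  "k_lam b c gamma alpha delta lam t s =
     (if s \<le> t then g_lam b c gamma alpha delta lam (t - s)
      else exp (- lam * (s - t)) * g_lam b c gamma alpha delta lam (s - t))"

definition Lpw :: "real \<Rightarrow> real \<Rightarrow> (real \<Rightarrow> real) \<Rightarrow> bool" where
  "Lpw p beta f \<longleftrightarrow> f \<in> borel_measurable M0 \<and>
     (\<integral>\<^sup>+ t. ennreal (exp (p * beta * t) * \<bar>f t\<bar> powr p) \<partial>M0) < \<infinity>"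

definition fredholm_L2 :: "(real \<Rightarrow> real \<Rightarrow> real) \<Rightarrow> bool" where
  "fredholm_L2 k \<longleftrightarrow>
     (\<lambda>z. k (fst z) (snd z)) \<in> borel_measurable (M0 \<Otimes>\<^sub>M M0) \<and>
     (SUP fg \<in> {(f, g). f \<in> borel_measurable M0 \<and> g \<in> borel_measurable M0 \<and>
                   (\<integral>\<^sup>+ s. ennreal (\<bar>f s\<bar> powr 2) \<partial>M0) \<le> 1 \<and>
                   (\<integral>\<^sup>+ t. ennreal (\<bar>g t\<bar> powr 2) \<partial>M0) \<le> 1}.
        \<integral>\<^sup>+ t. \<integral>\<^sup>+ s. ennreal \<bar>snd fg t * k t s * fst fg s\<bar> \<partial>M0 \<partial>M0) < \<infinity>"

definition fredholm_L2w :: "real \<Rightarrow> (real \<Rightarrow> real \<Rightarrow> real) \<Rightarrow> bool" where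
  "fredholm_L2w eta k \<longleftrightarrow> fredholm_L2 (\<lambda>t s. exp (eta * (t - s)) * k t s)"

definition fredholm_resolvent_L2w :: "real \<Rightarrow> (real \<Rightarrow> real \<Rightarrow> real) \<Rightarrow> (real \<Rightarrow> real \<Rightarrow> real) \<Rightarrow> bool" where
  "fredholm_resolvent_L2w eta k r \<longleftrightarrow> fredholm_L2w eta r \<and>
     (AE z in M0 \<Otimes>\<^sub>M M0.
        integrable M0 (\<lambda>\<theta>. k (fst z) \<theta> * r \<theta> (snd z)) \<and>
        integrable M0 (\<lambda>\<theta>. r (fst z) \<theta> * k \<theta> (snd z)) \<and>
        r (fst z) (snd z) + (\<integral>\<theta>. k (fst z) \<theta> * r \<theta> (snd z) \<partial>M0) = k (fst z) (snd z) \<and>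
        r (fst z) (snd z) + (\<integral>\<theta>. r (fst z) \<theta> * k \<theta> (snd z) \<partial>M0) = k (fst z) (snd z))"

definition solves_fredholm :: "(real \<Rightarrow> real \<Rightarrow> real) \<Rightarrow> (real \<Rightarrow> real) \<Rightarrow> (real \<Rightarrow> real) \<Rightarrow> bool" where
  "solves_fredholm k a x \<longleftrightarrow>
     (AE t in M0. integrable M0 (\<lambda>s. k t s * x s) \<and> x t + (\<integral>s. k t s * x s \<partial>M0) = a t)"

end

theory Submission
  imports Defs
begin

lemma space_M0[simp]: "space M0 = {0..}"
  by (simp add: M0_def space_restrict_space)

lemma sets_M0: "sets M0 = sets (restrict_space borel {0..})"
  unfolding M0_def by (rule sets_restrict_space_cong) simp

lemma sigma_finite_M0: "sigma_finite_measure M0"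
  unfolding M0_def by (rule sigma_finite_measure_restrict_space) (auto simp: lborel.sigma_finite_measure_axioms)

interpretation M0: sigma_finite_measure M0 by (rule sigma_finite_M0)
interpretation M00: pair_sigma_finite M0 M0 by unfold_locales

definition kmeas :: "(real \<Rightarrow> real \<Rightarrow> real) \<Rightarrow> bool" where
  "kmeas K \<longleftrightarrow> (\<lambda>z. K (fst z) (snd z)) \<in> borel_measurable (M0 \<Otimes>\<^sub>M M0)"

lemma kmeas_app:
  assumes "kmeas K" "f \<in> measurable N M0" "g \<in> measurable N M0"
  shows "(\<lambda>x. K (f x) (g x)) \<in> borel_measurable N"
proof -
  have "(\<lambda>x. (f x, g x)) \<in> measurable N (M0 \<Otimes>\<^sub>M M0)" using assms by measurable
  from measurable_compose[OF this assms(1)[unfolded kmeas_def]] show ?thesis by simp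
qed

lemma kmeas_comp:
  assumes "kmeas K" "kmeas L"
  shows "kmeas (\<lambda>t s. \<integral>\<theta>. K t \<theta> * L \<theta> s \<partial>M0)"
proof -
  have "(\<lambda>(z,\<theta>). K (fst z) \<theta> * L \<theta> (snd z)) \<in> borel_measurable ((M0 \<Otimes>\<^sub>M M0) \<Otimes>\<^sub>M M0)"
    unfolding split_beta'
    by (intro borel_measurable_times kmeas_app[OF assms(1)] kmeas_app[OF assms(2)]) measurable
  then show ?thesis unfolding kmeas_def
    by (rule M0.borel_measurable_lebesgue_integral)
qed

lemma abs_mult_le_sq: "\<bar>u * v\<bar> \<le> 1/2 * (u)\<^sup>2 + 1/2 * (v::real)\<^sup>2"
proof -
  have "0 \<le> (\<bar>u\<bar> - \<bar>v\<bar>)\<^sup>2" by simp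
  then show ?thesis by (simp add: power2_eq_square abs_mult algebra_simps)
qed

lemma nn_amgm:
  fixes u v :: "'a \<Rightarrow> real"
  assumes [measurable]: "u \<in> borel_measurable M" "v \<in> borel_measurable M"
    and X: "(\<integral>\<^sup>+x. ennreal ((u x)\<^sup>2) \<partial>M) \<le> ennreal X"
    and Y: "(\<integral>\<^sup>+x. ennreal ((v x)\<^sup>2) \<partial>M) \<le> ennreal Y" and X0: "X \<ge> 0" and Y0: "Y \<ge> 0"
  shows "(\<integral>\<^sup>+x. ennreal \<bar>u x * v x\<bar> \<partial>M) \<le> ennreal ((X + Y) / 2)"
proof -
  have "(\<integral>\<^sup>+x. ennreal \<bar>u x * v x\<bar> \<partial>M) \<le> (\<integral>\<^sup>+x. ennreal (1/2) * ennreal ((u x)\<^sup>2) + ennreal (1/2) * ennreal ((v x)\<^sup>2) \<partial>M)"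
  proof (rule nn_integral_mono)
    fix x
    have "\<bar>u x * v x\<bar> \<le> 1/2 * (u x)\<^sup>2 + 1/2 * (v x)\<^sup>2"
      by (rule abs_mult_le_sq)
    then have "ennreal \<bar>u x * v x\<bar> \<le> ennreal (1/2 * (u x)\<^sup>2 + 1/2 * (v x)\<^sup>2)" by (rule ennreal_leI)
    also have "\<dots> = ennreal (1/2) * ennreal ((u x)\<^sup>2) + ennreal (1/2) * ennreal ((v x)\<^sup>2)"
      by (simp add: ennreal_plus[symmetric] ennreal_mult[symmetric] del: ennreal_plus ennreal_half)
    finally show "ennreal \<bar>u x * v x\<bar> \<le> ennreal (1/2) * ennreal ((u x)\<^sup>2) + ennreal (1/2) * ennreal ((v x)\<^sup>2)" .
  qed
  also have "\<dots> = ennreal (1/2) * (\<integral>\<^sup>+x. ennreal ((u x)\<^sup>2) \<partial>M) + ennreal (1/2) * (\<integral>\<^sup>+x. ennreal ((v x)\<^sup>2) \<partial>M)"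
    by (simp add: nn_integral_add nn_integral_cmult del: ennreal_half)
  also have "\<dots> \<le> ennreal (1/2) * ennreal X + ennreal (1/2) * ennreal Y"
    by (intro add_mono mult_left_mono X Y) auto
  also have "\<dots> = ennreal ((X + Y) / 2)"
    using X0 Y0 by (simp add: ennreal_plus[symmetric] ennreal_mult[symmetric] del: ennreal_plus ennreal_half add_divide_distrib)
  finally show ?thesis .
qed

lemma nn_norm_integral: "ennreal \<bar>integral\<^sup>L M f\<bar> \<le> (\<integral>\<^sup>+x. ennreal \<bar>f x :: real\<bar> \<partial>M)"
  using integral_norm_bound_ennreal[of M f] by (cases "integrable M f") (auto simp: not_integrable_integral_eq)

lemma abs_powr_2: "\<bar>x::real\<bar> powr 2 = x\<^sup>2"
  by (cases "x = 0") (auto simp: powr_realpow[of "\<bar>x\<bar>" 2, simplified])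

lemma kmeas_pair_nn:
  assumes "kmeas L"
  shows "(\<lambda>z. ennreal \<bar>L (fst z) (snd z)\<bar>) \<in> borel_measurable (M0 \<Otimes>\<^sub>M M0)"
proof -
  have [measurable]: "(\<lambda>z. L (fst z) (snd z)) \<in> borel_measurable (M0 \<Otimes>\<^sub>M M0)" using assms by (simp add: kmeas_def)
  show ?thesis by measurable
qed

lemma kmeas_swap: "kmeas L \<Longrightarrow> kmeas (\<lambda>t s. L s t)"
proof -
  assume L: "kmeas L"
  have "(\<lambda>z. (snd z, fst z)) \<in> measurable (M0 \<Otimes>\<^sub>M M0) (M0 \<Otimes>\<^sub>M M0)" by measurable
  from measurable_compose[OF this L[unfolded kmeas_def]] show ?thesis by (simp add: kmeas_def)
qed

lemma opbound:
  fixes h :: "real \<Rightarrow> ennreal"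
  assumes L: "kmeas L" and a: "a \<ge> 0" and b: "b \<ge> 0"
    and row: "\<And>t. t \<ge> 0 \<Longrightarrow> (\<integral>\<^sup>+s. ennreal \<bar>L t s\<bar> \<partial>M0) \<le> ennreal a"
    and col: "\<And>s. s \<ge> 0 \<Longrightarrow> (\<integral>\<^sup>+t. ennreal \<bar>L t s\<bar> \<partial>M0) \<le> ennreal b"
    and h[measurable]: "h \<in> borel_measurable M0"
  shows "(\<integral>\<^sup>+t. (\<integral>\<^sup>+s. ennreal \<bar>L t s\<bar> * h s \<partial>M0)\<^sup>2 \<partial>M0) \<le> ennreal (a * b) * (\<integral>\<^sup>+s. (h s)\<^sup>2 \<partial>M0)"
proof -
  have [measurable]: "(\<lambda>z. L (fst z) (snd z)) \<in> borel_measurable (M0 \<Otimes>\<^sub>M M0)" using L by (simp add: kmeas_def)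
  have pw: "(\<integral>\<^sup>+s. ennreal \<bar>L t s\<bar> * h s \<partial>M0)\<^sup>2 \<le> ennreal a * (\<integral>\<^sup>+s. ennreal \<bar>L t s\<bar> * (h s)\<^sup>2 \<partial>M0)"
    if t: "t \<ge> 0" for t
  proof -
    have [measurable]: "(\<lambda>s. L t s) \<in> borel_measurable M0" by (intro kmeas_app[OF L]) (use t in auto)
    have e1: "ennreal \<bar>L t s\<bar> * h s = ennreal (sqrt \<bar>L t s\<bar>) * (ennreal (sqrt \<bar>L t s\<bar>) * h s)" for s
      by (simp add: mult.assoc[symmetric] ennreal_mult[symmetric])
    have e2: "(ennreal (sqrt \<bar>L t s\<bar>))\<^sup>2 = ennreal \<bar>L t s\<bar>" for s
      by (simp add: ennreal_power)
    have e3: "(ennreal (sqrt \<bar>L t s\<bar>) * h s)\<^sup>2 = ennreal \<bar>L t s\<bar> * (h s)\<^sup>2" for s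
      by (simp add: power_mult_distrib e2)
    have "(\<integral>\<^sup>+s. ennreal \<bar>L t s\<bar> * h s \<partial>M0)\<^sup>2
        = (\<integral>\<^sup>+s. ennreal (sqrt \<bar>L t s\<bar>) * (ennreal (sqrt \<bar>L t s\<bar>) * h s) \<partial>M0)\<^sup>2"
      by (simp only: e1)
    also have "\<dots> \<le> (\<integral>\<^sup>+s. (ennreal (sqrt \<bar>L t s\<bar>))\<^sup>2 \<partial>M0) * (\<integral>\<^sup>+s. (ennreal (sqrt \<bar>L t s\<bar>) * h s)\<^sup>2 \<partial>M0)"
      by (rule Cauchy_Schwarz_nn_integral) measurable
    also have "\<dots> = (\<integral>\<^sup>+s. ennreal \<bar>L t s\<bar> \<partial>M0) * (\<integral>\<^sup>+s. ennreal \<bar>L t s\<bar> * (h s)\<^sup>2 \<partial>M0)"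
      by (simp only: e2 e3)
    also have "\<dots> \<le> ennreal a * (\<integral>\<^sup>+s. ennreal \<bar>L t s\<bar> * (h s)\<^sup>2 \<partial>M0)"
      by (intro mult_right_mono row t) auto
    finally show ?thesis .
  qed
  have inner: "(\<integral>\<^sup>+t. \<integral>\<^sup>+s. ennreal \<bar>L t s\<bar> * (h s)\<^sup>2 \<partial>M0 \<partial>M0) \<le> ennreal b * (\<integral>\<^sup>+s. (h s)\<^sup>2 \<partial>M0)"
  proof -
    have "(\<integral>\<^sup>+t. \<integral>\<^sup>+s. ennreal \<bar>L t s\<bar> * (h s)\<^sup>2 \<partial>M0 \<partial>M0) = (\<integral>\<^sup>+s. \<integral>\<^sup>+t. ennreal \<bar>L t s\<bar> * (h s)\<^sup>2 \<partial>M0 \<partial>M0)"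
      by (rule M00.Fubini'[symmetric]) measurable
    also have "\<dots> = (\<integral>\<^sup>+s. (\<integral>\<^sup>+t. ennreal \<bar>L t s\<bar> \<partial>M0) * (h s)\<^sup>2 \<partial>M0)"
      by (intro nn_integral_cong nn_integral_multc) (auto intro!: kmeas_app[OF L] measurable_compose[OF _ measurable_ennreal] borel_measurable_abs)
    also have "\<dots> \<le> (\<integral>\<^sup>+s. ennreal b * (h s)\<^sup>2 \<partial>M0)"
      by (intro nn_integral_mono mult_right_mono col) auto
    also have "\<dots> = ennreal b * (\<integral>\<^sup>+s. (h s)\<^sup>2 \<partial>M0)"
      by (rule nn_integral_cmult) measurable
    finally show ?thesis .
  qed
  have "(\<integral>\<^sup>+t. (\<integral>\<^sup>+s. ennreal \<bar>L t s\<bar> * h s \<partial>M0)\<^sup>2 \<partial>M0) \<le> (\<integral>\<^sup>+t. ennreal a * (\<integral>\<^sup>+s. ennreal \<bar>L t s\<bar> * (h s)\<^sup>2 \<partial>M0) \<partial>M0)"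
    by (intro nn_integral_mono pw) auto
  also have "\<dots> = ennreal a * (\<integral>\<^sup>+t. \<integral>\<^sup>+s. ennreal \<bar>L t s\<bar> * (h s)\<^sup>2 \<partial>M0 \<partial>M0)"
    by (rule nn_integral_cmult) measurable
  also have "\<dots> \<le> ennreal a * (ennreal b * (\<integral>\<^sup>+s. (h s)\<^sup>2 \<partial>M0))"
    by (intro mult_left_mono inner) auto
  finally show ?thesis using a b by (simp add: ennreal_mult mult.assoc)
qed

lemma opbound_T:
  fixes h :: "real \<Rightarrow> ennreal"
  assumes L: "kmeas L" and a: "a \<ge> 0" and b: "b \<ge> 0"
    and row: "\<And>t. t \<ge> 0 \<Longrightarrow> (\<integral>\<^sup>+s. ennreal \<bar>L t s\<bar> \<partial>M0) \<le> ennreal a"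
    and col: "\<And>s. s \<ge> 0 \<Longrightarrow> (\<integral>\<^sup>+t. ennreal \<bar>L t s\<bar> \<partial>M0) \<le> ennreal b"
    and h[measurable]: "h \<in> borel_measurable M0"
  shows "(\<integral>\<^sup>+s. (\<integral>\<^sup>+t. h t * ennreal \<bar>L t s\<bar> \<partial>M0)\<^sup>2 \<partial>M0) \<le> ennreal (b * a) * (\<integral>\<^sup>+s. (h s)\<^sup>2 \<partial>M0)"
  using opbound[OF kmeas_swap[OF L] b a col row h] by (simp add: mult.commute)

lemma schur:
  assumes L: "kmeas L" and a: "a \<ge> 0"
    and row: "\<And>t. t \<ge> 0 \<Longrightarrow> (\<integral>\<^sup>+s. ennreal \<bar>L t s\<bar> \<partial>M0) \<le> ennreal a"
    and col: "\<And>s. s \<ge> 0 \<Longrightarrow> (\<integral>\<^sup>+t. ennreal \<bar>L t s\<bar> \<partial>M0) \<le> ennreal a"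
  shows "fredholm_L2 L"
proof -
  have [measurable]: "(\<lambda>z. L (fst z) (snd z)) \<in> borel_measurable (M0 \<Otimes>\<^sub>M M0)" using L by (simp add: kmeas_def)
  have bnd: "(\<integral>\<^sup>+ t. \<integral>\<^sup>+ s. ennreal \<bar>g t * L t s * f s\<bar> \<partial>M0 \<partial>M0) \<le> ennreal a"
    if f[measurable]: "f \<in> borel_measurable M0" and g[measurable]: "g \<in> borel_measurable M0"
      and nf: "(\<integral>\<^sup>+ s. ennreal (\<bar>f s\<bar> powr 2) \<partial>M0) \<le> 1"
      and ng: "(\<integral>\<^sup>+ t. ennreal (\<bar>g t\<bar> powr 2) \<partial>M0) \<le> 1" for f g
  proof -
    have pw: "ennreal \<bar>g t * L t s * f s\<bar> \<le> ennreal (1/2) * (ennreal ((g t)\<^sup>2) * ennreal \<bar>L t s\<bar>) + ennreal (1/2) * (ennreal \<bar>L t s\<bar> * ennreal ((f s)\<^sup>2))" for t s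
    proof -
      have "\<bar>g t * L t s * f s\<bar> = \<bar>L t s\<bar> * \<bar>g t * f s\<bar>" by (simp add: abs_mult)
      also have "\<dots> \<le> \<bar>L t s\<bar> * (1/2 * (g t)\<^sup>2 + 1/2 * (f s)\<^sup>2)"
        by (intro mult_left_mono abs_mult_le_sq) auto
      finally have "ennreal \<bar>g t * L t s * f s\<bar> \<le> ennreal (\<bar>L t s\<bar> * (1/2 * (g t)\<^sup>2 + 1/2 * (f s)\<^sup>2))"
        by (rule ennreal_leI)
      also have "\<dots> = ennreal (1/2 * ((g t)\<^sup>2 * \<bar>L t s\<bar>)) + ennreal (1/2 * (\<bar>L t s\<bar> * (f s)\<^sup>2))"
        by (subst ennreal_plus[symmetric]) (auto simp: algebra_simps)
      also have "\<dots> = ennreal (1/2) * (ennreal ((g t)\<^sup>2) * ennreal \<bar>L t s\<bar>) + ennreal (1/2) * (ennreal \<bar>L t s\<bar> * ennreal ((f s)\<^sup>2))"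
        by (simp add: ennreal_mult[symmetric] del: ennreal_half)
      finally show ?thesis .
    qed
    have hB: "(\<integral>\<^sup>+ t. \<integral>\<^sup>+ s. ennreal \<bar>L t s\<bar> * ennreal ((f s)\<^sup>2) \<partial>M0 \<partial>M0) \<le> ennreal a"
    proof -
      have "(\<integral>\<^sup>+ t. \<integral>\<^sup>+ s. ennreal \<bar>L t s\<bar> * ennreal ((f s)\<^sup>2) \<partial>M0 \<partial>M0)
          = (\<integral>\<^sup>+ s. \<integral>\<^sup>+ t. ennreal \<bar>L t s\<bar> * ennreal ((f s)\<^sup>2) \<partial>M0 \<partial>M0)"
        by (rule M00.Fubini'[symmetric]) measurable
      also have "\<dots> = (\<integral>\<^sup>+ s. (\<integral>\<^sup>+ t. ennreal \<bar>L t s\<bar> \<partial>M0) * ennreal ((f s)\<^sup>2) \<partial>M0)"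
        by (intro nn_integral_cong nn_integral_multc) (auto intro!: kmeas_app[OF L] measurable_compose[OF _ measurable_ennreal] borel_measurable_abs)
      also have "\<dots> \<le> (\<integral>\<^sup>+ s. ennreal a * ennreal ((f s)\<^sup>2) \<partial>M0)"
        by (intro nn_integral_mono mult_right_mono col) auto
      also have "\<dots> = ennreal a * (\<integral>\<^sup>+ s. ennreal ((f s)\<^sup>2) \<partial>M0)"
        by (rule nn_integral_cmult) measurable
      also have "\<dots> \<le> ennreal a * 1"
        using nf by (intro mult_left_mono) (auto simp: abs_powr_2)
      finally show ?thesis by simp
    qed
    have hA: "(\<integral>\<^sup>+ t. \<integral>\<^sup>+ s. ennreal ((g t)\<^sup>2) * ennreal \<bar>L t s\<bar> \<partial>M0 \<partial>M0) \<le> ennreal a"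
    proof -
      have "(\<integral>\<^sup>+ t. \<integral>\<^sup>+ s. ennreal ((g t)\<^sup>2) * ennreal \<bar>L t s\<bar> \<partial>M0 \<partial>M0)
          = (\<integral>\<^sup>+ t. ennreal ((g t)\<^sup>2) * (\<integral>\<^sup>+ s. ennreal \<bar>L t s\<bar> \<partial>M0) \<partial>M0)"
        by (intro nn_integral_cong nn_integral_cmult) (auto intro!: kmeas_app[OF L] measurable_compose[OF _ measurable_ennreal] borel_measurable_abs)
      also have "\<dots> \<le> (\<integral>\<^sup>+ t. ennreal ((g t)\<^sup>2) * ennreal a \<partial>M0)"
        by (intro nn_integral_mono mult_left_mono row) auto
      also have "\<dots> = (\<integral>\<^sup>+ t. ennreal ((g t)\<^sup>2) \<partial>M0) * ennreal a"
        by (rule nn_integral_multc) measurable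
      also have "\<dots> \<le> 1 * ennreal a"
        using ng by (intro mult_right_mono) (auto simp: abs_powr_2)
      finally show ?thesis by simp
    qed
    have "(\<integral>\<^sup>+ t. \<integral>\<^sup>+ s. ennreal \<bar>g t * L t s * f s\<bar> \<partial>M0 \<partial>M0)
      \<le> (\<integral>\<^sup>+ t. \<integral>\<^sup>+ s. ennreal (1/2) * (ennreal ((g t)\<^sup>2) * ennreal \<bar>L t s\<bar>) + ennreal (1/2) * (ennreal \<bar>L t s\<bar> * ennreal ((f s)\<^sup>2)) \<partial>M0 \<partial>M0)"
      by (intro nn_integral_mono pw)
    also have "\<dots> = (\<integral>\<^sup>+ t. ennreal (1/2) * (\<integral>\<^sup>+ s. ennreal ((g t)\<^sup>2) * ennreal \<bar>L t s\<bar> \<partial>M0)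
        + ennreal (1/2) * (\<integral>\<^sup>+ s. ennreal \<bar>L t s\<bar> * ennreal ((f s)\<^sup>2) \<partial>M0) \<partial>M0)"
    proof (intro nn_integral_cong)
      fix t assume "t \<in> space M0"
      then have [measurable]: "(\<lambda>s. L t s) \<in> borel_measurable M0" by (intro kmeas_app[OF L]) auto
      show "(\<integral>\<^sup>+ s. ennreal (1/2) * (ennreal ((g t)\<^sup>2) * ennreal \<bar>L t s\<bar>) + ennreal (1/2) * (ennreal \<bar>L t s\<bar> * ennreal ((f s)\<^sup>2)) \<partial>M0)
        = ennreal (1/2) * (\<integral>\<^sup>+ s. ennreal ((g t)\<^sup>2) * ennreal \<bar>L t s\<bar> \<partial>M0)
        + ennreal (1/2) * (\<integral>\<^sup>+ s. ennreal \<bar>L t s\<bar> * ennreal ((f s)\<^sup>2) \<partial>M0)"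
        by (simp add: nn_integral_add nn_integral_cmult del: ennreal_half)
    qed
    also have "\<dots> = ennreal (1/2) * (\<integral>\<^sup>+ t. \<integral>\<^sup>+ s. ennreal ((g t)\<^sup>2) * ennreal \<bar>L t s\<bar> \<partial>M0 \<partial>M0)
        + ennreal (1/2) * (\<integral>\<^sup>+ t. \<integral>\<^sup>+ s. ennreal \<bar>L t s\<bar> * ennreal ((f s)\<^sup>2) \<partial>M0 \<partial>M0)"
      by (simp add: nn_integral_add nn_integral_cmult del: ennreal_half)
    also have "\<dots> \<le> ennreal (1/2) * ennreal a + ennreal (1/2) * ennreal a"
      by (intro add_mono mult_left_mono hA hB) auto
    also have "\<dots> = ennreal a"
      using a by (simp add: ennreal_mult[symmetric] ennreal_plus[symmetric] del: ennreal_half ennreal_plus)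
    finally show ?thesis .
  qed
  show ?thesis unfolding fredholm_L2_def
    apply (rule conjI, measurable)
    apply (rule le_less_trans[where y="ennreal a"])
     apply (rule SUP_least)
    using bnd by auto
qed

lemma integrable_nn_bound:
  fixes f :: "'a \<Rightarrow> real"
  assumes "f \<in> borel_measurable M" "(\<integral>\<^sup>+x. ennreal \<bar>f x\<bar> \<partial>M) \<le> ennreal c"
  shows "integrable M f"
proof -
  have "(\<integral>\<^sup>+x. ennreal \<bar>f x\<bar> \<partial>M) < \<infinity>" using assms(2) by (rule le_less_trans) simp
  then show ?thesis using assms(1) by (simp add: integrable_iff_bounded)
qed

lemma prod_int:
  assumes L: "kmeas L" and u[measurable]: "u \<in> borel_measurable M0" and g[measurable]: "g \<in> borel_measurable M0"
    and bnd: "\<And>\<theta>. \<theta> \<ge> 0 \<Longrightarrow> (\<integral>\<^sup>+s. ennreal \<bar>L \<theta> s * g s\<bar> \<partial>M0) \<le> ennreal B"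
    and ub: "(\<integral>\<^sup>+\<theta>. ennreal \<bar>u \<theta>\<bar> \<partial>M0) \<le> ennreal U"
  shows "integrable (M0 \<Otimes>\<^sub>M M0) (\<lambda>(\<theta>, s). u \<theta> * (L \<theta> s * g s))"
proof -
  have [measurable]: "(\<lambda>z. L (fst z) (snd z)) \<in> borel_measurable (M0 \<Otimes>\<^sub>M M0)" using L by (simp add: kmeas_def)
  have "(\<integral>\<^sup>+z. ennreal \<bar>(\<lambda>(\<theta>, s). u \<theta> * (L \<theta> s * g s)) z\<bar> \<partial>(M0 \<Otimes>\<^sub>M M0))
      = (\<integral>\<^sup>+\<theta>. \<integral>\<^sup>+s. ennreal \<bar>u \<theta>\<bar> * ennreal \<bar>L \<theta> s * g s\<bar> \<partial>M0 \<partial>M0)"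
    by (subst M0.nn_integral_fst[symmetric]) (auto simp: abs_mult ennreal_mult intro!: nn_integral_cong)
  also have "\<dots> = (\<integral>\<^sup>+\<theta>. ennreal \<bar>u \<theta>\<bar> * (\<integral>\<^sup>+s. ennreal \<bar>L \<theta> s * g s\<bar> \<partial>M0) \<partial>M0)"
    by (intro nn_integral_cong nn_integral_cmult) (auto intro!: measurable_compose[OF _ measurable_ennreal] borel_measurable_abs borel_measurable_times kmeas_app[OF L])
  also have "\<dots> \<le> (\<integral>\<^sup>+\<theta>. ennreal \<bar>u \<theta>\<bar> * ennreal B \<partial>M0)"
    by (intro nn_integral_mono mult_left_mono bnd) auto
  also have "\<dots> = (\<integral>\<^sup>+\<theta>. ennreal \<bar>u \<theta>\<bar> \<partial>M0) * ennreal B"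
    by (rule nn_integral_multc) measurable
  also have "\<dots> \<le> ennreal U * ennreal B"
    by (intro mult_right_mono ub) auto
  also have "\<dots> < \<infinity>" by (simp add: ennreal_mult_less_top)
  finally show ?thesis by (subst integrable_iff_bounded) auto
qed

lemma L2_normalize:
  fixes f :: "real \<Rightarrow> real"
  assumes f[measurable]: "f \<in> borel_measurable M0" and fin: "(\<integral>\<^sup>+s. ennreal ((f s)\<^sup>2) \<partial>M0) < \<infinity>"
  obtains c where "c > 0" "(\<integral>\<^sup>+s. ennreal (\<bar>f s / c\<bar> powr 2) \<partial>M0) \<le> 1"
proof -
  obtain A where A: "(\<integral>\<^sup>+s. ennreal ((f s)\<^sup>2) \<partial>M0) = ennreal A" "A \<ge> 0"
    using fin by (cases "(\<integral>\<^sup>+s. ennreal ((f s)\<^sup>2) \<partial>M0)") auto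
  define c where "c = sqrt A + 1"
  have c0: "c > 0" using A by (simp add: c_def add_nonneg_pos)
  have "A \<le> c\<^sup>2" using A unfolding c_def by (simp add: power2_eq_square algebra_simps)
  then have Ac: "A / c\<^sup>2 \<le> 1" using c0 by (simp add: divide_le_eq_1)
  have "(\<integral>\<^sup>+s. ennreal (\<bar>f s / c\<bar> powr 2) \<partial>M0) = (\<integral>\<^sup>+s. ennreal ((f s)\<^sup>2) * ennreal (1 / c\<^sup>2) \<partial>M0)"
    by (intro nn_integral_cong) (simp add: abs_powr_2 ennreal_mult[symmetric] power_divide)
  also have "\<dots> = ennreal A * ennreal (1 / c\<^sup>2)"
    by (subst nn_integral_multc) (auto simp: A)
  also have "\<dots> = ennreal (A / c\<^sup>2)" using A by (simp add: ennreal_mult[symmetric])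
  also have "\<dots> \<le> 1" using Ac by simp
  finally show ?thesis using that c0 by blast
qed

lemma fred_bound:
  fixes f g :: "real \<Rightarrow> real"
  assumes F: "fredholm_L2 L"
    and f[measurable]: "f \<in> borel_measurable M0" and fin: "(\<integral>\<^sup>+s. ennreal ((f s)\<^sup>2) \<partial>M0) < \<infinity>"
    and g[measurable]: "g \<in> borel_measurable M0" and gin: "(\<integral>\<^sup>+s. ennreal ((g s)\<^sup>2) \<partial>M0) < \<infinity>"
  shows "(\<integral>\<^sup>+t. \<integral>\<^sup>+s. ennreal \<bar>g t * L t s * f s\<bar> \<partial>M0 \<partial>M0) < \<infinity>"
proof -
  obtain cf where cf: "cf > 0" "(\<integral>\<^sup>+s. ennreal (\<bar>f s / cf\<bar> powr 2) \<partial>M0) \<le> 1"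
    using L2_normalize[OF f fin] by blast
  obtain cg where cg: "cg > 0" "(\<integral>\<^sup>+s. ennreal (\<bar>g s / cg\<bar> powr 2) \<partial>M0) \<le> 1"
    using L2_normalize[OF g gin] by blast
  define SP where "SP = (SUP fg \<in> {(f, g). f \<in> borel_measurable M0 \<and> g \<in> borel_measurable M0 \<and>
                   (\<integral>\<^sup>+ s. ennreal (\<bar>f s\<bar> powr 2) \<partial>M0) \<le> 1 \<and>
                   (\<integral>\<^sup>+ t. ennreal (\<bar>g t\<bar> powr 2) \<partial>M0) \<le> 1}.
        \<integral>\<^sup>+ t. \<integral>\<^sup>+ s. ennreal \<bar>snd fg t * L t s * fst fg s\<bar> \<partial>M0 \<partial>M0)"
  have SP: "SP < \<infinity>" using F unfolding fredholm_L2_def SP_def by blast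
  have le: "(\<integral>\<^sup>+t. \<integral>\<^sup>+s. ennreal \<bar>g t / cg * L t s * (f s / cf)\<bar> \<partial>M0 \<partial>M0) \<le> SP"
    unfolding SP_def
    by (rule SUP_upper2[of "(\<lambda>s. f s / cf, \<lambda>t. g t / cg)"]) (use cf cg in \<open>auto simp: power_divide\<close>)
  have "(\<integral>\<^sup>+t. \<integral>\<^sup>+s. ennreal \<bar>g t * L t s * f s\<bar> \<partial>M0 \<partial>M0)
      = (\<integral>\<^sup>+t. \<integral>\<^sup>+s. ennreal (cg * cf) * ennreal \<bar>g t / cg * L t s * (f s / cf)\<bar> \<partial>M0 \<partial>M0)"
    using cf cg by (intro nn_integral_cong) (simp add: ennreal_mult[symmetric] abs_mult)
  also have "\<dots> = ennreal (cg * cf) * (\<integral>\<^sup>+t. \<integral>\<^sup>+s. ennreal \<bar>g t / cg * L t s * (f s / cf)\<bar> \<partial>M0 \<partial>M0)"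
  proof -
    have [measurable]: "(\<lambda>z. L (fst z) (snd z)) \<in> borel_measurable (M0 \<Otimes>\<^sub>M M0)" using F by (simp add: fredholm_L2_def)
    have "(\<integral>\<^sup>+t. \<integral>\<^sup>+s. ennreal (cg * cf) * ennreal \<bar>g t / cg * L t s * (f s / cf)\<bar> \<partial>M0 \<partial>M0)
      = (\<integral>\<^sup>+t. ennreal (cg * cf) * \<integral>\<^sup>+s. ennreal \<bar>g t / cg * L t s * (f s / cf)\<bar> \<partial>M0 \<partial>M0)"
    proof (intro nn_integral_cong)
      fix t assume "t \<in> space M0"
      then have [measurable]: "(\<lambda>s. L t s) \<in> borel_measurable M0" by (intro kmeas_app[of L]) (auto simp: kmeas_def)
      show "(\<integral>\<^sup>+s. ennreal (cg * cf) * ennreal \<bar>g t / cg * L t s * (f s / cf)\<bar> \<partial>M0)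
        = ennreal (cg * cf) * \<integral>\<^sup>+s. ennreal \<bar>g t / cg * L t s * (f s / cf)\<bar> \<partial>M0"
        by (rule nn_integral_cmult) measurable
    qed
    also have "\<dots> = ennreal (cg * cf) * (\<integral>\<^sup>+t. \<integral>\<^sup>+s. ennreal \<bar>g t / cg * L t s * (f s / cf)\<bar> \<partial>M0 \<partial>M0)"
      by (rule nn_integral_cmult) measurable
    finally show ?thesis .
  qed
  also have "\<dots> \<le> ennreal (cg * cf) * SP" by (intro mult_left_mono le) auto
  also have "\<dots> < \<infinity>" using SP by (simp add: ennreal_mult_less_top)
  finally show ?thesis .
qed

lemma AE_fin:
  fixes w :: "real \<Rightarrow> real"
  assumes F: "fredholm_L2 R'" and L: "kmeas L" and a: "a \<ge> 0" and b: "b \<ge> 0"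
    and row: "\<And>t. t \<ge> 0 \<Longrightarrow> (\<integral>\<^sup>+s. ennreal \<bar>L t s\<bar> \<partial>M0) \<le> ennreal a"
    and col: "\<And>s. s \<ge> 0 \<Longrightarrow> (\<integral>\<^sup>+t. ennreal \<bar>L t s\<bar> \<partial>M0) \<le> ennreal b"
    and w[measurable]: "w \<in> borel_measurable M0" and wpos: "\<And>t. t \<ge> 0 \<Longrightarrow> 0 < w t"
    and w1: "\<And>t. t \<ge> 0 \<Longrightarrow> w t \<le> 1"
    and win: "(\<integral>\<^sup>+t. ennreal ((w t)\<^sup>2) \<partial>M0) < \<infinity>"
  shows "AE t in M0. AE s in M0. (\<integral>\<^sup>+\<theta>. ennreal \<bar>L t \<theta>\<bar> * ennreal \<bar>R' \<theta> s\<bar> \<partial>M0) < \<infinity>"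
proof -
  have R': "kmeas R'" using F by (simp add: fredholm_L2_def kmeas_def)
  have [measurable]: "(\<lambda>z. L (fst z) (snd z)) \<in> borel_measurable (M0 \<Otimes>\<^sub>M M0)" using L by (simp add: kmeas_def)
  have [measurable]: "(\<lambda>z. R' (fst z) (snd z)) \<in> borel_measurable (M0 \<Otimes>\<^sub>M M0)" using R' by (simp add: kmeas_def)
  have [measurable]: "(\<lambda>z. L (snd z) (fst z)) \<in> borel_measurable (M0 \<Otimes>\<^sub>M M0)" using kmeas_swap[OF L] by (simp add: kmeas_def)
  have [measurable]: "(\<lambda>x. L (snd (fst x)) (fst (fst x))) \<in> borel_measurable ((M0 \<Otimes>\<^sub>M M0) \<Otimes>\<^sub>M M0)"
    by (rule kmeas_app[OF L]) measurable
  have [measurable]: "(\<lambda>x. R' (fst (fst x)) (snd x)) \<in> borel_measurable ((M0 \<Otimes>\<^sub>M M0) \<Otimes>\<^sub>M M0)"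
    by (rule kmeas_app[OF R']) measurable
  have [measurable]: "(\<lambda>x. L (fst (fst x)) (snd x)) \<in> borel_measurable ((M0 \<Otimes>\<^sub>M M0) \<Otimes>\<^sub>M M0)"
    by (rule kmeas_app[OF L]) measurable
  have [measurable]: "(\<lambda>x. R' (snd x) (snd (fst x))) \<in> borel_measurable ((M0 \<Otimes>\<^sub>M M0) \<Otimes>\<^sub>M M0)"
    by (rule kmeas_app[OF R']) measurable
  define G where "G \<theta> = (\<integral>\<^sup>+t. ennreal (w t) * ennreal \<bar>L t \<theta>\<bar> \<partial>M0)" for \<theta>
  have Gm[measurable]: "G \<in> borel_measurable M0" unfolding G_def by measurable
  have Gb: "G \<theta> \<le> ennreal b" if "\<theta> \<ge> 0" for \<theta>
  proof -
    have "G \<theta> \<le> (\<integral>\<^sup>+t. ennreal \<bar>L t \<theta>\<bar> \<partial>M0)"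
      unfolding G_def
    proof (intro nn_integral_mono)
      fix t assume "t \<in> space M0"
      then have "ennreal (w t) \<le> 1" using w1[of t] by (simp add: ennreal_le_1)
      then have "ennreal (w t) * ennreal \<bar>L t \<theta>\<bar> \<le> 1 * ennreal \<bar>L t \<theta>\<bar>" by (rule mult_right_mono) simp
      then show "ennreal (w t) * ennreal \<bar>L t \<theta>\<bar> \<le> ennreal \<bar>L t \<theta>\<bar>" by simp
    qed
    also have "\<dots> \<le> ennreal b" by (rule col[OF that])
    finally show ?thesis .
  qed
  have G2: "(\<integral>\<^sup>+\<theta>. (G \<theta>)\<^sup>2 \<partial>M0) < \<infinity>"
  proof -
    have "(\<integral>\<^sup>+\<theta>. (G \<theta>)\<^sup>2 \<partial>M0) \<le> ennreal (b * a) * (\<integral>\<^sup>+s. (ennreal (w s))\<^sup>2 \<partial>M0)"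
      unfolding G_def by (rule opbound_T[OF L a b row col]) measurable
    also have "(\<integral>\<^sup>+s. (ennreal (w s))\<^sup>2 \<partial>M0) = (\<integral>\<^sup>+s. ennreal ((w s)\<^sup>2) \<partial>M0)"
      using wpos by (intro nn_integral_cong) (auto simp: ennreal_power less_imp_le)
    finally have "(\<integral>\<^sup>+\<theta>. (G \<theta>)\<^sup>2 \<partial>M0) \<le> ennreal (b * a) * (\<integral>\<^sup>+s. ennreal ((w s)\<^sup>2) \<partial>M0)" .
    also have "\<dots> < \<infinity>" using win by (simp add: ennreal_mult_less_top)
    finally show ?thesis .
  qed
  define g where "g \<theta> = enn2real (G \<theta>)" for \<theta>
  have gG: "ennreal (g \<theta>) = G \<theta>" if "\<theta> \<ge> 0" for \<theta>
    unfolding g_def using le_less_trans[OF Gb[OF that] ennreal_less_top] by (intro ennreal_enn2real) auto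
  have g0: "g \<theta> \<ge> 0" for \<theta> unfolding g_def by simp
  have gm[measurable]: "g \<in> borel_measurable M0" unfolding g_def by measurable
  have gin: "(\<integral>\<^sup>+\<theta>. ennreal ((g \<theta>)\<^sup>2) \<partial>M0) < \<infinity>"
  proof -
    have "(\<integral>\<^sup>+\<theta>. ennreal ((g \<theta>)\<^sup>2) \<partial>M0) = (\<integral>\<^sup>+\<theta>. (G \<theta>)\<^sup>2 \<partial>M0)"
      by (intro nn_integral_cong) (auto simp: gG[symmetric] ennreal_power g0)
    then show ?thesis using G2 by simp
  qed
  have T: "(\<integral>\<^sup>+\<theta>. \<integral>\<^sup>+s. ennreal \<bar>g \<theta> * R' \<theta> s * w s\<bar> \<partial>M0 \<partial>M0) < \<infinity>"
    by (rule fred_bound[OF F w win gm gin])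
  define Fn where "Fn t \<theta> s = ennreal (w t) * ennreal \<bar>L t \<theta>\<bar> * (ennreal \<bar>R' \<theta> s\<bar> * ennreal (w s))" for t \<theta> s
  define I where "I t s = (\<integral>\<^sup>+\<theta>. ennreal \<bar>L t \<theta>\<bar> * ennreal \<bar>R' \<theta> s\<bar> \<partial>M0)" for t s
  have "(\<integral>\<^sup>+\<theta>. \<integral>\<^sup>+s. ennreal \<bar>g \<theta> * R' \<theta> s * w s\<bar> \<partial>M0 \<partial>M0) = (\<integral>\<^sup>+\<theta>. \<integral>\<^sup>+s. \<integral>\<^sup>+t. Fn t \<theta> s \<partial>M0 \<partial>M0 \<partial>M0)"
  proof (intro nn_integral_cong)
    fix \<theta> s assume th: "\<theta> \<in> space M0" and s: "s \<in> space M0"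
    then have [measurable]: "(\<lambda>t. L t \<theta>) \<in> borel_measurable M0" by (intro kmeas_app[OF L]) auto
    have "ennreal \<bar>g \<theta> * R' \<theta> s * w s\<bar> = G \<theta> * (ennreal \<bar>R' \<theta> s\<bar> * ennreal (w s))"
      using th s wpos[of s] g0[of \<theta>] by (simp add: gG[symmetric] abs_mult ennreal_mult[symmetric] less_imp_le)
    also have "\<dots> = (\<integral>\<^sup>+t. Fn t \<theta> s \<partial>M0)"
      unfolding G_def Fn_def by (rule nn_integral_multc[symmetric]) measurable
    finally show "ennreal \<bar>g \<theta> * R' \<theta> s * w s\<bar> = (\<integral>\<^sup>+t. Fn t \<theta> s \<partial>M0)" .
  qed
  also have "\<dots> = (\<integral>\<^sup>+\<theta>. \<integral>\<^sup>+t. \<integral>\<^sup>+s. Fn t \<theta> s \<partial>M0 \<partial>M0 \<partial>M0)"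
  proof (rule nn_integral_cong)
    fix \<theta> assume th: "\<theta> \<in> space M0"
    then have [measurable]: "(\<lambda>t. L t \<theta>) \<in> borel_measurable M0" "(\<lambda>s. R' \<theta> s) \<in> borel_measurable M0"
      by (auto intro!: kmeas_app[OF L] kmeas_app[OF R'])
    show "(\<integral>\<^sup>+s. \<integral>\<^sup>+t. Fn t \<theta> s \<partial>M0 \<partial>M0) = (\<integral>\<^sup>+t. \<integral>\<^sup>+s. Fn t \<theta> s \<partial>M0 \<partial>M0)"
      unfolding Fn_def by (rule M00.Fubini') measurable
  qed
  also have "\<dots> = (\<integral>\<^sup>+t. \<integral>\<^sup>+\<theta>. \<integral>\<^sup>+s. Fn t \<theta> s \<partial>M0 \<partial>M0 \<partial>M0)"
  proof (rule M00.Fubini'[symmetric])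
    show "(\<lambda>(t, \<theta>). \<integral>\<^sup>+s. Fn \<theta> t s \<partial>M0) \<in> borel_measurable (M0 \<Otimes>\<^sub>M M0)"
      unfolding Fn_def split_beta' by measurable
  qed
  also have "\<dots> = (\<integral>\<^sup>+t. \<integral>\<^sup>+s. \<integral>\<^sup>+\<theta>. Fn t \<theta> s \<partial>M0 \<partial>M0 \<partial>M0)"
  proof (rule nn_integral_cong)
    fix t assume th: "t \<in> space M0"
    then have [measurable]: "(\<lambda>\<theta>. L t \<theta>) \<in> borel_measurable M0"
      by (auto intro!: kmeas_app[OF L])
    show "(\<integral>\<^sup>+\<theta>. \<integral>\<^sup>+s. Fn t \<theta> s \<partial>M0 \<partial>M0) = (\<integral>\<^sup>+s. \<integral>\<^sup>+\<theta>. Fn t \<theta> s \<partial>M0 \<partial>M0)"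
      unfolding Fn_def by (rule M00.Fubini'[symmetric]) measurable
  qed
  also have "\<dots> = (\<integral>\<^sup>+t. \<integral>\<^sup>+s. ennreal (w t) * ennreal (w s) * I t s \<partial>M0 \<partial>M0)"
  proof (intro nn_integral_cong)
    fix t s assume t: "t \<in> space M0" and s: "s \<in> space M0"
    then have [measurable]: "(\<lambda>\<theta>. L t \<theta>) \<in> borel_measurable M0" "(\<lambda>\<theta>. R' \<theta> s) \<in> borel_measurable M0"
      by (auto intro!: kmeas_app[OF L] kmeas_app[OF R'])
    have "(\<integral>\<^sup>+\<theta>. Fn t \<theta> s \<partial>M0) = (\<integral>\<^sup>+\<theta>. (ennreal (w t) * ennreal (w s)) * (ennreal \<bar>L t \<theta>\<bar> * ennreal \<bar>R' \<theta> s\<bar>) \<partial>M0)"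
      unfolding Fn_def by (intro nn_integral_cong) (simp add: mult_ac)
    also have "\<dots> = ennreal (w t) * ennreal (w s) * I t s"
      unfolding I_def by (rule nn_integral_cmult) measurable
    finally show "(\<integral>\<^sup>+\<theta>. Fn t \<theta> s \<partial>M0) = ennreal (w t) * ennreal (w s) * I t s" .
  qed
  finally have Q: "(\<integral>\<^sup>+t. \<integral>\<^sup>+s. ennreal (w t) * ennreal (w s) * I t s \<partial>M0 \<partial>M0) < \<infinity>" using T by simp
  have [measurable]: "(\<lambda>z. I (fst z) (snd z)) \<in> borel_measurable (M0 \<Otimes>\<^sub>M M0)"
    unfolding I_def by measurable
  have hT: "AE t in M0. (\<integral>\<^sup>+s. ennreal (w t) * ennreal (w s) * I t s \<partial>M0) \<noteq> \<infinity>"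
    by (rule nn_integral_PInf_AE) (use Q in \<open>auto simp: less_top\<close>)
  show ?thesis
  proof (rule AE_mp[OF hT], rule AE_I2, rule impI)
    fix t assume t: "t \<in> space M0" and fin: "(\<integral>\<^sup>+s. ennreal (w t) * ennreal (w s) * I t s \<partial>M0) \<noteq> \<infinity>"
    have "(\<lambda>s. (t, s)) \<in> measurable M0 (M0 \<Otimes>\<^sub>M M0)" using t by (intro measurable_Pair) auto
    from measurable_compose[OF this \<open>(\<lambda>z. I (fst z) (snd z)) \<in> borel_measurable (M0 \<Otimes>\<^sub>M M0)\<close>]
    have [measurable]: "(\<lambda>s. I t s) \<in> borel_measurable M0" by simp
    have hA: "AE s in M0. ennreal (w t) * ennreal (w s) * I t s \<noteq> \<infinity>"
      by (rule nn_integral_PInf_AE) (use fin in auto)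
    have hB: "(\<integral>\<^sup>+\<theta>. ennreal \<bar>L t \<theta>\<bar> * ennreal \<bar>R' \<theta> s\<bar> \<partial>M0) < \<infinity>"
      if s: "s \<in> space M0" and fs: "ennreal (w t) * ennreal (w s) * I t s \<noteq> \<infinity>" for s
    proof -
      have "ennreal (w t) * ennreal (w s) \<noteq> 0" using wpos[of t] wpos[of s] t s by simp
      then show ?thesis
        using fs unfolding I_def by (simp add: ennreal_mult_eq_top_iff less_top)
    qed
    show "AE s in M0. (\<integral>\<^sup>+\<theta>. ennreal \<bar>L t \<theta>\<bar> * ennreal \<bar>R' \<theta> s\<bar> \<partial>M0) < \<infinity>"
      using hA
    proof (rule AE_mp)
      show "AE s in M0. ennreal (w t) * ennreal (w s) * I t s \<noteq> \<infinity> \<longrightarrow> (\<integral>\<^sup>+\<theta>. ennreal \<bar>L t \<theta>\<bar> * ennreal \<bar>R' \<theta> s\<bar> \<partial>M0) < \<infinity>"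
        by (rule AE_I2) (use hB in blast)
    qed
  qed
qed

locale kern =
  fixes K :: "real \<Rightarrow> real \<Rightarrow> real" and q P :: real
  assumes Kmeas: "kmeas K"
  and q0: "0 \<le> q" and q1: "q < 1" and P0: "0 \<le> P"
  and row1: "\<And>t. t \<ge> 0 \<Longrightarrow> (\<integral>\<^sup>+\<theta>. ennreal \<bar>K t \<theta>\<bar> \<partial>M0) \<le> ennreal q"
  and col1: "\<And>s. s \<ge> 0 \<Longrightarrow> (\<integral>\<^sup>+\<theta>. ennreal \<bar>K \<theta> s\<bar> \<partial>M0) \<le> ennreal q"
  and row2: "\<And>t. t \<ge> 0 \<Longrightarrow> (\<integral>\<^sup>+\<theta>. ennreal ((K t \<theta>)\<^sup>2) \<partial>M0) \<le> ennreal P"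
  and col2: "\<And>s. s \<ge> 0 \<Longrightarrow> (\<integral>\<^sup>+\<theta>. ennreal ((K \<theta> s)\<^sup>2) \<partial>M0) \<le> ennreal P"
begin

lemma K_row_meas: "t \<ge> 0 \<Longrightarrow> (\<lambda>\<theta>. K t \<theta>) \<in> borel_measurable M0"
  by (rule kmeas_app[OF Kmeas]) auto
lemma K_col_meas: "s \<ge> 0 \<Longrightarrow> (\<lambda>\<theta>. K \<theta> s) \<in> borel_measurable M0"
  by (rule kmeas_app[OF Kmeas]) auto

lemma KK_bound:
  assumes "t \<ge> 0" "s \<ge> 0"
  shows "(\<integral>\<^sup>+\<theta>. ennreal \<bar>K t \<theta> * K \<theta> s\<bar> \<partial>M0) \<le> ennreal P"
  using nn_amgm[OF K_row_meas[OF assms(1)] K_col_meas[OF assms(2)] row2[OF assms(1)] col2[OF assms(2)] P0 P0]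
  by simp

primrec Kp :: "nat \<Rightarrow> real \<Rightarrow> real \<Rightarrow> real" where
  "Kp 0 = K"
| "Kp (Suc n) = (\<lambda>t s. \<integral>\<theta>. K t \<theta> * Kp n \<theta> s \<partial>M0)"

declare Kp.simps(2)[simp del]

lemma Kp_meas: "kmeas (Kp n)"
  by (induction n) (auto intro: kmeas_comp Kmeas simp: Kp.simps)

lemma Kp_row_meas: "t \<ge> 0 \<Longrightarrow> (\<lambda>\<theta>. Kp n t \<theta>) \<in> borel_measurable M0"
  by (rule kmeas_app[OF Kp_meas]) auto
lemma Kp_col_meas: "s \<ge> 0 \<Longrightarrow> (\<lambda>\<theta>. Kp n \<theta> s) \<in> borel_measurable M0"
  by (rule kmeas_app[OF Kp_meas]) auto

lemma Kp_row_nn: "t \<ge> 0 \<Longrightarrow> (\<lambda>\<theta>. ennreal \<bar>Kp n t \<theta>\<bar>) \<in> borel_measurable M0"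
proof -
  assume "t \<ge> 0"
  then have [measurable]: "(\<lambda>\<theta>. Kp n t \<theta>) \<in> borel_measurable M0" by (rule Kp_row_meas)
  show ?thesis by measurable
qed
lemma Kp_col_nn: "s \<ge> 0 \<Longrightarrow> (\<lambda>\<theta>. ennreal \<bar>Kp n \<theta> s\<bar>) \<in> borel_measurable M0"
proof -
  assume "s \<ge> 0"
  then have [measurable]: "(\<lambda>\<theta>. Kp n \<theta> s) \<in> borel_measurable M0" by (rule Kp_col_meas)
  show ?thesis by measurable
qed

lemma K_row_nn: "t \<ge> 0 \<Longrightarrow> (\<lambda>\<theta>. ennreal \<bar>K t \<theta>\<bar>) \<in> borel_measurable M0"
  using Kp_row_nn[of t 0] by simp
lemma K_col_nn: "s \<ge> 0 \<Longrightarrow> (\<lambda>\<theta>. ennreal \<bar>K \<theta> s\<bar>) \<in> borel_measurable M0"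
  using Kp_col_nn[of s 0] by simp

lemma Kp_pair_meas[measurable]: "(\<lambda>z. Kp n (fst z) (snd z)) \<in> borel_measurable (M0 \<Otimes>\<^sub>M M0)"
  using Kp_meas unfolding kmeas_def .

lemma K_pair_meas[measurable]: "(\<lambda>z. K (fst z) (snd z)) \<in> borel_measurable (M0 \<Otimes>\<^sub>M M0)"
  using Kmeas unfolding kmeas_def .

lemma Kp_rowL1: "t \<ge> 0 \<Longrightarrow> (\<integral>\<^sup>+s. ennreal \<bar>Kp n t s\<bar> \<partial>M0) \<le> ennreal (q ^ Suc n)"
proof (induction n arbitrary: t)
  case 0
  then show ?case using row1 by simp
next
  case (Suc n)
  have [measurable]: "(\<lambda>\<theta>. K t \<theta>) \<in> borel_measurable M0" using K_row_meas Suc by auto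
  have [measurable]: "(\<lambda>z. K t (fst z)) \<in> borel_measurable (M0 \<Otimes>\<^sub>M M0)" by measurable
  have "(\<integral>\<^sup>+s. ennreal \<bar>Kp (Suc n) t s\<bar> \<partial>M0) \<le> (\<integral>\<^sup>+s. \<integral>\<^sup>+\<theta>. ennreal \<bar>K t \<theta> * Kp n \<theta> s\<bar> \<partial>M0 \<partial>M0)"
    by (auto intro!: nn_integral_mono nn_norm_integral simp: Kp.simps)
  also have "\<dots> = (\<integral>\<^sup>+\<theta>. \<integral>\<^sup>+s. ennreal \<bar>K t \<theta> * Kp n \<theta> s\<bar> \<partial>M0 \<partial>M0)"
    by (rule M00.Fubini') measurable
  also have "\<dots> = (\<integral>\<^sup>+\<theta>. ennreal \<bar>K t \<theta>\<bar> * (\<integral>\<^sup>+s. ennreal \<bar>Kp n \<theta> s\<bar> \<partial>M0) \<partial>M0)"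
    by (intro nn_integral_cong) (auto simp: abs_mult ennreal_mult intro!: nn_integral_cmult Kp_row_nn)
  also have "\<dots> \<le> (\<integral>\<^sup>+\<theta>. ennreal \<bar>K t \<theta>\<bar> * ennreal (q ^ Suc n) \<partial>M0)"
    by (intro nn_integral_mono mult_left_mono Suc.IH) auto
  also have "\<dots> = (\<integral>\<^sup>+\<theta>. ennreal \<bar>K t \<theta>\<bar> \<partial>M0) * ennreal (q ^ Suc n)"
    by (rule nn_integral_multc) (rule K_row_nn, fact)
  also have "\<dots> \<le> ennreal q * ennreal (q ^ Suc n)"
    by (intro mult_right_mono row1 Suc.prems) auto
  also have "\<dots> = ennreal (q ^ Suc (Suc n))"
    using q0 by (simp add: ennreal_mult[symmetric])
  finally show ?case .
qed

lemma Kp_colL1: "s \<ge> 0 \<Longrightarrow> (\<integral>\<^sup>+t. ennreal \<bar>Kp n t s\<bar> \<partial>M0) \<le> ennreal (q ^ Suc n)"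
proof (induction n arbitrary: s)
  case 0
  then show ?case using col1 by simp
next
  case (Suc n)
  have [measurable]: "(\<lambda>\<theta>. Kp n \<theta> s) \<in> borel_measurable M0" using Kp_col_meas Suc by auto
  have [measurable]: "(\<lambda>z. Kp n (snd z) s) \<in> borel_measurable (M0 \<Otimes>\<^sub>M M0)" by measurable
  have "(\<integral>\<^sup>+t. ennreal \<bar>Kp (Suc n) t s\<bar> \<partial>M0) \<le> (\<integral>\<^sup>+t. \<integral>\<^sup>+\<theta>. ennreal \<bar>K t \<theta> * Kp n \<theta> s\<bar> \<partial>M0 \<partial>M0)"
    by (auto intro!: nn_integral_mono nn_norm_integral simp: Kp.simps)
  also have "\<dots> = (\<integral>\<^sup>+\<theta>. \<integral>\<^sup>+t. ennreal \<bar>K t \<theta> * Kp n \<theta> s\<bar> \<partial>M0 \<partial>M0)"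
    by (rule M00.Fubini'[symmetric]) measurable
  also have "\<dots> = (\<integral>\<^sup>+\<theta>. (\<integral>\<^sup>+t. ennreal \<bar>K t \<theta>\<bar> \<partial>M0) * ennreal \<bar>Kp n \<theta> s\<bar> \<partial>M0)"
    by (intro nn_integral_cong) (auto simp: abs_mult ennreal_mult intro!: nn_integral_multc Kp_col_nn[of _ 0, simplified])
  also have "\<dots> \<le> (\<integral>\<^sup>+\<theta>. ennreal q * ennreal \<bar>Kp n \<theta> s\<bar> \<partial>M0)"
    by (intro nn_integral_mono mult_right_mono col1) auto
  also have "\<dots> = ennreal q * (\<integral>\<^sup>+\<theta>. ennreal \<bar>Kp n \<theta> s\<bar> \<partial>M0)"
    by (rule nn_integral_cmult) (rule Kp_col_nn, fact)
  also have "\<dots> \<le> ennreal q * ennreal (q ^ Suc n)"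
    by (intro mult_left_mono Suc.IH Suc.prems) auto
  also have "\<dots> = ennreal (q ^ Suc (Suc n))"
    using q0 by (simp add: ennreal_mult[symmetric])
  finally show ?case .
qed

lemma ennreal_Pq: "ennreal (P * q ^ n) * ennreal q = ennreal (P * q ^ Suc n)"
  using q0 P0 by (simp add: ennreal_mult[symmetric] mult_ac)

lemma KKp_left: "t \<ge> 0 \<Longrightarrow> s \<ge> 0 \<Longrightarrow> (\<integral>\<^sup>+\<theta>. ennreal \<bar>K t \<theta> * Kp n \<theta> s\<bar> \<partial>M0) \<le> ennreal (P * q ^ n)"
proof (induction n arbitrary: t)
  case 0
  then show ?case using KK_bound by simp
next
  case (Suc n)
  have sup: "ennreal \<bar>Kp (Suc n) \<theta> s\<bar> \<le> ennreal (P * q ^ n)" if "\<theta> \<ge> 0" for \<theta>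
    using nn_norm_integral[of M0 "\<lambda>\<phi>. K \<theta> \<phi> * Kp n \<phi> s"] Suc.IH[OF that Suc.prems(2)] by (simp add: Kp.simps)
  have "(\<integral>\<^sup>+\<theta>. ennreal \<bar>K t \<theta> * Kp (Suc n) \<theta> s\<bar> \<partial>M0) = (\<integral>\<^sup>+\<theta>. ennreal \<bar>K t \<theta>\<bar> * ennreal \<bar>Kp (Suc n) \<theta> s\<bar> \<partial>M0)"
    by (simp add: abs_mult ennreal_mult)
  also have "\<dots> \<le> (\<integral>\<^sup>+\<theta>. ennreal \<bar>K t \<theta>\<bar> * ennreal (P * q ^ n) \<partial>M0)"
    by (intro nn_integral_mono mult_left_mono sup) auto
  also have "\<dots> = (\<integral>\<^sup>+\<theta>. ennreal \<bar>K t \<theta>\<bar> \<partial>M0) * ennreal (P * q ^ n)"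
    by (rule nn_integral_multc) (rule K_row_nn, fact)
  also have "\<dots> \<le> ennreal q * ennreal (P * q ^ n)"
    by (intro mult_right_mono row1 Suc.prems) auto
  also have "\<dots> = ennreal (P * q ^ Suc n)" using ennreal_Pq by (simp add: mult.commute)
  finally show ?case .
qed

lemma Kp_sup: "t \<ge> 0 \<Longrightarrow> s \<ge> 0 \<Longrightarrow> \<bar>Kp (Suc n) t s\<bar> \<le> P * q ^ n"
proof -
  assume a: "t \<ge> 0" "s \<ge> 0"
  have "ennreal \<bar>Kp (Suc n) t s\<bar> \<le> ennreal (P * q ^ n)"
    using nn_norm_integral[of M0 "\<lambda>\<phi>. K t \<phi> * Kp n \<phi> s"] KKp_left[OF a, of n] by (simp add: Kp.simps)
  then show ?thesis using P0 q0 by (simp add: ennreal_le_iff)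
qed

lemma KpK_right: "t \<ge> 0 \<Longrightarrow> s \<ge> 0 \<Longrightarrow> (\<integral>\<^sup>+\<theta>. ennreal \<bar>Kp n t \<theta> * K \<theta> s\<bar> \<partial>M0) \<le> ennreal (P * q ^ n)"
proof (cases n)
  case 0
  assume "t \<ge> 0" "s \<ge> 0"
  then show ?thesis using KK_bound 0 by simp
next
  case (Suc m)
  assume a: "t \<ge> 0" "s \<ge> 0"
  have "(\<integral>\<^sup>+\<theta>. ennreal \<bar>Kp n t \<theta> * K \<theta> s\<bar> \<partial>M0) = (\<integral>\<^sup>+\<theta>. ennreal \<bar>Kp (Suc m) t \<theta>\<bar> * ennreal \<bar>K \<theta> s\<bar> \<partial>M0)"
    by (simp add: abs_mult ennreal_mult Suc)
  also have "\<dots> \<le> (\<integral>\<^sup>+\<theta>. ennreal (P * q ^ m) * ennreal \<bar>K \<theta> s\<bar> \<partial>M0)"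
    using a by (intro nn_integral_mono mult_right_mono) (auto intro: ennreal_leI Kp_sup)
  also have "\<dots> = ennreal (P * q ^ m) * (\<integral>\<^sup>+\<theta>. ennreal \<bar>K \<theta> s\<bar> \<partial>M0)"
    by (rule nn_integral_cmult) (rule K_col_nn, fact)
  also have "\<dots> \<le> ennreal (P * q ^ m) * ennreal q"
    by (intro mult_left_mono col1 a) auto
  also have "\<dots> = ennreal (P * q ^ n)" using ennreal_Pq Suc by simp
  finally show ?thesis .
qed

lemma int_KKp: "t \<ge> 0 \<Longrightarrow> s \<ge> 0 \<Longrightarrow> integrable M0 (\<lambda>\<theta>. K t \<theta> * Kp n \<theta> s)"
  unfolding integrable_iff_bounded
  using KKp_left[of t s n] by (auto intro!: borel_measurable_times K_row_meas Kp_col_meas simp: less_top[symmetric] top_unique)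
  
lemma int_KpK: "t \<ge> 0 \<Longrightarrow> s \<ge> 0 \<Longrightarrow> integrable M0 (\<lambda>\<theta>. Kp n t \<theta> * K \<theta> s)"
  unfolding integrable_iff_bounded
  using KpK_right[of t s n] by (auto intro!: borel_measurable_times K_col_meas Kp_row_meas simp: less_top[symmetric] top_unique)

lemma triple_int:
  assumes "t \<ge> 0" "s \<ge> 0"
  shows "integrable (M0 \<Otimes>\<^sub>M M0) (\<lambda>(\<theta>, \<phi>). K t \<theta> * (Kp n \<theta> \<phi> * K \<phi> s))"
proof -
  have [measurable]: "(\<lambda>\<theta>. K t \<theta>) \<in> borel_measurable M0" using K_row_meas assms by auto
  have [measurable]: "(\<lambda>\<theta>. K \<theta> s) \<in> borel_measurable M0" using K_col_meas assms by auto
  have "(\<integral>\<^sup>+z. ennreal (norm ((\<lambda>(\<theta>, \<phi>). K t \<theta> * (Kp n \<theta> \<phi> * K \<phi> s)) z)) \<partial>(M0 \<Otimes>\<^sub>M M0))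
      = (\<integral>\<^sup>+\<theta>. \<integral>\<^sup>+\<phi>. ennreal \<bar>K t \<theta>\<bar> * ennreal \<bar>Kp n \<theta> \<phi> * K \<phi> s\<bar> \<partial>M0 \<partial>M0)"
    by (subst M0.nn_integral_fst[symmetric]) (auto simp: abs_mult ennreal_mult intro!: nn_integral_cong)
  also have "\<dots> = (\<integral>\<^sup>+\<theta>. ennreal \<bar>K t \<theta>\<bar> * (\<integral>\<^sup>+\<phi>. ennreal \<bar>Kp n \<theta> \<phi> * K \<phi> s\<bar> \<partial>M0) \<partial>M0)"
    using assms by (intro nn_integral_cong nn_integral_cmult) (auto intro!: measurable_compose[OF _ measurable_ennreal] borel_measurable_abs borel_measurable_times Kp_row_meas K_col_meas)
  also have "\<dots> \<le> (\<integral>\<^sup>+\<theta>. ennreal \<bar>K t \<theta>\<bar> * ennreal (P * q ^ n) \<partial>M0)"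
    using assms by (intro nn_integral_mono mult_left_mono KpK_right) auto
  also have "\<dots> = (\<integral>\<^sup>+\<theta>. ennreal \<bar>K t \<theta>\<bar> \<partial>M0) * ennreal (P * q ^ n)"
    by (rule nn_integral_multc) (rule K_row_nn, fact)
  also have "\<dots> < \<infinity>"
  proof -
    have "(\<integral>\<^sup>+\<theta>. ennreal \<bar>K t \<theta>\<bar> \<partial>M0) < \<infinity>" using row1[OF assms(1)] by (rule le_less_trans) simp
    then show ?thesis by (simp add: ennreal_mult_less_top)
  qed
  finally show ?thesis
    by (subst integrable_iff_bounded) auto
qed

lemma Kp_assoc: "t \<ge> 0 \<Longrightarrow> s \<ge> 0 \<Longrightarrow> Kp (Suc n) t s = (\<integral>\<theta>. Kp n t \<theta> * K \<theta> s \<partial>M0)"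
proof (induction n arbitrary: t s)
  case 0
  then show ?case by (simp add: Kp.simps)
next
  case (Suc n)
  have "Kp (Suc (Suc n)) t s = (\<integral>\<theta>. K t \<theta> * Kp (Suc n) \<theta> s \<partial>M0)" by (simp add: Kp.simps)
  also have "\<dots> = (\<integral>\<theta>. K t \<theta> * (\<integral>\<phi>. Kp n \<theta> \<phi> * K \<phi> s \<partial>M0) \<partial>M0)"
    by (rule Bochner_Integration.integral_cong[OF refl]) (auto simp: Suc.IH Suc.prems)
  also have "\<dots> = (\<integral>\<theta>. (\<integral>\<phi>. K t \<theta> * (Kp n \<theta> \<phi> * K \<phi> s) \<partial>M0) \<partial>M0)"
    by simp
  also have "\<dots> = (\<integral>\<phi>. (\<integral>\<theta>. K t \<theta> * (Kp n \<theta> \<phi> * K \<phi> s) \<partial>M0) \<partial>M0)"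
    by (rule M00.Fubini_integral[symmetric]) (rule triple_int[OF Suc.prems])
  also have "\<dots> = (\<integral>\<phi>. (\<integral>\<theta>. K t \<theta> * Kp n \<theta> \<phi> \<partial>M0) * K \<phi> s \<partial>M0)"
    by (simp only: mult.assoc[symmetric] integral_mult_left_zero)
  also have "\<dots> = (\<integral>\<phi>. Kp (Suc n) t \<phi> * K \<phi> s \<partial>M0)"
    by (simp add: Kp.simps)
  finally show ?case .
qed

definition S :: "real \<Rightarrow> real \<Rightarrow> real" where
  "S t s = (\<Sum>n. (-1::real) ^ Suc n * Kp (Suc n) t s)"

definition R :: "real \<Rightarrow> real \<Rightarrow> real" where
  "R t s = K t s + S t s"

lemma geom_P: "(\<lambda>n. P * q ^ n) sums (P / (1 - q))"
  using sums_mult[OF geometric_sums[of q], of P] q0 q1 by (simp add: field_simps)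

lemma geom_q2: "(\<lambda>n. q ^ Suc (Suc n)) sums (q\<^sup>2 / (1 - q))"
  using sums_mult[OF geometric_sums[of q], of "q\<^sup>2"] q0 q1 by (simp add: field_simps power2_eq_square)

lemma Kp_abs_summable: "t \<ge> 0 \<Longrightarrow> s \<ge> 0 \<Longrightarrow> summable (\<lambda>n. \<bar>Kp (Suc n) t s\<bar>)"
  by (rule summable_comparison_test[OF _ sums_summable[OF geom_P]]) (auto intro: Kp_sup)

lemma S_summable: "t \<ge> 0 \<Longrightarrow> s \<ge> 0 \<Longrightarrow> summable (\<lambda>n. (-1::real) ^ Suc n * Kp (Suc n) t s)"
  by (rule summable_comparison_test[OF _ sums_summable[OF geom_P]]) (auto intro: Kp_sup simp: abs_mult)

lemma S_abs_le: "t \<ge> 0 \<Longrightarrow> s \<ge> 0 \<Longrightarrow> \<bar>S t s\<bar> \<le> (\<Sum>n. \<bar>Kp (Suc n) t s\<bar>)"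
  unfolding S_def using summable_norm[of "\<lambda>n. (-1::real) ^ Suc n * Kp (Suc n) t s"] Kp_abs_summable[of t s]
  by (simp add: abs_mult)

lemma S_sup: "t \<ge> 0 \<Longrightarrow> s \<ge> 0 \<Longrightarrow> \<bar>S t s\<bar> \<le> P / (1 - q)"
  using S_abs_le[of t s] suminf_le[OF _ Kp_abs_summable sums_summable[OF geom_P], of t s] Kp_sup[of t s] sums_unique[OF geom_P]
  by force

lemma S_meas: "kmeas S"
  unfolding kmeas_def S_def by (intro borel_measurable_suminf borel_measurable_times) auto

lemma R_meas: "kmeas R"
  using S_meas Kmeas unfolding kmeas_def R_def by (intro borel_measurable_add) auto

lemma S_rowL1: "t \<ge> 0 \<Longrightarrow> (\<integral>\<^sup>+s. ennreal \<bar>S t s\<bar> \<partial>M0) \<le> ennreal (q\<^sup>2 / (1 - q))"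
proof -
  assume t: "t \<ge> 0"
  have "(\<integral>\<^sup>+s. ennreal \<bar>S t s\<bar> \<partial>M0) \<le> (\<integral>\<^sup>+s. (\<Sum>n. ennreal \<bar>Kp (Suc n) t s\<bar>) \<partial>M0)"
    using t by (intro nn_integral_mono) (auto simp: suminf_ennreal2 Kp_abs_summable intro!: ennreal_leI S_abs_le)
  also have "\<dots> = (\<Sum>n. \<integral>\<^sup>+s. ennreal \<bar>Kp (Suc n) t s\<bar> \<partial>M0)"
    using t by (intro nn_integral_suminf Kp_row_nn)
  also have "\<dots> \<le> (\<Sum>n. ennreal (q ^ Suc (Suc n)))"
    using t by (intro suminf_le Kp_rowL1) auto
  also have "\<dots> = ennreal (q\<^sup>2 / (1 - q))"
    using q0 by (intro suminf_ennreal_eq geom_q2) auto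
  finally show ?thesis .
qed

lemma S_colL1: "s \<ge> 0 \<Longrightarrow> (\<integral>\<^sup>+t. ennreal \<bar>S t s\<bar> \<partial>M0) \<le> ennreal (q\<^sup>2 / (1 - q))"
proof -
  assume s: "s \<ge> 0"
  have "(\<integral>\<^sup>+t. ennreal \<bar>S t s\<bar> \<partial>M0) \<le> (\<integral>\<^sup>+t. (\<Sum>n. ennreal \<bar>Kp (Suc n) t s\<bar>) \<partial>M0)"
    using s by (intro nn_integral_mono) (auto simp: suminf_ennreal2 Kp_abs_summable intro!: ennreal_leI S_abs_le)
  also have "\<dots> = (\<Sum>n. \<integral>\<^sup>+t. ennreal \<bar>Kp (Suc n) t s\<bar> \<partial>M0)"
    using s by (intro nn_integral_suminf Kp_col_nn)
  also have "\<dots> \<le> (\<Sum>n. ennreal (q ^ Suc (Suc n)))"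
    using s by (intro suminf_le Kp_colL1) auto
  also have "\<dots> = ennreal (q\<^sup>2 / (1 - q))"
    using q0 by (intro suminf_ennreal_eq geom_q2) auto
  finally show ?thesis .
qed

lemma int_abs_le_ennreal:
  fixes f :: "'a \<Rightarrow> real"
  assumes "integrable M f" "(\<integral>\<^sup>+x. ennreal \<bar>f x\<bar> \<partial>M) \<le> ennreal c" "c \<ge> 0"
  shows "(\<integral>x. \<bar>f x\<bar> \<partial>M) \<le> c"
proof -
  have "ennreal (\<integral>x. \<bar>f x\<bar> \<partial>M) = (\<integral>\<^sup>+x. ennreal \<bar>f x\<bar> \<partial>M)"
    using assms by (intro nn_integral_eq_integral[symmetric]) auto
  with assms(2) have "ennreal (\<integral>x. \<bar>f x\<bar> \<partial>M) \<le> ennreal c" by simp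
  then show ?thesis using assms(3) by (metis ennreal_le_iff)
qed

lemma KS_int:
  assumes t: "t \<ge> 0" and s: "s \<ge> 0"
  shows "integrable M0 (\<lambda>\<theta>. K t \<theta> * S \<theta> s)"
    and "(\<integral>\<theta>. K t \<theta> * S \<theta> s \<partial>M0) = (\<Sum>n. (-1::real) ^ Suc n * Kp (Suc (Suc n)) t s)"
proof -
  define f where "f n \<theta> = (-1::real) ^ Suc n * (K t \<theta> * Kp (Suc n) \<theta> s)" for n \<theta>
  have fi: "integrable M0 (f n)" for n
    unfolding f_def using int_KKp[OF t s] by auto
  have eq: "K t \<theta> * S \<theta> s = (\<Sum>n. f n \<theta>)" if "\<theta> \<ge> 0" for \<theta>
    unfolding S_def f_def using suminf_mult[OF S_summable[OF that s], of "K t \<theta>"]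
    by (simp add: mult_ac)
  have sm: "AE \<theta> in M0. summable (\<lambda>n. norm (f n \<theta>))"
  proof (rule AE_I2)
    fix \<theta> assume "\<theta> \<in> space M0"
    then have th: "\<theta> \<ge> 0" by simp
    show "summable (\<lambda>n. norm (f n \<theta>))"
      unfolding f_def
      by (rule summable_comparison_test[OF _ summable_mult[OF sums_summable[OF geom_P], of "\<bar>K t \<theta>\<bar>"]])
         (auto simp: abs_mult intro!: mult_left_mono Kp_sup th s)
  qed
  have bnd: "(\<integral>\<theta>. norm (f n \<theta>) \<partial>M0) \<le> P * q ^ Suc n" for n
  proof -
    have "(\<integral>\<theta>. norm (f n \<theta>) \<partial>M0) = (\<integral>\<theta>. \<bar>K t \<theta> * Kp (Suc n) \<theta> s\<bar> \<partial>M0)"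
      unfolding f_def by (simp add: abs_mult)
    also have "\<dots> \<le> P * q ^ Suc n"
      by (rule int_abs_le_ennreal[OF int_KKp[OF t s] KKp_left[OF t s]]) (use P0 q0 in auto)
    finally show ?thesis .
  qed
  have sm2: "summable (\<lambda>n. (\<integral>\<theta>. norm (f n \<theta>) \<partial>M0))"
  proof (rule summable_comparison_test[OF _ summable_mult2[OF sums_summable[OF geom_P], of q]])
    show "\<exists>N. \<forall>n\<ge>N. norm (\<integral>\<theta>. norm (f n \<theta>) \<partial>M0) \<le> P * q ^ n * q"
      using bnd by (intro exI[of _ 0] allI impI) (auto simp: mult_ac)
  qed
  have "integrable M0 (\<lambda>\<theta>. \<Sum>n. f n \<theta>)" by (rule integrable_suminf[OF fi sm sm2])
  moreover have "integrable M0 (\<lambda>\<theta>. K t \<theta> * S \<theta> s) \<longleftrightarrow> integrable M0 (\<lambda>\<theta>. \<Sum>n. f n \<theta>)"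
    by (rule Bochner_Integration.integrable_cong) (auto simp: eq)
  ultimately show "integrable M0 (\<lambda>\<theta>. K t \<theta> * S \<theta> s)" by simp
  have "(\<integral>\<theta>. K t \<theta> * S \<theta> s \<partial>M0) = (\<integral>\<theta>. (\<Sum>n. f n \<theta>) \<partial>M0)"
    by (rule Bochner_Integration.integral_cong[OF refl]) (auto simp: eq)
  also have "\<dots> = (\<Sum>n. integral\<^sup>L M0 (f n))" by (rule integral_suminf[OF fi sm sm2])
  also have "\<dots> = (\<Sum>n. (-1::real) ^ Suc n * Kp (Suc (Suc n)) t s)"
    unfolding f_def by (simp add: Kp.simps(2)[of "Suc _"])
  finally show "(\<integral>\<theta>. K t \<theta> * S \<theta> s \<partial>M0) = (\<Sum>n. (-1::real) ^ Suc n * Kp (Suc (Suc n)) t s)" .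
qed

lemma SK_int:
  assumes t: "t \<ge> 0" and s: "s \<ge> 0"
  shows "integrable M0 (\<lambda>\<theta>. S t \<theta> * K \<theta> s)"
    and "(\<integral>\<theta>. S t \<theta> * K \<theta> s \<partial>M0) = (\<Sum>n. (-1::real) ^ Suc n * Kp (Suc (Suc n)) t s)"
proof -
  define f where "f n \<theta> = (-1::real) ^ Suc n * (Kp (Suc n) t \<theta> * K \<theta> s)" for n \<theta>
  have fi: "integrable M0 (f n)" for n
    unfolding f_def using int_KpK[OF t s] by auto
  have eq: "S t \<theta> * K \<theta> s = (\<Sum>n. f n \<theta>)" if "\<theta> \<ge> 0" for \<theta>
    unfolding S_def f_def using suminf_mult2[OF S_summable[OF t that], of "K \<theta> s"]
    by (simp add: mult_ac)
  have sm: "AE \<theta> in M0. summable (\<lambda>n. norm (f n \<theta>))"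
  proof (rule AE_I2)
    fix \<theta> assume "\<theta> \<in> space M0"
    then have th: "\<theta> \<ge> 0" by simp
    show "summable (\<lambda>n. norm (f n \<theta>))"
      unfolding f_def
      by (rule summable_comparison_test[OF _ summable_mult2[OF sums_summable[OF geom_P], of "\<bar>K \<theta> s\<bar>"]])
         (auto simp: abs_mult intro!: mult_right_mono Kp_sup th t)
  qed
  have bnd: "(\<integral>\<theta>. norm (f n \<theta>) \<partial>M0) \<le> P * q ^ Suc n" for n
  proof -
    have "(\<integral>\<theta>. norm (f n \<theta>) \<partial>M0) = (\<integral>\<theta>. \<bar>Kp (Suc n) t \<theta> * K \<theta> s\<bar> \<partial>M0)"
      unfolding f_def by (simp add: abs_mult)
    also have "\<dots> \<le> P * q ^ Suc n"
      by (rule int_abs_le_ennreal[OF int_KpK[OF t s] KpK_right[OF t s]]) (use P0 q0 in auto)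
    finally show ?thesis .
  qed
  have sm2: "summable (\<lambda>n. (\<integral>\<theta>. norm (f n \<theta>) \<partial>M0))"
  proof (rule summable_comparison_test[OF _ summable_mult2[OF sums_summable[OF geom_P], of q]])
    show "\<exists>N. \<forall>n\<ge>N. norm (\<integral>\<theta>. norm (f n \<theta>) \<partial>M0) \<le> P * q ^ n * q"
      using bnd by (intro exI[of _ 0] allI impI) (auto simp: mult_ac)
  qed
  have "integrable M0 (\<lambda>\<theta>. \<Sum>n. f n \<theta>)" by (rule integrable_suminf[OF fi sm sm2])
  moreover have "integrable M0 (\<lambda>\<theta>. S t \<theta> * K \<theta> s) \<longleftrightarrow> integrable M0 (\<lambda>\<theta>. \<Sum>n. f n \<theta>)"
    by (rule Bochner_Integration.integrable_cong) (auto simp: eq)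
  ultimately show "integrable M0 (\<lambda>\<theta>. S t \<theta> * K \<theta> s)" by simp
  have "(\<integral>\<theta>. S t \<theta> * K \<theta> s \<partial>M0) = (\<integral>\<theta>. (\<Sum>n. f n \<theta>) \<partial>M0)"
    by (rule Bochner_Integration.integral_cong[OF refl]) (auto simp: eq)
  also have "\<dots> = (\<Sum>n. integral\<^sup>L M0 (f n))" by (rule integral_suminf[OF fi sm sm2])
  also have "\<dots> = (\<Sum>n. (-1::real) ^ Suc n * Kp (Suc (Suc n)) t s)"
    unfolding f_def by (simp add: Kp_assoc[OF t s, of "Suc _"])
  finally show "(\<integral>\<theta>. S t \<theta> * K \<theta> s \<partial>M0) = (\<Sum>n. (-1::real) ^ Suc n * Kp (Suc (Suc n)) t s)" .
qed

lemma S_split: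
  assumes t: "t \<ge> 0" and s: "s \<ge> 0"
  shows "S t s = - Kp (Suc 0) t s - (\<Sum>n. (-1::real) ^ Suc n * Kp (Suc (Suc n)) t s)"
proof -
  have sm: "summable (\<lambda>n. (-1::real) ^ Suc n * Kp (Suc n) t s)" by (rule S_summable[OF t s])
  have "(\<Sum>n. (-1::real) ^ Suc (Suc n) * Kp (Suc (Suc n)) t s) = S t s - (- Kp (Suc 0) t s)"
    unfolding S_def using suminf_split_head[OF sm] by simp
  moreover have "(\<Sum>n. (-1::real) ^ Suc (Suc n) * Kp (Suc (Suc n)) t s) = - (\<Sum>n. (-1::real) ^ Suc n * Kp (Suc (Suc n)) t s)"
  proof -
    have sm': "summable (\<lambda>n. (-1::real) ^ Suc n * Kp (Suc (Suc n)) t s)"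
      using summable_minus[OF iffD2[OF summable_Suc_iff sm]] by simp
    show ?thesis using suminf_minus[OF sm'] by simp
  qed
  ultimately show ?thesis by simp
qed

lemma R_left:
  assumes t: "t \<ge> 0" and s: "s \<ge> 0"
  shows "integrable M0 (\<lambda>\<theta>. K t \<theta> * R \<theta> s)" and "R t s + (\<integral>\<theta>. K t \<theta> * R \<theta> s \<partial>M0) = K t s"
proof -
  have eq: "(\<lambda>\<theta>. K t \<theta> * R \<theta> s) = (\<lambda>\<theta>. K t \<theta> * Kp 0 \<theta> s + K t \<theta> * S \<theta> s)"
    by (simp add: R_def algebra_simps)
  show "integrable M0 (\<lambda>\<theta>. K t \<theta> * R \<theta> s)"
    unfolding eq by (intro Bochner_Integration.integrable_add int_KKp KS_int t s)
  have "(\<integral>\<theta>. K t \<theta> * R \<theta> s \<partial>M0) = Kp (Suc 0) t s + (\<Sum>n. (-1::real) ^ Suc n * Kp (Suc (Suc n)) t s)"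
    unfolding eq by (subst Bochner_Integration.integral_add) (auto intro: int_KKp[of t s 0, simplified] KS_int t s simp: KS_int(2)[OF t s] Kp.simps(2)[of 0])
  then show "R t s + (\<integral>\<theta>. K t \<theta> * R \<theta> s \<partial>M0) = K t s"
    by (simp add: R_def S_split[OF t s])
qed

lemma R_right:
  assumes t: "t \<ge> 0" and s: "s \<ge> 0"
  shows "integrable M0 (\<lambda>\<theta>. R t \<theta> * K \<theta> s)" and "R t s + (\<integral>\<theta>. R t \<theta> * K \<theta> s \<partial>M0) = K t s"
proof -
  have eq: "(\<lambda>\<theta>. R t \<theta> * K \<theta> s) = (\<lambda>\<theta>. Kp 0 t \<theta> * K \<theta> s + S t \<theta> * K \<theta> s)"
    by (simp add: R_def algebra_simps)
  show "integrable M0 (\<lambda>\<theta>. R t \<theta> * K \<theta> s)"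
    unfolding eq by (intro Bochner_Integration.integrable_add int_KpK SK_int t s)
  have "(\<integral>\<theta>. R t \<theta> * K \<theta> s \<partial>M0) = Kp (Suc 0) t s + (\<Sum>n. (-1::real) ^ Suc n * Kp (Suc (Suc n)) t s)"
    unfolding eq by (subst Bochner_Integration.integral_add) (auto intro: int_KpK[of t s 0, simplified] SK_int t s simp: SK_int(2)[OF t s] Kp.simps(2)[of 0])
  then show "R t s + (\<integral>\<theta>. R t \<theta> * K \<theta> s \<partial>M0) = K t s"
    by (simp add: R_def S_split[OF t s])
qed

definition qR where "qR = q + q\<^sup>2 / (1 - q)"
definition PR where "PR = 2 * P + 2 * (P / (1 - q)) * (q\<^sup>2 / (1 - q))"

lemma qR_nonneg: "qR \<ge> 0" and PR_nonneg: "PR \<ge> 0"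
  using q0 q1 P0 by (auto simp: qR_def PR_def)

lemma S_row_meas: "t \<ge> 0 \<Longrightarrow> (\<lambda>\<theta>. S t \<theta>) \<in> borel_measurable M0"
  by (rule kmeas_app[OF S_meas]) auto
lemma S_col_meas: "s \<ge> 0 \<Longrightarrow> (\<lambda>\<theta>. S \<theta> s) \<in> borel_measurable M0"
  by (rule kmeas_app[OF S_meas]) auto
lemma R_row_meas: "t \<ge> 0 \<Longrightarrow> (\<lambda>\<theta>. R t \<theta>) \<in> borel_measurable M0"
  by (rule kmeas_app[OF R_meas]) auto
lemma R_col_meas: "s \<ge> 0 \<Longrightarrow> (\<lambda>\<theta>. R \<theta> s) \<in> borel_measurable M0"
  by (rule kmeas_app[OF R_meas]) auto

lemma R_rowL1: "t \<ge> 0 \<Longrightarrow> (\<integral>\<^sup>+s. ennreal \<bar>R t s\<bar> \<partial>M0) \<le> ennreal qR"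
proof -
  assume t: "t \<ge> 0"
  have [measurable]: "(\<lambda>\<theta>. S t \<theta>) \<in> borel_measurable M0" "(\<lambda>\<theta>. K t \<theta>) \<in> borel_measurable M0"
    using S_row_meas K_row_meas t by auto
  have "(\<integral>\<^sup>+s. ennreal \<bar>R t s\<bar> \<partial>M0) \<le> (\<integral>\<^sup>+s. ennreal \<bar>K t s\<bar> + ennreal \<bar>S t s\<bar> \<partial>M0)"
    by (intro nn_integral_mono) (auto simp: R_def ennreal_plus[symmetric] simp del: ennreal_plus intro!: ennreal_leI)
  also have "\<dots> = (\<integral>\<^sup>+s. ennreal \<bar>K t s\<bar> \<partial>M0) + (\<integral>\<^sup>+s. ennreal \<bar>S t s\<bar> \<partial>M0)"
    by (rule nn_integral_add) auto
  also have "\<dots> \<le> ennreal q + ennreal (q\<^sup>2 / (1 - q))"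
    by (intro add_mono row1 S_rowL1 t)
  also have "\<dots> = ennreal qR" using q0 q1 by (simp add: qR_def ennreal_plus[symmetric] del: ennreal_plus)
  finally show ?thesis .
qed

lemma R_colL1: "s \<ge> 0 \<Longrightarrow> (\<integral>\<^sup>+t. ennreal \<bar>R t s\<bar> \<partial>M0) \<le> ennreal qR"
proof -
  assume s: "s \<ge> 0"
  have [measurable]: "(\<lambda>\<theta>. S \<theta> s) \<in> borel_measurable M0" "(\<lambda>\<theta>. K \<theta> s) \<in> borel_measurable M0"
    using S_col_meas K_col_meas s by auto
  have "(\<integral>\<^sup>+t. ennreal \<bar>R t s\<bar> \<partial>M0) \<le> (\<integral>\<^sup>+t. ennreal \<bar>K t s\<bar> + ennreal \<bar>S t s\<bar> \<partial>M0)"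
    by (intro nn_integral_mono) (auto simp: R_def ennreal_plus[symmetric] simp del: ennreal_plus intro!: ennreal_leI)
  also have "\<dots> = (\<integral>\<^sup>+t. ennreal \<bar>K t s\<bar> \<partial>M0) + (\<integral>\<^sup>+t. ennreal \<bar>S t s\<bar> \<partial>M0)"
    by (rule nn_integral_add) auto
  also have "\<dots> \<le> ennreal q + ennreal (q\<^sup>2 / (1 - q))"
    by (intro add_mono col1 S_colL1 s)
  also have "\<dots> = ennreal qR" using q0 q1 by (simp add: qR_def ennreal_plus[symmetric] del: ennreal_plus)
  finally show ?thesis .
qed

lemma sq_sum_le: "(x + y)\<^sup>2 \<le> 2 * x\<^sup>2 + 2 * (y::real)\<^sup>2"
proof -
  have "0 \<le> (x - y)\<^sup>2" by simp
  then show ?thesis by (simp add: power2_eq_square algebra_simps)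
qed

lemma R_row2: "t \<ge> 0 \<Longrightarrow> (\<integral>\<^sup>+s. ennreal ((R t s)\<^sup>2) \<partial>M0) \<le> ennreal PR"
proof -
  assume t: "t \<ge> 0"
  have [measurable]: "(\<lambda>\<theta>. S t \<theta>) \<in> borel_measurable M0" "(\<lambda>\<theta>. K t \<theta>) \<in> borel_measurable M0"
    using S_row_meas K_row_meas t by auto
  have pw: "ennreal ((R t s)\<^sup>2) \<le> ennreal 2 * ennreal ((K t s)\<^sup>2) + ennreal (2 * (P / (1 - q))) * ennreal \<bar>S t s\<bar>" if s: "s \<ge> 0" for s
  proof -
    have "\<bar>S t s\<bar> \<le> P / (1 - q)" by (rule S_sup[OF t s])
    then have "\<bar>S t s\<bar> * \<bar>S t s\<bar> \<le> P / (1 - q) * \<bar>S t s\<bar>"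
      by (rule mult_right_mono) simp
    then have "(S t s)\<^sup>2 \<le> P / (1 - q) * \<bar>S t s\<bar>"
      by (metis abs_mult_self_eq power2_eq_square)
    then have "(R t s)\<^sup>2 \<le> 2 * (K t s)\<^sup>2 + 2 * (P / (1 - q)) * \<bar>S t s\<bar>"
      using sq_sum_le[of "K t s" "S t s"] unfolding R_def by linarith
    then have "ennreal ((R t s)\<^sup>2) \<le> ennreal (2 * (K t s)\<^sup>2 + 2 * (P / (1 - q)) * \<bar>S t s\<bar>)"
      by (rule ennreal_leI)
    also have "\<dots> = ennreal (2 * (K t s)\<^sup>2) + ennreal (2 * (P / (1 - q)) * \<bar>S t s\<bar>)"
      by (rule ennreal_plus) (use P0 q1 in auto)
    also have "\<dots> = ennreal 2 * ennreal ((K t s)\<^sup>2) + ennreal (2 * (P / (1 - q))) * ennreal \<bar>S t s\<bar>"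
      by (subst (1 2) ennreal_mult) (use P0 q1 in auto)
    finally show ?thesis .
  qed
  have "(\<integral>\<^sup>+s. ennreal ((R t s)\<^sup>2) \<partial>M0) \<le> (\<integral>\<^sup>+s. ennreal 2 * ennreal ((K t s)\<^sup>2) + ennreal (2 * (P / (1 - q))) * ennreal \<bar>S t s\<bar> \<partial>M0)"
    by (intro nn_integral_mono pw) auto
  also have "\<dots> = ennreal 2 * (\<integral>\<^sup>+s. ennreal ((K t s)\<^sup>2) \<partial>M0) + ennreal (2 * (P / (1 - q))) * (\<integral>\<^sup>+s. ennreal \<bar>S t s\<bar> \<partial>M0)"
    by (simp add: nn_integral_add nn_integral_cmult)
  also have "\<dots> \<le> ennreal 2 * ennreal P + ennreal (2 * (P / (1 - q))) * ennreal (q\<^sup>2 / (1 - q))"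
    by (intro add_mono mult_left_mono row2 S_rowL1 t) auto
  also have "\<dots> = ennreal (2 * P) + ennreal (2 * (P / (1 - q)) * (q\<^sup>2 / (1 - q)))"
    by (subst (1 2) ennreal_mult) (use P0 q1 in auto)
  also have "\<dots> = ennreal PR" unfolding PR_def
    by (rule ennreal_plus[symmetric]) (use P0 q1 in auto)
  finally show ?thesis .
qed

lemma R_pair_meas[measurable]: "(\<lambda>z. R (fst z) (snd z)) \<in> borel_measurable (M0 \<Otimes>\<^sub>M M0)"
  using R_meas unfolding kmeas_def .

lemma R_row_fbound:
  assumes f[measurable]: "f \<in> borel_measurable M0" and fn: "(\<integral>\<^sup>+s. ennreal ((f s)\<^sup>2) \<partial>M0) \<le> ennreal Fn" "Fn \<ge> 0"
    and t: "t \<ge> 0"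
  shows "(\<integral>\<^sup>+s. ennreal \<bar>R t s * f s\<bar> \<partial>M0) \<le> ennreal ((PR + Fn) / 2)"
  by (rule nn_amgm[OF R_row_meas[OF t] f R_row2[OF t] fn(1) PR_nonneg fn(2)])

lemma K_row_fbound:
  assumes f[measurable]: "f \<in> borel_measurable M0" and fn: "(\<integral>\<^sup>+s. ennreal ((f s)\<^sup>2) \<partial>M0) \<le> ennreal Fn" "Fn \<ge> 0"
    and t: "t \<ge> 0"
  shows "(\<integral>\<^sup>+s. ennreal \<bar>K t s * f s\<bar> \<partial>M0) \<le> ennreal ((P + Fn) / 2)"
  by (rule nn_amgm[OF K_row_meas[OF t] f row2[OF t] fn(1) P0 fn(2)])

lemma Rf_meas: assumes [measurable]: "f \<in> borel_measurable M0" shows "(\<lambda>t. \<integral>s. R t s * f s \<partial>M0) \<in> borel_measurable M0"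
  by measurable

lemma Kf_meas: assumes [measurable]: "f \<in> borel_measurable M0" shows "(\<lambda>t. \<integral>s. K t s * f s \<partial>M0) \<in> borel_measurable M0"
  by measurable

lemma Rf_L2:
  assumes f[measurable]: "f \<in> borel_measurable M0" and fn: "(\<integral>\<^sup>+s. ennreal ((f s)\<^sup>2) \<partial>M0) < \<infinity>"
  shows "(\<integral>\<^sup>+t. ennreal ((\<integral>s. R t s * f s \<partial>M0)\<^sup>2) \<partial>M0) < \<infinity>"
proof -
  have pw: "ennreal ((\<integral>s. R t s * f s \<partial>M0)\<^sup>2) \<le> (\<integral>\<^sup>+s. ennreal \<bar>R t s\<bar> * ennreal \<bar>f s\<bar> \<partial>M0)\<^sup>2" for t
  proof -
    have "ennreal ((\<integral>s. R t s * f s \<partial>M0)\<^sup>2) = (ennreal \<bar>\<integral>s. R t s * f s \<partial>M0\<bar>)\<^sup>2"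
      by (simp add: ennreal_power)
    also have "\<dots> \<le> (\<integral>\<^sup>+s. ennreal \<bar>R t s\<bar> * ennreal \<bar>f s\<bar> \<partial>M0)\<^sup>2"
      using nn_norm_integral[of M0 "\<lambda>s. R t s * f s"] by (intro power_mono) (auto simp: abs_mult ennreal_mult)
    finally show ?thesis .
  qed
  have "(\<integral>\<^sup>+t. ennreal ((\<integral>s. R t s * f s \<partial>M0)\<^sup>2) \<partial>M0) \<le> (\<integral>\<^sup>+t. (\<integral>\<^sup>+s. ennreal \<bar>R t s\<bar> * ennreal \<bar>f s\<bar> \<partial>M0)\<^sup>2 \<partial>M0)"
    by (intro nn_integral_mono pw)
  also have "\<dots> \<le> ennreal (qR * qR) * (\<integral>\<^sup>+s. (ennreal \<bar>f s\<bar>)\<^sup>2 \<partial>M0)"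
    by (rule opbound[OF R_meas qR_nonneg qR_nonneg R_rowL1 R_colL1]) auto
  also have "\<dots> = ennreal (qR * qR) * (\<integral>\<^sup>+s. ennreal ((f s)\<^sup>2) \<partial>M0)"
    by (simp add: ennreal_power)
  also have "\<dots> < \<infinity>" using fn by (simp add: ennreal_mult_less_top)
  finally show ?thesis .
qed

lemma fbound_real:
  assumes "(\<integral>\<^sup>+s. ennreal \<bar>g s\<bar> \<partial>M) \<le> ennreal B" "B \<ge> 0"
  shows "\<bar>\<integral>s. g s \<partial>M\<bar> \<le> B"
proof -
  have "ennreal \<bar>\<integral>s. g s \<partial>M\<bar> \<le> ennreal B" using nn_norm_integral[of M g] assms(1) by (rule order.trans)
  then show ?thesis using assms(2) by (metis ennreal_le_iff)
qed

lemma sol_eq: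
  assumes f[measurable]: "f \<in> borel_measurable M0" and fn: "(\<integral>\<^sup>+s. ennreal ((f s)\<^sup>2) \<partial>M0) \<le> ennreal Fn" "Fn \<ge> 0"
    and t: "t \<ge> 0"
  shows "integrable M0 (\<lambda>s. K t s * (f s - (\<integral>u. R s u * f u \<partial>M0)))"
    and "(f t - (\<integral>u. R t u * f u \<partial>M0)) + (\<integral>s. K t s * (f s - (\<integral>u. R s u * f u \<partial>M0)) \<partial>M0) = f t"
proof -
  define Rf where "Rf s = (\<integral>u. R s u * f u \<partial>M0)" for s
  define B where "B = (PR + Fn) / 2"
  have B0: "B \<ge> 0" using PR_nonneg fn(2) by (simp add: B_def)
  have [measurable]: "Rf \<in> borel_measurable M0" unfolding Rf_def by (rule Rf_meas[OF f])
  have [measurable]: "(\<lambda>s. K t s) \<in> borel_measurable M0" by (rule K_row_meas[OF t])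
  have [measurable]: "(\<lambda>s. R t s) \<in> borel_measurable M0" by (rule R_row_meas[OF t])
  have iKf: "integrable M0 (\<lambda>s. K t s * f s)"
    by (rule integrable_nn_bound[OF _ K_row_fbound[OF f fn t]]) measurable
  have iRf: "integrable M0 (\<lambda>s. R t s * f s)"
    by (rule integrable_nn_bound[OF _ R_row_fbound[OF f fn t]]) measurable
  have Rfb: "\<bar>Rf s\<bar> \<le> B" if "s \<ge> 0" for s
    unfolding Rf_def B_def by (rule fbound_real[OF R_row_fbound[OF f fn that]]) (use B0 B_def in simp)
  have iKRf: "integrable M0 (\<lambda>s. K t s * Rf s)"
  proof (rule integrable_nn_bound)
    show "(\<lambda>s. K t s * Rf s) \<in> borel_measurable M0" by measurable
    have "(\<integral>\<^sup>+s. ennreal \<bar>K t s * Rf s\<bar> \<partial>M0) \<le> (\<integral>\<^sup>+s. ennreal \<bar>K t s\<bar> * ennreal B \<partial>M0)"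
    proof (intro nn_integral_mono)
      fix s assume "s \<in> space M0"
      then have "\<bar>K t s * Rf s\<bar> \<le> \<bar>K t s\<bar> * B" using Rfb by (auto simp: abs_mult intro!: mult_left_mono)
      then have "ennreal \<bar>K t s * Rf s\<bar> \<le> ennreal (\<bar>K t s\<bar> * B)" by (rule ennreal_leI)
      then show "ennreal \<bar>K t s * Rf s\<bar> \<le> ennreal \<bar>K t s\<bar> * ennreal B" using B0 by (simp add: ennreal_mult)
    qed
    also have "\<dots> = (\<integral>\<^sup>+s. ennreal \<bar>K t s\<bar> \<partial>M0) * ennreal B"
      by (rule nn_integral_multc) measurable
    also have "\<dots> \<le> ennreal q * ennreal B"
      by (intro mult_right_mono row1 t) auto
    finally show "(\<integral>\<^sup>+s. ennreal \<bar>K t s * Rf s\<bar> \<partial>M0) \<le> ennreal (q * B)"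
      using q0 B0 by (simp add: ennreal_mult)
  qed
  have eqI: "(\<lambda>s. K t s * (f s - Rf s)) = (\<lambda>s. K t s * f s - K t s * Rf s)"
    by (simp add: algebra_simps)
  show "integrable M0 (\<lambda>s. K t s * (f s - (\<integral>u. R s u * f u \<partial>M0)))"
    using Bochner_Integration.integrable_diff[OF iKf iKRf] unfolding Rf_def[symmetric] eqI .
  have pint: "integrable (M0 \<Otimes>\<^sub>M M0) (\<lambda>(s, u). K t s * (R s u * f u))"
    by (rule prod_int[OF R_meas _ f R_row_fbound[OF f fn] row1[OF t]]) measurable
  have "(\<integral>s. K t s * Rf s \<partial>M0) = (\<integral>s. (\<integral>u. K t s * (R s u * f u) \<partial>M0) \<partial>M0)"
    unfolding Rf_def by simp
  also have "\<dots> = (\<integral>u. (\<integral>s. K t s * (R s u * f u) \<partial>M0) \<partial>M0)"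
    by (rule M00.Fubini_integral[symmetric]) (rule pint)
  also have "\<dots> = (\<integral>u. (\<integral>s. K t s * R s u \<partial>M0) * f u \<partial>M0)"
    by (simp only: mult.assoc[symmetric] integral_mult_left_zero)
  also have "\<dots> = (\<integral>u. (K t u - R t u) * f u \<partial>M0)"
  proof (rule Bochner_Integration.integral_cong[OF refl])
    fix u assume "u \<in> space M0"
    then have u: "u \<ge> 0" by simp
    show "(\<integral>s. K t s * R s u \<partial>M0) * f u = (K t u - R t u) * f u"
      using R_left(2)[OF t u] by simp
  qed
  also have "\<dots> = (\<integral>u. K t u * f u \<partial>M0) - Rf t"
    unfolding Rf_def using Bochner_Integration.integral_diff[OF iKf iRf] by (simp add: algebra_simps)
  finally have KRf: "(\<integral>s. K t s * Rf s \<partial>M0) = (\<integral>u. K t u * f u \<partial>M0) - Rf t" .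
  have "(\<integral>s. K t s * (f s - Rf s) \<partial>M0) = (\<integral>s. K t s * f s \<partial>M0) - (\<integral>s. K t s * Rf s \<partial>M0)"
    unfolding eqI by (rule Bochner_Integration.integral_diff[OF iKf iKRf])
  then show "(f t - (\<integral>u. R t u * f u \<partial>M0)) + (\<integral>s. K t s * (f s - (\<integral>u. R s u * f u \<partial>M0)) \<partial>M0) = f t"
    unfolding Rf_def[symmetric] using KRf by simp
qed

lemma sol_unique:
  assumes Z[measurable]: "Z \<in> borel_measurable M0" and zn: "(\<integral>\<^sup>+s. ennreal ((Z s)\<^sup>2) \<partial>M0) \<le> ennreal Zn" "Zn \<ge> 0"
    and eq: "AE t in M0. Z t + (\<integral>s. K t s * Z s \<partial>M0) = 0"
  shows "AE t in M0. Z t = 0"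
proof -
  define KZ where "KZ \<theta> = (\<integral>s. K \<theta> s * Z s \<partial>M0)" for \<theta>
  define B where "B = (P + Zn) / 2"
  have B0: "B \<ge> 0" using P0 zn(2) by (simp add: B_def)
  have [measurable]: "KZ \<in> borel_measurable M0" unfolding KZ_def by (rule Kf_meas[OF Z])
  have KZb: "\<bar>KZ s\<bar> \<le> B" if "s \<ge> 0" for s
    unfolding KZ_def B_def by (rule fbound_real[OF K_row_fbound[OF Z zn that]]) (use B0 B_def in simp)
  have KZ0: "KZ t = 0" if t: "t \<ge> 0" for t
  proof -
    have [measurable]: "(\<lambda>s. K t s) \<in> borel_measurable M0" by (rule K_row_meas[OF t])
    have [measurable]: "(\<lambda>s. R t s) \<in> borel_measurable M0" by (rule R_row_meas[OF t])
    have iKZ: "integrable M0 (\<lambda>s. K t s * Z s)"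
      by (rule integrable_nn_bound[OF _ K_row_fbound[OF Z zn t]]) measurable
    have iRZ: "integrable M0 (\<lambda>s. R t s * Z s)"
      by (rule integrable_nn_bound[OF _ R_row_fbound[OF Z zn t]]) measurable
    have iRKZ: "integrable M0 (\<lambda>s. R t s * KZ s)"
    proof (rule integrable_nn_bound)
      show "(\<lambda>s. R t s * KZ s) \<in> borel_measurable M0" by measurable
      have "(\<integral>\<^sup>+s. ennreal \<bar>R t s * KZ s\<bar> \<partial>M0) \<le> (\<integral>\<^sup>+s. ennreal \<bar>R t s\<bar> * ennreal B \<partial>M0)"
      proof (intro nn_integral_mono)
        fix s assume "s \<in> space M0"
        then have "\<bar>R t s * KZ s\<bar> \<le> \<bar>R t s\<bar> * B" using KZb by (auto simp: abs_mult intro!: mult_left_mono)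
        then have "ennreal \<bar>R t s * KZ s\<bar> \<le> ennreal (\<bar>R t s\<bar> * B)" by (rule ennreal_leI)
        then show "ennreal \<bar>R t s * KZ s\<bar> \<le> ennreal \<bar>R t s\<bar> * ennreal B" using B0 by (simp add: ennreal_mult)
      qed
      also have "\<dots> = (\<integral>\<^sup>+s. ennreal \<bar>R t s\<bar> \<partial>M0) * ennreal B"
        by (rule nn_integral_multc) measurable
      also have "\<dots> \<le> ennreal qR * ennreal B"
        by (intro mult_right_mono R_rowL1 t) auto
      finally show "(\<integral>\<^sup>+s. ennreal \<bar>R t s * KZ s\<bar> \<partial>M0) \<le> ennreal (qR * B)"
        using qR_nonneg B0 by (simp add: ennreal_mult)
    qed
    have "0 = (\<integral>\<theta>. R t \<theta> * (Z \<theta> + KZ \<theta>) \<partial>M0)"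
      by (rule integral_eq_zero_AE[symmetric]) (use eq in \<open>auto simp: KZ_def\<close>)
    also have "\<dots> = (\<integral>\<theta>. R t \<theta> * Z \<theta> \<partial>M0) + (\<integral>\<theta>. R t \<theta> * KZ \<theta> \<partial>M0)"
      unfolding distrib_left by (rule Bochner_Integration.integral_add[OF iRZ iRKZ])
    also have "(\<integral>\<theta>. R t \<theta> * KZ \<theta> \<partial>M0) = (\<integral>\<theta>. (\<integral>s. R t \<theta> * (K \<theta> s * Z s) \<partial>M0) \<partial>M0)"
      unfolding KZ_def by simp
    also have "\<dots> = (\<integral>s. (\<integral>\<theta>. R t \<theta> * (K \<theta> s * Z s) \<partial>M0) \<partial>M0)"
      by (rule M00.Fubini_integral[symmetric]) (rule prod_int[OF Kmeas _ Z K_row_fbound[OF Z zn] R_rowL1[OF t]], measurable)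
    also have "\<dots> = (\<integral>s. (\<integral>\<theta>. R t \<theta> * K \<theta> s \<partial>M0) * Z s \<partial>M0)"
      by (simp only: mult.assoc[symmetric] integral_mult_left_zero)
    also have "\<dots> = (\<integral>s. (K t s - R t s) * Z s \<partial>M0)"
    proof (rule Bochner_Integration.integral_cong[OF refl])
      fix s assume "s \<in> space M0"
      then have s: "s \<ge> 0" by simp
      show "(\<integral>\<theta>. R t \<theta> * K \<theta> s \<partial>M0) * Z s = (K t s - R t s) * Z s"
        using R_right(2)[OF t s] by simp
    qed
    also have "\<dots> = KZ t - (\<integral>s. R t s * Z s \<partial>M0)"
      unfolding KZ_def using Bochner_Integration.integral_diff[OF iKZ iRZ] by (simp add: algebra_simps)
    finally show "KZ t = 0" by simp
  qed
  show ?thesis using eq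
    by (rule AE_mp) (auto intro!: AE_I2 simp: KZ0[unfolded KZ_def])
qed

definition Lc :: "real \<Rightarrow> real \<Rightarrow> real" where
  "Lc t \<phi> = enn2real (\<integral>\<^sup>+\<theta>. ennreal \<bar>R t \<theta>\<bar> * ennreal \<bar>K \<theta> \<phi>\<bar> \<partial>M0)"

lemma Lc_meas: "kmeas Lc"
proof -
  have [measurable]: "(\<lambda>x. R (fst (fst x)) (snd x)) \<in> borel_measurable ((M0 \<Otimes>\<^sub>M M0) \<Otimes>\<^sub>M M0)"
    by (rule kmeas_app[OF R_meas]) measurable
  have [measurable]: "(\<lambda>x. K (snd x) (snd (fst x))) \<in> borel_measurable ((M0 \<Otimes>\<^sub>M M0) \<Otimes>\<^sub>M M0)"
    by (rule kmeas_app[OF Kmeas]) measurable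
  show ?thesis unfolding kmeas_def Lc_def by measurable
qed

lemma Lc_fin: "t \<ge> 0 \<Longrightarrow> \<phi> \<ge> 0 \<Longrightarrow> (\<integral>\<^sup>+\<theta>. ennreal \<bar>R t \<theta>\<bar> * ennreal \<bar>K \<theta> \<phi>\<bar> \<partial>M0) \<le> ennreal ((PR + P) / 2)"
  using nn_amgm[OF R_row_meas K_col_meas R_row2 col2 PR_nonneg P0, of t \<phi>] by (simp add: abs_mult ennreal_mult)

lemma Lc_eq: "t \<ge> 0 \<Longrightarrow> \<phi> \<ge> 0 \<Longrightarrow> ennreal \<bar>Lc t \<phi>\<bar> = (\<integral>\<^sup>+\<theta>. ennreal \<bar>R t \<theta>\<bar> * ennreal \<bar>K \<theta> \<phi>\<bar> \<partial>M0)"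
  unfolding Lc_def using le_less_trans[OF Lc_fin ennreal_less_top] by (simp add: ennreal_enn2real)

lemma Lc_row: "t \<ge> 0 \<Longrightarrow> (\<integral>\<^sup>+\<phi>. ennreal \<bar>Lc t \<phi>\<bar> \<partial>M0) \<le> ennreal (qR * q)"
proof -
  assume t: "t \<ge> 0"
  have [measurable]: "(\<lambda>\<theta>. R t \<theta>) \<in> borel_measurable M0" by (rule R_row_meas[OF t])
  have "(\<integral>\<^sup>+\<phi>. ennreal \<bar>Lc t \<phi>\<bar> \<partial>M0) = (\<integral>\<^sup>+\<phi>. \<integral>\<^sup>+\<theta>. ennreal \<bar>R t \<theta>\<bar> * ennreal \<bar>K \<theta> \<phi>\<bar> \<partial>M0 \<partial>M0)"
    using t by (intro nn_integral_cong) (simp add: Lc_eq)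
  also have "\<dots> = (\<integral>\<^sup>+\<theta>. \<integral>\<^sup>+\<phi>. ennreal \<bar>R t \<theta>\<bar> * ennreal \<bar>K \<theta> \<phi>\<bar> \<partial>M0 \<partial>M0)"
    by (rule M00.Fubini') measurable
  also have "\<dots> = (\<integral>\<^sup>+\<theta>. ennreal \<bar>R t \<theta>\<bar> * (\<integral>\<^sup>+\<phi>. ennreal \<bar>K \<theta> \<phi>\<bar> \<partial>M0) \<partial>M0)"
    by (intro nn_integral_cong nn_integral_cmult) (auto intro!: measurable_compose[OF _ measurable_ennreal] borel_measurable_abs K_row_meas)
  also have "\<dots> \<le> (\<integral>\<^sup>+\<theta>. ennreal \<bar>R t \<theta>\<bar> * ennreal q \<partial>M0)"
    by (intro nn_integral_mono mult_left_mono row1) auto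
  also have "\<dots> = (\<integral>\<^sup>+\<theta>. ennreal \<bar>R t \<theta>\<bar> \<partial>M0) * ennreal q"
    by (rule nn_integral_multc) measurable
  also have "\<dots> \<le> ennreal qR * ennreal q"
    by (intro mult_right_mono R_rowL1 t) auto
  finally show ?thesis using qR_nonneg q0 by (simp add: ennreal_mult)
qed

lemma Lc_col: "\<phi> \<ge> 0 \<Longrightarrow> (\<integral>\<^sup>+t. ennreal \<bar>Lc t \<phi>\<bar> \<partial>M0) \<le> ennreal (qR * q)"
proof -
  assume ph: "\<phi> \<ge> 0"
  have [measurable]: "(\<lambda>\<theta>. K \<theta> \<phi>) \<in> borel_measurable M0" by (rule K_col_meas[OF ph])
  have "(\<integral>\<^sup>+t. ennreal \<bar>Lc t \<phi>\<bar> \<partial>M0) = (\<integral>\<^sup>+t. \<integral>\<^sup>+\<theta>. ennreal \<bar>R t \<theta>\<bar> * ennreal \<bar>K \<theta> \<phi>\<bar> \<partial>M0 \<partial>M0)"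
    using ph by (intro nn_integral_cong) (simp add: Lc_eq)
  also have "\<dots> = (\<integral>\<^sup>+\<theta>. \<integral>\<^sup>+t. ennreal \<bar>R t \<theta>\<bar> * ennreal \<bar>K \<theta> \<phi>\<bar> \<partial>M0 \<partial>M0)"
    by (rule M00.Fubini'[symmetric]) measurable
  also have "\<dots> = (\<integral>\<^sup>+\<theta>. (\<integral>\<^sup>+t. ennreal \<bar>R t \<theta>\<bar> \<partial>M0) * ennreal \<bar>K \<theta> \<phi>\<bar> \<partial>M0)"
    by (intro nn_integral_cong nn_integral_multc) (auto intro!: measurable_compose[OF _ measurable_ennreal] borel_measurable_abs R_col_meas)
  also have "\<dots> \<le> (\<integral>\<^sup>+\<theta>. ennreal qR * ennreal \<bar>K \<theta> \<phi>\<bar> \<partial>M0)"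
    by (intro nn_integral_mono mult_right_mono R_colL1) auto
  also have "\<dots> = ennreal qR * (\<integral>\<^sup>+\<theta>. ennreal \<bar>K \<theta> \<phi>\<bar> \<partial>M0)"
    by (rule nn_integral_cmult) measurable
  also have "\<dots> \<le> ennreal qR * ennreal q"
    by (intro mult_left_mono col1 ph) auto
  finally show ?thesis using qR_nonneg q0 by (simp add: ennreal_mult)
qed

lemma core_unique:
  assumes R': "kmeas R'" and t: "t \<ge> 0" and s: "s \<ge> 0"
    and h1: "integrable M0 (\<lambda>\<theta>. K t \<theta> * R' \<theta> s)" "R' t s + (\<integral>\<theta>. K t \<theta> * R' \<theta> s \<partial>M0) = K t s"
    and h2: "AE \<theta> in M0. integrable M0 (\<lambda>\<phi>. K \<theta> \<phi> * R' \<phi> s) \<and> R' \<theta> s + (\<integral>\<phi>. K \<theta> \<phi> * R' \<phi> s \<partial>M0) = K \<theta> s"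
    and f1: "(\<integral>\<^sup>+\<theta>. ennreal \<bar>R t \<theta>\<bar> * ennreal \<bar>R' \<theta> s\<bar> \<partial>M0) < \<infinity>"
    and f2: "(\<integral>\<^sup>+\<phi>. ennreal \<bar>Lc t \<phi>\<bar> * ennreal \<bar>R' \<phi> s\<bar> \<partial>M0) < \<infinity>"
  shows "R' t s = R t s"
proof -
  have [measurable]: "(\<lambda>z. R' (fst z) (snd z)) \<in> borel_measurable (M0 \<Otimes>\<^sub>M M0)" using R' by (simp add: kmeas_def)
  have [measurable]: "(\<lambda>\<theta>. R t \<theta>) \<in> borel_measurable M0" by (rule R_row_meas[OF t])
  have [measurable]: "(\<lambda>\<theta>. R' \<theta> s) \<in> borel_measurable M0" by (rule kmeas_app[OF R']) (use s in auto)
  have [measurable]: "(\<lambda>\<theta>. K \<theta> s) \<in> borel_measurable M0" by (rule K_col_meas[OF s])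
  have [measurable]: "(\<lambda>\<theta>. K t \<theta>) \<in> borel_measurable M0" by (rule K_row_meas[OF t])
  have iRR: "integrable M0 (\<lambda>\<theta>. R t \<theta> * R' \<theta> s)"
    using f1 by (subst integrable_iff_bounded) (auto simp: abs_mult ennreal_mult)
  have pint: "integrable (M0 \<Otimes>\<^sub>M M0) (\<lambda>(\<theta>, \<phi>). R t \<theta> * (K \<theta> \<phi> * R' \<phi> s))"
  proof (subst integrable_iff_bounded, intro conjI)
    show "(\<lambda>(\<theta>, \<phi>). R t \<theta> * (K \<theta> \<phi> * R' \<phi> s)) \<in> borel_measurable (M0 \<Otimes>\<^sub>M M0)"
      unfolding split_beta' by measurable
    have "(\<integral>\<^sup>+z. ennreal (norm ((\<lambda>(\<theta>, \<phi>). R t \<theta> * (K \<theta> \<phi> * R' \<phi> s)) z)) \<partial>(M0 \<Otimes>\<^sub>M M0))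
        = (\<integral>\<^sup>+\<theta>. \<integral>\<^sup>+\<phi>. ennreal \<bar>R t \<theta>\<bar> * ennreal \<bar>K \<theta> \<phi>\<bar> * ennreal \<bar>R' \<phi> s\<bar> \<partial>M0 \<partial>M0)"
      by (subst M0.nn_integral_fst[symmetric]) (auto simp: abs_mult ennreal_mult mult_ac intro!: nn_integral_cong)
    also have "\<dots> = (\<integral>\<^sup>+\<phi>. \<integral>\<^sup>+\<theta>. ennreal \<bar>R t \<theta>\<bar> * ennreal \<bar>K \<theta> \<phi>\<bar> * ennreal \<bar>R' \<phi> s\<bar> \<partial>M0 \<partial>M0)"
      by (rule M00.Fubini'[symmetric]) measurable
    also have "\<dots> = (\<integral>\<^sup>+\<phi>. ennreal \<bar>Lc t \<phi>\<bar> * ennreal \<bar>R' \<phi> s\<bar> \<partial>M0)"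
    proof (rule nn_integral_cong)
      fix \<phi> assume "\<phi> \<in> space M0"
      then have ph: "\<phi> \<ge> 0" by simp
      have [measurable]: "(\<lambda>\<theta>. K \<theta> \<phi>) \<in> borel_measurable M0" by (rule K_col_meas[OF ph])
      show "(\<integral>\<^sup>+\<theta>. ennreal \<bar>R t \<theta>\<bar> * ennreal \<bar>K \<theta> \<phi>\<bar> * ennreal \<bar>R' \<phi> s\<bar> \<partial>M0) = ennreal \<bar>Lc t \<phi>\<bar> * ennreal \<bar>R' \<phi> s\<bar>"
        by (subst nn_integral_multc) (auto simp: Lc_eq[OF t ph])
    qed
    finally show "(\<integral>\<^sup>+z. ennreal (norm ((\<lambda>(\<theta>, \<phi>). R t \<theta> * (K \<theta> \<phi> * R' \<phi> s)) z)) \<partial>(M0 \<Otimes>\<^sub>M M0)) < \<infinity>"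
      using f2 by simp
  qed
  have iIn: "integrable M0 (\<lambda>\<theta>. \<integral>\<phi>. R t \<theta> * (K \<theta> \<phi> * R' \<phi> s) \<partial>M0)"
    by (rule M00.integrable_fst[OF pint])
  have "K t s - R t s = (\<integral>\<theta>. R t \<theta> * K \<theta> s \<partial>M0)" using R_right(2)[OF t s] by simp
  also have "\<dots> = (\<integral>\<theta>. R t \<theta> * R' \<theta> s + (\<integral>\<phi>. R t \<theta> * (K \<theta> \<phi> * R' \<phi> s) \<partial>M0) \<partial>M0)"
  proof (rule integral_cong_AE)
    show "(\<lambda>\<theta>. R t \<theta> * K \<theta> s) \<in> borel_measurable M0" by measurable
    show "(\<lambda>\<theta>. R t \<theta> * R' \<theta> s + (\<integral>\<phi>. R t \<theta> * (K \<theta> \<phi> * R' \<phi> s) \<partial>M0)) \<in> borel_measurable M0"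
      using borel_measurable_integrable[OF iIn] by measurable
    show "AE \<theta> in M0. R t \<theta> * K \<theta> s = R t \<theta> * R' \<theta> s + (\<integral>\<phi>. R t \<theta> * (K \<theta> \<phi> * R' \<phi> s) \<partial>M0)"
      using h2 by eventually_elim (simp add: distrib_left[symmetric])
  qed
  also have "\<dots> = (\<integral>\<theta>. R t \<theta> * R' \<theta> s \<partial>M0) + (\<integral>\<theta>. (\<integral>\<phi>. R t \<theta> * (K \<theta> \<phi> * R' \<phi> s) \<partial>M0) \<partial>M0)"
    by (rule Bochner_Integration.integral_add[OF iRR iIn])
  also have "(\<integral>\<theta>. (\<integral>\<phi>. R t \<theta> * (K \<theta> \<phi> * R' \<phi> s) \<partial>M0) \<partial>M0) = (\<integral>\<phi>. (\<integral>\<theta>. R t \<theta> * (K \<theta> \<phi> * R' \<phi> s) \<partial>M0) \<partial>M0)"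
    by (rule M00.Fubini_integral[symmetric]) (rule pint)
  also have "\<dots> = (\<integral>\<phi>. (\<integral>\<theta>. R t \<theta> * K \<theta> \<phi> \<partial>M0) * R' \<phi> s \<partial>M0)"
    by (simp only: mult.assoc[symmetric] integral_mult_left_zero)
  also have "\<dots> = (\<integral>\<phi>. (K t \<phi> - R t \<phi>) * R' \<phi> s \<partial>M0)"
  proof (rule Bochner_Integration.integral_cong[OF refl])
    fix \<phi> assume "\<phi> \<in> space M0"
    then have ph: "\<phi> \<ge> 0" by simp
    show "(\<integral>\<theta>. R t \<theta> * K \<theta> \<phi> \<partial>M0) * R' \<phi> s = (K t \<phi> - R t \<phi>) * R' \<phi> s"
      using R_right(2)[OF t ph] by simp
  qed
  also have "\<dots> = (\<integral>\<phi>. K t \<phi> * R' \<phi> s \<partial>M0) - (\<integral>\<phi>. R t \<phi> * R' \<phi> s \<partial>M0)"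
    using Bochner_Integration.integral_diff[OF h1(1) iRR] by (simp add: algebra_simps)
  finally have "K t s - R t s = (\<integral>\<phi>. K t \<phi> * R' \<phi> s \<partial>M0)" by simp
  with h1(2) show ?thesis by simp
qed

lemma resolvent_unique:
  fixes w :: "real \<Rightarrow> real"
  assumes F: "fredholm_L2 R'"
    and hyp: "AE z in M0 \<Otimes>\<^sub>M M0. integrable M0 (\<lambda>\<theta>. K (fst z) \<theta> * R' \<theta> (snd z)) \<and>
        R' (fst z) (snd z) + (\<integral>\<theta>. K (fst z) \<theta> * R' \<theta> (snd z) \<partial>M0) = K (fst z) (snd z)"
    and w[measurable]: "w \<in> borel_measurable M0" and wpos: "\<And>t. t \<ge> 0 \<Longrightarrow> 0 < w t"
    and w1: "\<And>t. t \<ge> 0 \<Longrightarrow> w t \<le> 1"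
    and win: "(\<integral>\<^sup>+t. ennreal ((w t)\<^sup>2) \<partial>M0) < \<infinity>"
  shows "AE z in M0 \<Otimes>\<^sub>M M0. R' (fst z) (snd z) = R (fst z) (snd z)"
proof -
  have R': "kmeas R'" using F by (simp add: fredholm_L2_def kmeas_def)
  have [measurable]: "(\<lambda>z. R' (fst z) (snd z)) \<in> borel_measurable (M0 \<Otimes>\<^sub>M M0)" using R' by (simp add: kmeas_def)
  define HP where "HP t s \<longleftrightarrow> integrable M0 (\<lambda>\<theta>. K t \<theta> * R' \<theta> s) \<and>
        R' t s + (\<integral>\<theta>. K t \<theta> * R' \<theta> s \<partial>M0) = K t s" for t s
  have A1: "AE t in M0. AE s in M0. (\<integral>\<^sup>+\<theta>. ennreal \<bar>R t \<theta>\<bar> * ennreal \<bar>R' \<theta> s\<bar> \<partial>M0) < \<infinity>"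
    by (rule AE_fin[OF F R_meas qR_nonneg qR_nonneg R_rowL1 R_colL1 w wpos w1 win])
  have A2: "AE t in M0. AE s in M0. (\<integral>\<^sup>+\<phi>. ennreal \<bar>Lc t \<phi>\<bar> * ennreal \<bar>R' \<phi> s\<bar> \<partial>M0) < \<infinity>"
    by (rule AE_fin[OF F Lc_meas _ _ Lc_row Lc_col w wpos w1 win]) (use qR_nonneg q0 in auto)
  have hyp': "AE z in M0 \<Otimes>\<^sub>M M0. HP (fst z) (snd z)" using hyp by (simp add: HP_def)
  have A3: "AE t in M0. AE s in M0. HP t s"
    using M00.AE_pair[OF hyp'] by simp
  from hyp' obtain N where N: "{z \<in> space (M0 \<Otimes>\<^sub>M M0). \<not> HP (fst z) (snd z)} \<subseteq> N" "N \<in> sets (M0 \<Otimes>\<^sub>M M0)"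
    "emeasure (M0 \<Otimes>\<^sub>M M0) N = 0"
    by (rule AE_E)
  have "AE z in M0 \<Otimes>\<^sub>M M0. z \<notin> N" using N by (intro AE_not_in) auto
  then have "AE \<theta> in M0. AE s in M0. (\<theta>, s) \<notin> N" using M00.AE_pair by blast
  moreover have "{x \<in> space (M0 \<Otimes>\<^sub>M M0). (fst x, snd x) \<notin> N} \<in> sets (M0 \<Otimes>\<^sub>M M0)"
  proof -
    have "{x \<in> space (M0 \<Otimes>\<^sub>M M0). (fst x, snd x) \<notin> N} = space (M0 \<Otimes>\<^sub>M M0) - N" by auto
    then show ?thesis using N(2) by auto
  qed
  ultimately have A4pre: "AE s in M0. AE \<theta> in M0. (\<theta>, s) \<notin> N"
    using M00.AE_commute[of "\<lambda>\<theta> s. (\<theta>, s) \<notin> N"] by simp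
  have A4: "AE s in M0. AE \<theta> in M0. HP \<theta> s"
  proof (rule AE_mp[OF A4pre], rule AE_I2, rule impI)
    fix s assume s: "s \<in> space M0" and ae: "AE \<theta> in M0. (\<theta>, s) \<notin> N"
    show "AE \<theta> in M0. HP \<theta> s" using ae
      by (rule AE_mp) (rule AE_I2, use N(1) s in \<open>auto simp: space_pair_measure\<close>)
  qed
  have A4': "AE t in M0. AE s in M0. AE \<theta> in M0. HP \<theta> s" by (rule AE_I2) (rule A4)
  have "AE t in M0. AE s in M0. R' t s = R t s"
  proof -
    have Hall: "AE t in M0. (AE s in M0. (\<integral>\<^sup>+\<theta>. ennreal \<bar>R t \<theta>\<bar> * ennreal \<bar>R' \<theta> s\<bar> \<partial>M0) < \<infinity>)
       \<and> (AE s in M0. (\<integral>\<^sup>+\<phi>. ennreal \<bar>Lc t \<phi>\<bar> * ennreal \<bar>R' \<phi> s\<bar> \<partial>M0) < \<infinity>)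
       \<and> (AE s in M0. HP t s) \<and> (AE s in M0. AE \<theta> in M0. HP \<theta> s)"
      using A1 A2 A3 A4' by eventually_elim auto
    show ?thesis
    proof (rule AE_mp[OF Hall], rule AE_I2, rule impI)
      fix t assume t: "t \<in> space M0" and
        H: "(AE s in M0. (\<integral>\<^sup>+\<theta>. ennreal \<bar>R t \<theta>\<bar> * ennreal \<bar>R' \<theta> s\<bar> \<partial>M0) < \<infinity>)
       \<and> (AE s in M0. (\<integral>\<^sup>+\<phi>. ennreal \<bar>Lc t \<phi>\<bar> * ennreal \<bar>R' \<phi> s\<bar> \<partial>M0) < \<infinity>)
       \<and> (AE s in M0. HP t s) \<and> (AE s in M0. AE \<theta> in M0. HP \<theta> s)"
      have "AE s in M0. s \<in> space M0" by (rule AE_I2)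
      then show "AE s in M0. R' t s = R t s"
        using H[THEN conjunct1] H[THEN conjunct2, THEN conjunct1] H[THEN conjunct2, THEN conjunct2, THEN conjunct1]
          H[THEN conjunct2, THEN conjunct2, THEN conjunct2]
      proof eventually_elim
        case (elim s)
        then show ?case using t
          by (intro core_unique[OF R']) (auto simp: HP_def)
      qed
    qed
  qed
  moreover have "{x \<in> space (M0 \<Otimes>\<^sub>M M0). R' (fst x) (snd x) = R (fst x) (snd x)} \<in> sets (M0 \<Otimes>\<^sub>M M0)"
    unfolding pred_def[symmetric] by measurable
  ultimately show ?thesis using M00.AE_pair_iff[of "\<lambda>t s. R' t s = R t s"] by simp
qed

end



lemma M0_id: "(\<lambda>x. x) \<in> borel_measurable M0"
  unfolding M0_def by (rule measurable_restrict_space1) simp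

lemma fst_M0[measurable]: "fst \<in> borel_measurable (M0 \<Otimes>\<^sub>M M0)"
  using measurable_compose[OF measurable_fst[of M0 M0] M0_id] by simp
lemma snd_M0[measurable]: "snd \<in> borel_measurable (M0 \<Otimes>\<^sub>M M0)"
  using measurable_compose[OF measurable_snd[of M0 M0] M0_id] by simp

lemma sets_bl: "sets (borel \<Otimes>\<^sub>M lborel) = sets (borel \<Otimes>\<^sub>M (borel::real measure))"
  by (rule sets_pair_measure_cong) simp_all

lemma bl_meas: "f \<in> borel_measurable (borel \<Otimes>\<^sub>M (borel::real measure)) \<Longrightarrow> f \<in> borel_measurable (borel \<Otimes>\<^sub>M (lborel::real measure))"
  using measurable_cong_sets[OF sets_bl[where 'a=real] refl, of borel] by simp

lemma pospow_meas[measurable]: "(\<lambda>x. pospow (f x) a) \<in> borel_measurable M" if [measurable]: "f \<in> borel_measurable M"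
  unfolding pospow_def by measurable

lemma pospow_nonneg: "pospow x a \<ge> 0" by (simp add: pospow_def)

lemma pospow_nonpos: "x \<le> 0 \<Longrightarrow> pospow x a = 0" by (simp add: pospow_def)

lemma Gamma_shift:
  fixes m a d :: real
  assumes m: "m > 0" and a: "a > 0" and d: "d \<ge> 0"
  shows "(\<integral>\<^sup>+x. ennreal (exp (- m * x) * pospow (x - d) (a - 1)) \<partial>lborel) = ennreal (exp (- m * d) * Gamma a * m powr (- a))"
proof -
  define f where "f x = ennreal (exp (- m * x) * pospow (x - d) (a - 1))" for x
  have [measurable]: "f \<in> borel_measurable borel" unfolding f_def by measurable
  have "(\<integral>\<^sup>+x. f x \<partial>lborel) = \<bar>1/m\<bar> * (\<integral>\<^sup>+x. f (d + (1/m) * x) \<partial>lborel)"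
    by (rule nn_integral_real_affine) (use m in auto)
  also have "(\<integral>\<^sup>+x. f (d + (1/m) * x) \<partial>lborel) = (\<integral>\<^sup>+x. ennreal (exp (- m * d) * m powr (1 - a)) * ennreal (indicator {0..} x * x powr (a - 1) / exp x) \<partial>lborel)"
  proof (rule nn_integral_cong)
    fix x :: real
    show "f (d + (1/m) * x) = ennreal (exp (- m * d) * m powr (1 - a)) * ennreal (indicator {0..} x * x powr (a - 1) / exp x)"
    proof (cases "x > 0")
      case True
      have "pospow (d + 1 / m * x - d) (a - 1) = (x / m) powr (a - 1)"
        using True m by (simp add: pospow_def)
      also have "\<dots> = x powr (a - 1) / m powr (a - 1)"
        using True m by (simp add: powr_divide)
      also have "\<dots> = x powr (a - 1) * m powr (1 - a)"
        using powr_minus[of m "a - 1"] by (simp add: divide_inverse)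
      finally have pp: "pospow (d + 1 / m * x - d) (a - 1) = x powr (a - 1) * m powr (1 - a)" .
      have ee: "exp (- m * (d + 1 / m * x)) = exp (- m * d) / exp x"
      proof -
        have "- m * (d + 1 / m * x) = - m * d - x" using m by (simp add: algebra_simps)
        then show ?thesis by (simp add: exp_diff)
      qed
      show ?thesis using True m unfolding f_def pp ee
        by (simp add: ennreal_mult[symmetric] field_simps)
    next
      case False
      then have "\<not> (x / m > 0)" using m by (simp add: divide_pos_pos zero_less_divide_iff)
      then show ?thesis unfolding f_def using m False by (auto simp: pospow_def indicator_def)
    qed
  qed
  also have "\<dots> = ennreal (exp (- m * d) * m powr (1 - a)) * ennreal (Gamma a)"
    by (subst nn_integral_cmult) (auto simp: Gamma_conv_nn_integral_real[OF a])
  finally have "(\<integral>\<^sup>+x. f x \<partial>lborel) = ennreal (1/m) * (ennreal (exp (- m * d) * m powr (1 - a)) * ennreal (Gamma a))"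
    using m by simp
  also have "\<dots> = ennreal (exp (- m * d) * Gamma a * m powr (- a))"
  proof -
    have "1/m * (exp (- m * d) * m powr (1 - a) * Gamma a) = exp (- m * d) * Gamma a * m powr (- a)"
      using m by (simp add: powr_diff powr_minus field_simps)
    then show ?thesis using m a by (simp add: ennreal_mult[symmetric] Gamma_real_pos less_imp_le)
  qed
  finally show ?thesis unfolding f_def .
qed

lemma nn_M0: "(\<integral>\<^sup>+x. f x \<partial>M0) = (\<integral>\<^sup>+x. f x * indicator {0..} x \<partial>lborel)"
  unfolding M0_def by (rule nn_integral_restrict_space) simp

lemma g_lam_meas[measurable]: "(\<lambda>\<tau>. g_lam b c gamma alpha delta lam \<tau>) \<in> borel_measurable borel"
proof -
  have [measurable]: "(\<lambda>\<tau>::real. LINT \<theta>:{0<..}|lborel. exp (- lam * \<theta>) * \<theta> powr (alpha - 1) * (\<theta> + \<tau>) powr (alpha - 1)) \<in> borel_measurable borel"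
    unfolding set_lebesgue_integral_def
    apply (rule lborel.borel_measurable_lebesgue_integral)
    apply (rule bl_meas)
    unfolding split_beta' indicator_def by measurable
  show ?thesis unfolding g_lam_def by measurable
qed

locale spec =
  fixes b c gamma alpha delta lam mu :: real
  assumes c: "c \<noteq> 0" and gamma: "gamma > 0" and a1: "1/2 < alpha" and a2: "alpha \<le> 1"
    and d: "delta \<ge> 0" and mu: "mu > 0" and lam: "lam \<ge> 2 * mu"
begin

definition "Gm = Gamma alpha"
definition "Cp = c\<^sup>2 * gamma + b\<^sup>2 * exp (- lam * delta)"
definition "A = Cp * lam powr (- alpha) / Gm"
definition "B = \<bar>b\<bar> / Gm"
definition "G \<tau> = A * pospow \<tau> (alpha - 1) + B * pospow (\<tau> - delta) (alpha - 1)"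
definition "Psi \<tau> = exp (- mu * \<tau>) * G \<tau>"
definition "Phi \<tau> = Psi \<tau> + Psi (- \<tau>)"
definition "K t s = exp (- mu * (t - s)) * k_lam b c gamma alpha delta lam t s"
definition "q = 2 * ((Cp * lam powr (- alpha) + \<bar>b\<bar> * exp (- mu * delta)) * mu powr (- alpha))"

lemma lam_pos: "lam > 0" using mu lam by simp
lemma alpha_pos: "alpha > 0" using a1 by simp
lemma Gm_pos: "Gm > 0" unfolding Gm_def using alpha_pos by (rule Gamma_real_pos)
lemma Cp_pos: "Cp > 0" unfolding Cp_def using c gamma by (simp add: add_pos_nonneg)
lemma A_nonneg: "A \<ge> 0" unfolding A_def using Cp_pos Gm_pos by simp
lemma B_nonneg: "B \<ge> 0" unfolding B_def using Gm_pos by simp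
lemma G_nonneg: "G \<tau> \<ge> 0" unfolding G_def using A_nonneg B_nonneg by (simp add: pospow_nonneg)
lemma Psi_nonneg: "Psi \<tau> \<ge> 0" unfolding Psi_def using G_nonneg by simp
lemma Phi_nonneg: "Phi \<tau> \<ge> 0" unfolding Phi_def using Psi_nonneg by (simp add: add_nonneg_nonneg)
lemma q_nonneg: "q \<ge> 0" unfolding q_def using Cp_pos lam_pos mu by (simp add: add_nonneg_nonneg)
lemma Psi_nonpos: "\<tau> \<le> 0 \<Longrightarrow> Psi \<tau> = 0"
  unfolding Psi_def G_def using d by (simp add: pospow_nonpos)

lemma G_meas[measurable]: "G \<in> borel_measurable borel" unfolding G_def by measurable
lemma Psi_meas[measurable]: "Psi \<in> borel_measurable borel" unfolding Psi_def by measurable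
lemma Phi_meas[measurable]: "Phi \<in> borel_measurable borel" unfolding Phi_def by measurable

lemma J_bound:
  assumes tau: "\<tau> > 0"
  shows "\<bar>LINT \<theta>:{0<..}|lborel. exp (- lam * \<theta>) * \<theta> powr (alpha - 1) * (\<theta> + \<tau>) powr (alpha - 1)\<bar>
      \<le> Gm * lam powr (- alpha) * \<tau> powr (alpha - 1)"
proof -
  have "ennreal \<bar>LINT \<theta>:{0<..}|lborel. exp (- lam * \<theta>) * \<theta> powr (alpha - 1) * (\<theta> + \<tau>) powr (alpha - 1)\<bar>
      \<le> (\<integral>\<^sup>+\<theta>. ennreal \<bar>indicator {0<..} \<theta> *\<^sub>R (exp (- lam * \<theta>) * \<theta> powr (alpha - 1) * (\<theta> + \<tau>) powr (alpha - 1))\<bar> \<partial>lborel)"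
    unfolding set_lebesgue_integral_def by (rule nn_norm_integral)
  also have "\<dots> \<le> (\<integral>\<^sup>+\<theta>. ennreal (exp (- lam * \<theta>) * pospow (\<theta> - 0) (alpha - 1)) * ennreal (\<tau> powr (alpha - 1)) \<partial>lborel)"
  proof (rule nn_integral_mono)
    fix \<theta> :: real
    show "ennreal \<bar>indicator {0<..} \<theta> *\<^sub>R (exp (- lam * \<theta>) * \<theta> powr (alpha - 1) * (\<theta> + \<tau>) powr (alpha - 1))\<bar>
        \<le> ennreal (exp (- lam * \<theta>) * pospow (\<theta> - 0) (alpha - 1)) * ennreal (\<tau> powr (alpha - 1))"
    proof (cases "\<theta> > 0")
      case True
      have "(\<theta> + \<tau>) powr (alpha - 1) \<le> \<tau> powr (alpha - 1)"
        using powr_mono2'[of "alpha - 1" \<tau> "\<theta> + \<tau>"] a2 tau True by simp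
      then have "exp (- lam * \<theta>) * \<theta> powr (alpha - 1) * (\<theta> + \<tau>) powr (alpha - 1) \<le> exp (- lam * \<theta>) * \<theta> powr (alpha - 1) * \<tau> powr (alpha - 1)"
        by (intro mult_left_mono) auto
      then show ?thesis using True tau by (auto simp: pospow_def ennreal_mult[symmetric] intro!: ennreal_leI)
    qed simp
  qed
  also have "\<dots> = (\<integral>\<^sup>+\<theta>. ennreal (exp (- lam * \<theta>) * pospow (\<theta> - 0) (alpha - 1)) \<partial>lborel) * ennreal (\<tau> powr (alpha - 1))"
    by (rule nn_integral_multc) measurable
  also have "\<dots> = ennreal (exp (- lam * 0) * Gamma alpha * lam powr (- alpha)) * ennreal (\<tau> powr (alpha - 1))"
    by (simp only: Gamma_shift[OF lam_pos alpha_pos order.refl])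
  also have "\<dots> = ennreal (Gm * lam powr (- alpha) * \<tau> powr (alpha - 1))"
    using Gm_pos by (simp add: Gm_def ennreal_mult[symmetric])
  finally show ?thesis using Gm_pos by (simp add: ennreal_le_iff)
qed

lemma g_bound:
  assumes tau: "\<tau> > 0"
  shows "\<bar>g_lam b c gamma alpha delta lam \<tau>\<bar> \<le> G \<tau>"
proof -
  define J where "J = (LINT \<theta>:{0<..}|lborel. exp (- lam * \<theta>) * \<theta> powr (alpha - 1) * (\<theta> + \<tau>) powr (alpha - 1))"
  have gl: "g_lam b c gamma alpha delta lam \<tau> = Cp / Gm\<^sup>2 * J - b / Gm * pospow (\<tau> - delta) (alpha - 1)"
    unfolding g_lam_def J_def Cp_def Gm_def by simp
  have "\<bar>g_lam b c gamma alpha delta lam \<tau>\<bar> \<le> Cp / Gm\<^sup>2 * \<bar>J\<bar> + \<bar>b\<bar> / Gm * pospow (\<tau> - delta) (alpha - 1)"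
  proof -
    have "\<bar>Cp / Gm\<^sup>2 * J - b / Gm * pospow (\<tau> - delta) (alpha - 1)\<bar> \<le> \<bar>Cp / Gm\<^sup>2 * J\<bar> + \<bar>b / Gm * pospow (\<tau> - delta) (alpha - 1)\<bar>"
      by (rule abs_triangle_ineq4)
    also have "\<dots> = Cp / Gm\<^sup>2 * \<bar>J\<bar> + \<bar>b\<bar> / Gm * pospow (\<tau> - delta) (alpha - 1)"
      using Gm_pos Cp_pos pospow_nonneg[of "\<tau> - delta" "alpha - 1"] by (simp add: abs_mult)
    finally show ?thesis unfolding gl .
  qed
  also have "\<dots> \<le> Cp / Gm\<^sup>2 * (Gm * lam powr (- alpha) * \<tau> powr (alpha - 1)) + \<bar>b\<bar> / Gm * pospow (\<tau> - delta) (alpha - 1)"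
    using J_bound[OF tau] Cp_pos Gm_pos unfolding J_def by (intro add_mono mult_left_mono) auto
  also have "\<dots> = G \<tau>"
    unfolding G_def A_def B_def using tau Gm_pos by (simp add: pospow_def power2_eq_square field_simps)
  finally show ?thesis .
qed

lemma K_bound:
  assumes "t \<noteq> s"
  shows "\<bar>K t s\<bar> \<le> Phi (t - s)"
proof (cases "s < t")
  case True
  then have "\<bar>K t s\<bar> = exp (- mu * (t - s)) * \<bar>g_lam b c gamma alpha delta lam (t - s)\<bar>"
    unfolding K_def k_lam_def by (simp add: abs_mult)
  also have "\<dots> \<le> exp (- mu * (t - s)) * G (t - s)"
    using g_bound[of "t - s"] True by (intro mult_left_mono) auto
  also have "\<dots> = Psi (t - s)" by (simp add: Psi_def)
  also have "\<dots> \<le> Phi (t - s)" unfolding Phi_def using Psi_nonneg by simp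
  finally show ?thesis .
next
  case False
  with assms have st: "t < s" by simp
  have "\<bar>K t s\<bar> = exp (- mu * (t - s)) * exp (- lam * (s - t)) * \<bar>g_lam b c gamma alpha delta lam (s - t)\<bar>"
    unfolding K_def k_lam_def using st by (simp add: abs_mult)
  also have "\<dots> \<le> exp (- mu * (s - t)) * G (s - t)"
  proof -
    have "exp (- mu * (t - s)) * exp (- lam * (s - t)) = exp ((mu - lam) * (s - t))"
      by (simp add: exp_add[symmetric] algebra_simps)
    also have "\<dots> \<le> exp (- mu * (s - t))"
      using lam st by (subst exp_le_cancel_iff) (intro mult_right_mono, auto)
    finally have e: "exp (- mu * (t - s)) * exp (- lam * (s - t)) \<le> exp (- mu * (s - t))" .
    show ?thesis
      using g_bound[of "s - t"] st G_nonneg[of "s - t"]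
      by (intro mult_mono e) auto
  qed
  also have "\<dots> = Psi (- (t - s))" by (simp add: Psi_def)
  also have "\<dots> \<le> Phi (t - s)" unfolding Phi_def using Psi_nonneg by simp
  finally show ?thesis .
qed

lemma K_kmeas: "kmeas K"
  unfolding kmeas_def K_def k_lam_def by measurable

lemma Psi_int: "(\<integral>\<^sup>+x. ennreal (Psi x) \<partial>lborel) = ennreal (q / 2)"
proof -
  have "(\<integral>\<^sup>+x. ennreal (Psi x) \<partial>lborel) = (\<integral>\<^sup>+x. ennreal A * ennreal (exp (- mu * x) * pospow (x - 0) (alpha - 1)) + ennreal B * ennreal (exp (- mu * x) * pospow (x - delta) (alpha - 1)) \<partial>lborel)"
    using A_nonneg B_nonneg
    by (intro nn_integral_cong) (simp add: Psi_def G_def ennreal_mult[symmetric] ennreal_plus[symmetric] pospow_nonneg algebra_simps del: ennreal_plus)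
  also have "\<dots> = ennreal A * (\<integral>\<^sup>+x. ennreal (exp (- mu * x) * pospow (x - 0) (alpha - 1)) \<partial>lborel) + ennreal B * (\<integral>\<^sup>+x. ennreal (exp (- mu * x) * pospow (x - delta) (alpha - 1)) \<partial>lborel)"
    by (subst nn_integral_add) (auto simp: nn_integral_cmult)
  also have "\<dots> = ennreal A * ennreal (exp (- mu * 0) * Gamma alpha * mu powr (- alpha)) + ennreal B * ennreal (exp (- mu * delta) * Gamma alpha * mu powr (- alpha))"
    by (simp only: Gamma_shift[OF mu alpha_pos order.refl] Gamma_shift[OF mu alpha_pos d])
  also have "\<dots> = ennreal (A * (exp (- mu * 0) * Gamma alpha * mu powr (- alpha)) + B * (exp (- mu * delta) * Gamma alpha * mu powr (- alpha)))"
    using A_nonneg B_nonneg Gm_pos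
    by (subst ennreal_plus) (auto simp: ennreal_mult Gm_def)
  also have "A * (exp (- mu * 0) * Gamma alpha * mu powr (- alpha)) + B * (exp (- mu * delta) * Gamma alpha * mu powr (- alpha)) = q / 2"
    unfolding A_def B_def q_def using Gm_pos by (simp add: Gm_def field_simps)
  finally show ?thesis .
qed

lemma refl_int: "(\<integral>\<^sup>+x. f (- x) \<partial>lborel) = (\<integral>\<^sup>+x. f x \<partial>lborel)" if [measurable]: "f \<in> borel_measurable borel" for f :: "real \<Rightarrow> ennreal"
  using nn_integral_real_affine[of f "-1" 0] by simp

lemma Phi_int: "(\<integral>\<^sup>+x. ennreal (Phi x) \<partial>lborel) = ennreal q"
proof -
  have "(\<integral>\<^sup>+x. ennreal (Phi x) \<partial>lborel) = (\<integral>\<^sup>+x. ennreal (Psi x) + ennreal (Psi (- x)) \<partial>lborel)"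
    using Psi_nonneg by (intro nn_integral_cong) (simp add: Phi_def ennreal_plus)
  also have "\<dots> = (\<integral>\<^sup>+x. ennreal (Psi x) \<partial>lborel) + (\<integral>\<^sup>+x. ennreal (Psi (- x)) \<partial>lborel)"
    by (rule nn_integral_add) auto
  also have "(\<integral>\<^sup>+x. ennreal (Psi (- x)) \<partial>lborel) = (\<integral>\<^sup>+x. ennreal (Psi x) \<partial>lborel)"
    by (rule refl_int[of "\<lambda>x. ennreal (Psi x)"]) measurable
  finally show ?thesis using Psi_int q_nonneg by (simp add: ennreal_plus[symmetric] del: ennreal_plus)
qed

lemma sq_sum_le': "(x + y)\<^sup>2 \<le> 2 * x\<^sup>2 + 2 * (y::real)\<^sup>2"
proof -
  have "0 \<le> (x - y)\<^sup>2" by simp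
  then show ?thesis by (simp add: power2_eq_square algebra_simps)
qed

lemma pospow_sq: "(pospow y (alpha - 1))\<^sup>2 = pospow y ((2 * alpha - 1) - 1)"
  by (simp add: pospow_def power2_eq_square powr_add[symmetric] algebra_simps)

lemma Psi_sq_fin: "(\<integral>\<^sup>+x. ennreal ((Psi x)\<^sup>2) \<partial>lborel) < \<infinity>"
proof -
  have a': "2 * alpha - 1 > 0" using a1 by simp
  have m': "2 * mu > 0" using mu by simp
  have "(\<integral>\<^sup>+x. ennreal ((Psi x)\<^sup>2) \<partial>lborel) \<le> (\<integral>\<^sup>+x. ennreal (2 * A\<^sup>2) * ennreal (exp (- (2 * mu) * x) * pospow (x - 0) ((2 * alpha - 1) - 1))
      + ennreal (2 * B\<^sup>2) * ennreal (exp (- (2 * mu) * x) * pospow (x - delta) ((2 * alpha - 1) - 1)) \<partial>lborel)"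
  proof (rule nn_integral_mono)
    fix x :: real
    have "(Psi x)\<^sup>2 = (exp (- mu * x))\<^sup>2 * (A * pospow x (alpha - 1) + B * pospow (x - delta) (alpha - 1))\<^sup>2"
      by (simp add: Psi_def G_def power_mult_distrib)
    also have "\<dots> \<le> (exp (- mu * x))\<^sup>2 * (2 * (A * pospow x (alpha - 1))\<^sup>2 + 2 * (B * pospow (x - delta) (alpha - 1))\<^sup>2)"
      by (intro mult_left_mono sq_sum_le') auto
    also have "\<dots> = 2 * A\<^sup>2 * (exp (- (2 * mu) * x) * pospow (x - 0) ((2 * alpha - 1) - 1))
      + 2 * B\<^sup>2 * (exp (- (2 * mu) * x) * pospow (x - delta) ((2 * alpha - 1) - 1))"
    proof -
      have "(exp (- mu * x))\<^sup>2 = exp (- (2 * mu) * x)" by (simp add: power2_eq_square exp_add[symmetric])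
      then show ?thesis by (simp add: power_mult_distrib pospow_sq algebra_simps)
    qed
    finally have "(Psi x)\<^sup>2 \<le> \<dots>" .
    then show "ennreal ((Psi x)\<^sup>2) \<le> ennreal (2 * A\<^sup>2) * ennreal (exp (- (2 * mu) * x) * pospow (x - 0) ((2 * alpha - 1) - 1))
      + ennreal (2 * B\<^sup>2) * ennreal (exp (- (2 * mu) * x) * pospow (x - delta) ((2 * alpha - 1) - 1))"
      by (subst (1 2) ennreal_mult[symmetric]) (auto simp: pospow_nonneg ennreal_plus[symmetric] simp del: ennreal_plus intro!: ennreal_leI)
  qed
  also have "\<dots> = ennreal (2 * A\<^sup>2) * (\<integral>\<^sup>+x. ennreal (exp (- (2 * mu) * x) * pospow (x - 0) ((2 * alpha - 1) - 1)) \<partial>lborel)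
      + ennreal (2 * B\<^sup>2) * (\<integral>\<^sup>+x. ennreal (exp (- (2 * mu) * x) * pospow (x - delta) ((2 * alpha - 1) - 1)) \<partial>lborel)"
    by (subst nn_integral_add) (auto simp: nn_integral_cmult)
  also have "\<dots> < \<infinity>"
    by (simp only: Gamma_shift[OF m' a' order.refl] Gamma_shift[OF m' a' d]) (simp add: ennreal_mult_less_top)
  finally show ?thesis .
qed

lemma Phi_sq_fin: "(\<integral>\<^sup>+x. ennreal ((Phi x)\<^sup>2) \<partial>lborel) < \<infinity>"
proof -
  have "(\<integral>\<^sup>+x. ennreal ((Phi x)\<^sup>2) \<partial>lborel) \<le> (\<integral>\<^sup>+x. ennreal 2 * ennreal ((Psi x)\<^sup>2) + ennreal 2 * ennreal ((Psi (- x))\<^sup>2) \<partial>lborel)"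
  proof (rule nn_integral_mono)
    fix x
    have "ennreal ((Phi x)\<^sup>2) \<le> ennreal (2 * (Psi x)\<^sup>2 + 2 * (Psi (- x))\<^sup>2)"
      unfolding Phi_def by (rule ennreal_leI) (rule sq_sum_le')
    also have "\<dots> = ennreal 2 * ennreal ((Psi x)\<^sup>2) + ennreal 2 * ennreal ((Psi (- x))\<^sup>2)"
      by (subst ennreal_plus) (auto simp: ennreal_mult)
    finally show "ennreal ((Phi x)\<^sup>2) \<le> ennreal 2 * ennreal ((Psi x)\<^sup>2) + ennreal 2 * ennreal ((Psi (- x))\<^sup>2)" .
  qed
  also have "\<dots> = ennreal 2 * (\<integral>\<^sup>+x. ennreal ((Psi x)\<^sup>2) \<partial>lborel) + ennreal 2 * (\<integral>\<^sup>+x. ennreal ((Psi (- x))\<^sup>2) \<partial>lborel)"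
    by (subst nn_integral_add) (auto simp: nn_integral_cmult)
  also have "(\<integral>\<^sup>+x. ennreal ((Psi (- x))\<^sup>2) \<partial>lborel) = (\<integral>\<^sup>+x. ennreal ((Psi x)\<^sup>2) \<partial>lborel)"
    by (rule refl_int[of "\<lambda>x. ennreal ((Psi x)\<^sup>2)"]) measurable
  finally have le: "(\<integral>\<^sup>+x. ennreal ((Phi x)\<^sup>2) \<partial>lborel) \<le> ennreal 2 * (\<integral>\<^sup>+x. ennreal ((Psi x)\<^sup>2) \<partial>lborel) + ennreal 2 * (\<integral>\<^sup>+x. ennreal ((Psi x)\<^sup>2) \<partial>lborel)" .
  have "ennreal 2 * (\<integral>\<^sup>+x. ennreal ((Psi x)\<^sup>2) \<partial>lborel) < \<infinity>"
    using Psi_sq_fin by (simp add: ennreal_mult_less_top)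
  then have "ennreal 2 * (\<integral>\<^sup>+x. ennreal ((Psi x)\<^sup>2) \<partial>lborel) + ennreal 2 * (\<integral>\<^sup>+x. ennreal ((Psi x)\<^sup>2) \<partial>lborel) < \<infinity>"
    by simp
  with le show ?thesis by (rule le_less_trans)
qed

lemma row_gen:
  fixes F :: "real \<Rightarrow> ennreal"
  assumes H[measurable]: "H \<in> borel_measurable borel" and le: "\<And>\<theta>. \<theta> \<noteq> t \<Longrightarrow> F \<theta> \<le> H (t - \<theta>)"
  shows "(\<integral>\<^sup>+\<theta>. F \<theta> \<partial>M0) \<le> (\<integral>\<^sup>+x. H x \<partial>lborel)"
proof -
  have "(\<integral>\<^sup>+\<theta>. F \<theta> \<partial>M0) = (\<integral>\<^sup>+\<theta>. F \<theta> * indicator {0..} \<theta> \<partial>lborel)" by (rule nn_M0)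
  also have "\<dots> \<le> (\<integral>\<^sup>+\<theta>. H (t + (-1) * \<theta>) \<partial>lborel)"
    using AE_lborel_singleton[of t] by (rule nn_integral_mono_AE[OF eventually_mono]) (auto simp: indicator_def le)
  also have "\<dots> = (\<integral>\<^sup>+x. H x \<partial>lborel)"
    using nn_integral_real_affine[OF H, of "-1" t] by simp
  finally show ?thesis .
qed

lemma col_gen:
  fixes F :: "real \<Rightarrow> ennreal"
  assumes H[measurable]: "H \<in> borel_measurable borel" and le: "\<And>\<theta>. \<theta> \<noteq> s \<Longrightarrow> F \<theta> \<le> H (\<theta> - s)"
  shows "(\<integral>\<^sup>+\<theta>. F \<theta> \<partial>M0) \<le> (\<integral>\<^sup>+x. H x \<partial>lborel)"
proof -
  have "(\<integral>\<^sup>+\<theta>. F \<theta> \<partial>M0) = (\<integral>\<^sup>+\<theta>. F \<theta> * indicator {0..} \<theta> \<partial>lborel)" by (rule nn_M0)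
  also have "\<dots> \<le> (\<integral>\<^sup>+\<theta>. H (- s + 1 * \<theta>) \<partial>lborel)"
    using AE_lborel_singleton[of s] by (rule nn_integral_mono_AE[OF eventually_mono]) (auto simp: indicator_def le)
  also have "\<dots> = (\<integral>\<^sup>+x. H x \<partial>lborel)"
    using nn_integral_real_affine[OF H, of 1 "- s"] by simp
  finally show ?thesis .
qed

definition "P = enn2real (\<integral>\<^sup>+x. ennreal ((Phi x)\<^sup>2) \<partial>lborel)"

lemma P_eq: "(\<integral>\<^sup>+x. ennreal ((Phi x)\<^sup>2) \<partial>lborel) = ennreal P"
  unfolding P_def using Phi_sq_fin by (simp add: ennreal_enn2real less_top)

lemma P_nonneg: "P \<ge> 0" unfolding P_def by simp

lemma K_sq_bound: "t \<noteq> s \<Longrightarrow> (K t s)\<^sup>2 \<le> (Phi (t - s))\<^sup>2"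
  using K_bound[of t s] by (metis abs_ge_zero power2_abs power_mono)

lemma kern_K: "q < 1 \<Longrightarrow> kern K q P"
proof
  assume "q < 1" then show "q < 1" .
  show "kmeas K" by (rule K_kmeas)
  show "0 \<le> q" by (rule q_nonneg)
  show "0 \<le> P" by (rule P_nonneg)
  fix t :: real
  have b1: "ennreal \<bar>K t \<theta>\<bar> \<le> ennreal (Phi (t - \<theta>))" if "\<theta> \<noteq> t" for \<theta>
    using K_bound[of t \<theta>] that by (intro ennreal_leI) auto
  have b2: "ennreal ((K t \<theta>)\<^sup>2) \<le> ennreal ((Phi (t - \<theta>))\<^sup>2)" if "\<theta> \<noteq> t" for \<theta>
    using K_sq_bound[of t \<theta>] that by (intro ennreal_leI) auto
  show "(\<integral>\<^sup>+\<theta>. ennreal \<bar>K t \<theta>\<bar> \<partial>M0) \<le> ennreal q"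
    using row_gen[where H="\<lambda>x. ennreal (Phi x)" and F="\<lambda>\<theta>. ennreal \<bar>K t \<theta>\<bar>" and t=t, OF _ b1] Phi_int by simp
  show "(\<integral>\<^sup>+\<theta>. ennreal ((K t \<theta>)\<^sup>2) \<partial>M0) \<le> ennreal P"
    using row_gen[where H="\<lambda>x. ennreal ((Phi x)\<^sup>2)" and F="\<lambda>\<theta>. ennreal ((K t \<theta>)\<^sup>2)" and t=t, OF _ b2] P_eq by simp
next
  fix s :: real
  have b1: "ennreal \<bar>K \<theta> s\<bar> \<le> ennreal (Phi (\<theta> - s))" if "\<theta> \<noteq> s" for \<theta>
    using K_bound[of \<theta> s] that by (intro ennreal_leI) auto
  have b2: "ennreal ((K \<theta> s)\<^sup>2) \<le> ennreal ((Phi (\<theta> - s))\<^sup>2)" if "\<theta> \<noteq> s" for \<theta>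
    using K_sq_bound[of \<theta> s] that by (intro ennreal_leI) auto
  show "(\<integral>\<^sup>+\<theta>. ennreal \<bar>K \<theta> s\<bar> \<partial>M0) \<le> ennreal q"
    using col_gen[where H="\<lambda>x. ennreal (Phi x)" and F="\<lambda>\<theta>. ennreal \<bar>K \<theta> s\<bar>" and s=s, OF _ b1] Phi_int by simp
  show "(\<integral>\<^sup>+\<theta>. ennreal ((K \<theta> s)\<^sup>2) \<partial>M0) \<le> ennreal P"
    using col_gen[where H="\<lambda>x. ennreal ((Phi x)\<^sup>2)" and F="\<lambda>\<theta>. ennreal ((K \<theta> s)\<^sup>2)" and s=s, OF _ b2] P_eq by simp
qed

end

lemma rho_pos:
  fixes b alpha delta :: real
  assumes b: "b \<noteq> 0" and a: "alpha > 0" and d: "delta \<ge> 0"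
  shows "rho_alpha b alpha delta > 0"
proof -
  define h where "h r = \<bar>b\<bar> * (1 + exp (- r * delta)) * r powr (- alpha)" for r
  have mono: "h r' < h r" if "0 < r" "r < r'" for r r'
  proof -
    have "exp (- r' * delta) \<le> exp (- r * delta)" using that d by (simp add: mult_right_mono)
    then have e: "1 + exp (- r' * delta) \<le> 1 + exp (- r * delta)" by simp
    have p: "r' powr (- alpha) < r powr (- alpha)" using that a by (intro powr_less_mono2_neg) auto
    have "h r' \<le> \<bar>b\<bar> * (1 + exp (- r * delta)) * r' powr (- alpha)"
      unfolding h_def using e b by (intro mult_right_mono mult_left_mono) auto
    also have "\<dots> < \<bar>b\<bar> * (1 + exp (- r * delta)) * r powr (- alpha)"
      using p b by (intro mult_strict_left_mono) (auto simp: add_pos_pos)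
    finally show ?thesis unfolding h_def .
  qed
  define r1 where "r1 = \<bar>b\<bar> powr (1 / alpha)"
  define r2 where "r2 = (2 * \<bar>b\<bar>) powr (1 / alpha)"
  have r1: "r1 > 0" unfolding r1_def using b by simp
  have r12: "r1 \<le> r2" unfolding r1_def r2_def using b a by (intro powr_mono2) auto
  have p1: "r1 powr (- alpha) = 1 / \<bar>b\<bar>" unfolding r1_def using a b
    by (simp add: powr_powr powr_minus_divide)
  have p2: "r2 powr (- alpha) = 1 / (2 * \<bar>b\<bar>)" unfolding r2_def using a b
    by (simp add: powr_powr powr_minus_divide)
  have h1: "1 \<le> h r1" unfolding h_def p1 using b by simp
  have h2: "h r2 \<le> 1" unfolding h_def p2 using b
  proof -
    have "exp (- r2 * delta) \<le> 1" using r1 r12 d by simp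
    moreover have "\<bar>b\<bar> * (1 + exp (- r2 * delta)) * (1 / (2 * \<bar>b\<bar>)) = (1 + exp (- r2 * delta)) / 2"
      using b by simp
    ultimately show "\<bar>b\<bar> * (1 + exp (- r2 * delta)) * (1 / (2 * \<bar>b\<bar>)) \<le> 1" by simp
  qed
  have cont: "continuous_on {r1..r2} h"
    unfolding h_def using r1 by (intro continuous_intros) auto
  obtain x where x: "r1 \<le> x" "x \<le> r2" "h x = 1" using IVT2'[OF h2 h1 r12 cont] by blast
  have ex: "\<exists>!r. r > 0 \<and> \<bar>b\<bar> * (1 + exp (- r * delta)) * r powr (- alpha) = 1"
  proof (rule ex1I[of _ x])
    show "x > 0 \<and> \<bar>b\<bar> * (1 + exp (- x * delta)) * x powr (- alpha) = 1" using x r1 unfolding h_def by simp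
  next
    fix y assume y: "y > 0 \<and> \<bar>b\<bar> * (1 + exp (- y * delta)) * y powr (- alpha) = 1"
    show "y = x"
    proof (rule ccontr)
      assume "y \<noteq> x"
      then have "y < x \<or> x < y" by auto
      then show False using mono[of y x] mono[of x y] x r1 y unfolding h_def by auto
    qed
  qed
  show ?thesis unfolding rho_alpha_def using theI'[OF ex] b by simp
qed

lemma q_lt_1:
  fixes b c gamma alpha delta lam rt mu :: real
  assumes "c \<noteq> 0" and "gamma > 0" and "1/2 < alpha" and "alpha \<le> 1"
    and d: "delta \<ge> 0" and "lam > 0"
    and rt: "rt > 0"
    and eq: "((c^2 * gamma + b^2 * exp (- 2 * rt * delta)) * (2 * rt) powr (- alpha)
            + \<bar>b\<bar> * (1 + exp (- rt * delta))) * rt powr (- alpha) = 1/2"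
    and mu: "mu > rt" and lam: "lam \<ge> 2 * mu"
  shows "2 * (((c\<^sup>2 * gamma + b\<^sup>2 * exp (- lam * delta)) * lam powr (- alpha) + \<bar>b\<bar> * exp (- mu * delta)) * mu powr (- alpha)) < 1"
proof -
  define C1 where "C1 = c\<^sup>2 * gamma + b\<^sup>2 * exp (- lam * delta)"
  define C2 where "C2 = c\<^sup>2 * gamma + b\<^sup>2 * exp (- 2 * rt * delta)"
  have a: "- alpha < 0" using assms(3) by simp
  have C1p: "C1 > 0" unfolding C1_def using assms(1,2) by (simp add: add_pos_nonneg)
  have C12: "C1 \<le> C2" unfolding C1_def C2_def using lam mu rt d
    by (intro add_left_mono mult_left_mono) (auto intro!: mult_right_mono)
  have l1: "lam powr (- alpha) < (2 * rt) powr (- alpha)" using lam mu rt a by (intro powr_less_mono2_neg) auto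
  have m1: "mu powr (- alpha) < rt powr (- alpha)" using mu rt a by (intro powr_less_mono2_neg) auto
  have "C1 * lam powr (- alpha) * mu powr (- alpha) \<le> C2 * lam powr (- alpha) * mu powr (- alpha)"
    using C12 by (intro mult_right_mono) auto
  also have "\<dots> < C2 * (2 * rt) powr (- alpha) * rt powr (- alpha)"
    using C1p C12 l1 m1 mu rt by (intro mult_strict_mono mult_strict_left_mono) auto
  finally have T1: "C1 * lam powr (- alpha) * mu powr (- alpha) < C2 * (2 * rt) powr (- alpha) * rt powr (- alpha)" .
  have "\<bar>b\<bar> * exp (- mu * delta) * mu powr (- alpha) \<le> \<bar>b\<bar> * (1 + exp (- rt * delta)) * rt powr (- alpha)"
  proof -
    have "- mu * delta \<le> 0" using mu rt d by simp
    then have "exp (- mu * delta) \<le> 1" by simp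
    moreover have "0 < exp (- rt * delta)" by simp
    ultimately have "exp (- mu * delta) \<le> 1 + exp (- rt * delta)" by linarith
    then show ?thesis using m1 by (intro mult_mono mult_left_mono) auto
  qed
  note T2 = this
  have eq': "C2 * (2 * rt) powr (- alpha) * rt powr (- alpha) + \<bar>b\<bar> * (1 + exp (- rt * delta)) * rt powr (- alpha) = 1/2"
    using eq unfolding C2_def by (simp only: distrib_right)
  have "2 * ((C1 * lam powr (- alpha) + \<bar>b\<bar> * exp (- mu * delta)) * mu powr (- alpha))
      = 2 * (C1 * lam powr (- alpha) * mu powr (- alpha) + \<bar>b\<bar> * exp (- mu * delta) * mu powr (- alpha))"
    by (simp only: distrib_right)
  also have "\<dots> < 1"
  proof -
    have "C1 * lam powr (- alpha) * mu powr (- alpha) + \<bar>b\<bar> * exp (- mu * delta) * mu powr (- alpha)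
      < C2 * (2 * rt) powr (- alpha) * rt powr (- alpha) + \<bar>b\<bar> * (1 + exp (- rt * delta)) * rt powr (- alpha)"
      by (rule add_less_le_mono[OF T1 T2])
    then show ?thesis unfolding eq' by simp
  qed
  finally show ?thesis unfolding C1_def .
qed

lemma w_L2: "(\<integral>\<^sup>+t. ennreal ((exp (- t))\<^sup>2) \<partial>M0) < \<infinity>"
proof -
  have "(\<integral>\<^sup>+t. ennreal ((exp (- t))\<^sup>2) \<partial>M0) = (\<integral>\<^sup>+t. ennreal ((exp (- t))\<^sup>2) * indicator {0..} t \<partial>lborel)"
    by (rule nn_M0)
  also have "\<dots> \<le> (\<integral>\<^sup>+t. ennreal (exp (- 2 * t) * pospow (t - 0) (1 - 1)) \<partial>lborel)"
  proof (rule nn_integral_mono_AE)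
    show "AE t in lborel. ennreal ((exp (- t))\<^sup>2) * indicator {0..} t \<le> ennreal (exp (- 2 * t) * pospow (t - 0) (1 - 1))"
      using AE_lborel_singleton[of 0]
    proof eventually_elim
      case (elim t)
      show ?case
      proof (cases "t > 0")
        case True
        have "(exp (- t))\<^sup>2 = exp (- 2 * t)" by (simp add: power2_eq_square exp_add[symmetric])
        then show ?thesis using True by (simp add: pospow_def indicator_def)
      next
        case False
        then show ?thesis using elim by (simp add: indicator_def)
      qed
    qed
  qed
  also have "\<dots> = ennreal (exp (- 2 * 0) * Gamma 1 * 2 powr (- 1))"
    by (rule Gamma_shift) auto
  also have "\<dots> < \<infinity>" using ennreal_less_top[of "exp (- 2 * 0) * Gamma 1 * 2 powr - 1"] by (simp only: infinity_ennreal_def)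
  finally show ?thesis .
qed

lemma Lpw_iff: "Lpw 2 (- mu) a \<longleftrightarrow> (\<lambda>t. exp (- mu * t) * a t) \<in> borel_measurable M0 \<and> (\<integral>\<^sup>+t. ennreal ((exp (- mu * t) * a t)\<^sup>2) \<partial>M0) < \<infinity>"
proof -
  have pw: "exp (2 * - mu * t) * \<bar>a t\<bar> powr 2 = (exp (- mu * t) * a t)\<^sup>2" for t
    by (simp add: abs_powr_2 power_mult_distrib power2_eq_square exp_add[symmetric])
  have m: "a \<in> borel_measurable M0 \<longleftrightarrow> (\<lambda>t. exp (- mu * t) * a t) \<in> borel_measurable M0"
  proof
    assume [measurable]: "a \<in> borel_measurable M0"
    have [measurable]: "(\<lambda>t::real. t) \<in> borel_measurable M0" by (rule M0_id)
    show "(\<lambda>t. exp (- mu * t) * a t) \<in> borel_measurable M0" by measurable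
  next
    assume [measurable]: "(\<lambda>t. exp (- mu * t) * a t) \<in> borel_measurable M0"
    have [measurable]: "(\<lambda>t::real. t) \<in> borel_measurable M0" by (rule M0_id)
    have "(\<lambda>t. exp (mu * t) * (exp (- mu * t) * a t)) \<in> borel_measurable M0" by measurable
    moreover have "(\<lambda>t. exp (mu * t) * (exp (- mu * t) * a t)) = a"
      by (rule ext) (simp add: mult.assoc[symmetric] exp_add[symmetric])
    ultimately show "a \<in> borel_measurable M0" by simp
  qed
  show ?thesis unfolding Lpw_def pw m ..
qed

lemma sq_sum_le_g: "(x + y)\<^sup>2 \<le> 2 * x\<^sup>2 + 2 * (y::real)\<^sup>2"
proof -
  have "0 \<le> (x - y)\<^sup>2" by simp
  then show ?thesis by (simp add: power2_eq_square algebra_simps)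
qed

lemma L2_diff:
  fixes u v :: "real \<Rightarrow> real"
  assumes [measurable]: "u \<in> borel_measurable M" "v \<in> borel_measurable M"
    and fu: "(\<integral>\<^sup>+t. ennreal ((u t)\<^sup>2) \<partial>M) < \<infinity>" and fv: "(\<integral>\<^sup>+t. ennreal ((v t)\<^sup>2) \<partial>M) < \<infinity>"
  shows "(\<integral>\<^sup>+t. ennreal ((u t - v t)\<^sup>2) \<partial>M) < \<infinity>"
proof -
  have "(\<integral>\<^sup>+t. ennreal ((u t - v t)\<^sup>2) \<partial>M) \<le> (\<integral>\<^sup>+t. ennreal 2 * ennreal ((u t)\<^sup>2) + ennreal 2 * ennreal ((v t)\<^sup>2) \<partial>M)"
  proof (rule nn_integral_mono)
    fix t
    have "ennreal ((u t - v t)\<^sup>2) \<le> ennreal (2 * (u t)\<^sup>2 + 2 * (- v t)\<^sup>2)"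
      by (rule ennreal_leI) (use sq_sum_le_g[of "u t" "- v t"] in simp)
    also have "\<dots> = ennreal 2 * ennreal ((u t)\<^sup>2) + ennreal 2 * ennreal ((v t)\<^sup>2)"
      by (subst ennreal_plus) (auto simp: ennreal_mult)
    finally show "ennreal ((u t - v t)\<^sup>2) \<le> ennreal 2 * ennreal ((u t)\<^sup>2) + ennreal 2 * ennreal ((v t)\<^sup>2)" .
  qed
  also have "\<dots> = ennreal 2 * (\<integral>\<^sup>+t. ennreal ((u t)\<^sup>2) \<partial>M) + ennreal 2 * (\<integral>\<^sup>+t. ennreal ((v t)\<^sup>2) \<partial>M)"
    by (subst nn_integral_add) (auto simp: nn_integral_cmult)
  also have "\<dots> < \<infinity>" using fu fv by (simp add: ennreal_mult_less_top)
  finally show ?thesis .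
qed

lemma L2_bound_obtain:
  assumes "(\<integral>\<^sup>+t. ennreal ((u t)\<^sup>2) \<partial>M) < \<infinity>"
  obtains Ub where "(\<integral>\<^sup>+t. ennreal ((u t)\<^sup>2) \<partial>M) \<le> ennreal Ub" "Ub \<ge> 0"
proof -
  obtain U where "(\<integral>\<^sup>+t. ennreal ((u t)\<^sup>2) \<partial>M) = ennreal U" "U \<ge> 0"
    using assms by (cases "(\<integral>\<^sup>+t. ennreal ((u t)\<^sup>2) \<partial>M)") auto
  then show ?thesis using that by auto
qed

theorem lemma5p9:
  fixes b c gamma alpha delta lam rt mu :: real
  assumes "c \<noteq> 0" and "gamma > 0" and "1/2 < alpha" and "alpha \<le> 1"
    and "delta \<ge> 0" and "lam > 0"
    and "rt > rho_alpha b alpha delta"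
    and "((c^2 * gamma + b^2 * exp (- 2 * rt * delta)) * (2 * rt) powr (- alpha)
            + \<bar>b\<bar> * (1 + exp (- rt * delta))) * rt powr (- alpha) = 1/2"
    and "mu > rt" and "lam \<ge> 2 * mu"
  shows "fredholm_L2w (- mu) (k_lam b c gamma alpha delta lam)
    \<and> (\<exists>r. fredholm_resolvent_L2w (- mu) (k_lam b c gamma alpha delta lam) r
        \<and> (\<forall>r'. fredholm_resolvent_L2w (- mu) (k_lam b c gamma alpha delta lam) r'
               \<longrightarrow> (AE z in M0 \<Otimes>\<^sub>M M0. r' (fst z) (snd z) = r (fst z) (snd z)))
        \<and> (\<forall>a. Lpw 2 (- mu) a \<longrightarrow>
             (\<exists>x. Lpw 2 (- mu) x \<and> solves_fredholm (k_lam b c gamma alpha delta lam) a x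
                \<and> (\<forall>y. Lpw 2 (- mu) y \<and> solves_fredholm (k_lam b c gamma alpha delta lam) a y
                        \<longrightarrow> (AE t in M0. y t = x t))
                \<and> (AE t in M0. x t = a t - (\<integral>s. r t s * a s \<partial>M0)))))"
proof -
  have rho0: "rho_alpha b alpha delta \<ge> 0"
  proof (cases "b = 0")
    case True then show ?thesis by (simp add: rho_alpha_def)
  next
    case False then show ?thesis using rho_pos[OF False _ assms(5)] assms(3) by (simp add: less_imp_le)
  qed
  have rt0: "rt > 0" using assms(7) rho0 by simp
  have mu0: "mu > 0" using rt0 assms(9) by simp
  interpret S: spec b c gamma alpha delta lam mu
    using assms mu0 by unfold_locales auto
  have q1: "S.q < 1"
    unfolding S.q_def S.Cp_def by (rule q_lt_1[OF assms(1-6) rt0 assms(8-10)])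
  interpret KK: kern S.K S.q S.P by (rule S.kern_K[OF q1])
  define k where "k = k_lam b c gamma alpha delta lam"
  have Kk: "k t s = exp (mu * (t - s)) * S.K t s" for t s
    unfolding k_def S.K_def by (simp add: mult.assoc[symmetric] exp_add[symmetric])
  have Kdef: "(\<lambda>t s. exp (- mu * (t - s)) * k t s) = S.K"
    unfolding k_def S.K_def by simp
  define r where "r t s = exp (mu * (t - s)) * KK.R t s" for t s
  have rdef: "(\<lambda>t s. exp (- mu * (t - s)) * r t s) = KK.R"
    unfolding r_def by (intro ext) (simp add: mult.assoc[symmetric] exp_add[symmetric])
  have eprod: "exp (mu * (t - \<theta>)) * exp (mu * (\<theta> - s)) = exp (mu * (t - s))" for t \<theta> s
    by (simp add: exp_add[symmetric] algebra_simps)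
  have eprod2: "exp (mu * (\<theta> - s)) * exp (mu * (t - \<theta>)) = exp (mu * (t - s))" for t \<theta> s
    by (simp add: exp_add[symmetric] algebra_simps)
  have P1: "fredholm_L2w (- mu) k"
    unfolding fredholm_L2w_def Kdef
    by (rule schur[OF S.K_kmeas KK.q0 KK.row1 KK.col1])
  have P2: "fredholm_resolvent_L2w (- mu) k r"
    unfolding fredholm_resolvent_L2w_def
  proof (intro conjI)
    show "fredholm_L2w (- mu) r"
      unfolding fredholm_L2w_def rdef
      by (rule schur[OF KK.R_meas KK.qR_nonneg KK.R_rowL1 KK.R_colL1])
    show "AE z in M0 \<Otimes>\<^sub>M M0. integrable M0 (\<lambda>\<theta>. k (fst z) \<theta> * r \<theta> (snd z)) \<and>
        integrable M0 (\<lambda>\<theta>. r (fst z) \<theta> * k \<theta> (snd z)) \<and>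
        r (fst z) (snd z) + (\<integral>\<theta>. k (fst z) \<theta> * r \<theta> (snd z) \<partial>M0) = k (fst z) (snd z) \<and>
        r (fst z) (snd z) + (\<integral>\<theta>. r (fst z) \<theta> * k \<theta> (snd z) \<partial>M0) = k (fst z) (snd z)"
    proof (rule AE_I2)
      fix z assume "z \<in> space (M0 \<Otimes>\<^sub>M M0)"
      then have t: "fst z \<ge> 0" and s: "snd z \<ge> 0" by (auto simp: space_pair_measure)
      define t' where "t' = fst z"
      define s' where "s' = snd z"
      have t': "t' \<ge> 0" and s': "s' \<ge> 0" using t s by (simp_all add: t'_def s'_def)
      have e1: "(\<lambda>\<theta>. k t' \<theta> * r \<theta> s') = (\<lambda>\<theta>. exp (mu * (t' - s')) * (S.K t' \<theta> * KK.R \<theta> s'))"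
        by (intro ext) (simp add: Kk r_def mult_ac eprod eprod2)
      have e2: "(\<lambda>\<theta>. r t' \<theta> * k \<theta> s') = (\<lambda>\<theta>. exp (mu * (t' - s')) * (KK.R t' \<theta> * S.K \<theta> s'))"
        by (intro ext) (simp add: Kk r_def mult_ac eprod eprod2)
      have i1: "integrable M0 (\<lambda>\<theta>. k t' \<theta> * r \<theta> s')"
        unfolding e1 by (intro integrable_mult_right KK.R_left(1)[OF t' s'])
      have i2: "integrable M0 (\<lambda>\<theta>. r t' \<theta> * k \<theta> s')"
        unfolding e2 by (intro integrable_mult_right KK.R_right(1)[OF t' s'])
      have j1: "(\<integral>\<theta>. k t' \<theta> * r \<theta> s' \<partial>M0) = exp (mu * (t' - s')) * (\<integral>\<theta>. S.K t' \<theta> * KK.R \<theta> s' \<partial>M0)"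
        by (simp only: e1 integral_mult_right_zero)
      have j2: "(\<integral>\<theta>. r t' \<theta> * k \<theta> s' \<partial>M0) = exp (mu * (t' - s')) * (\<integral>\<theta>. KK.R t' \<theta> * S.K \<theta> s' \<partial>M0)"
        by (simp only: e2 integral_mult_right_zero)
      have q1': "r t' s' + (\<integral>\<theta>. k t' \<theta> * r \<theta> s' \<partial>M0) = k t' s'"
        unfolding j1 using KK.R_left(2)[OF t' s'] by (simp add: r_def Kk distrib_left[symmetric])
      have q2': "r t' s' + (\<integral>\<theta>. r t' \<theta> * k \<theta> s' \<partial>M0) = k t' s'"
        unfolding j2 using KK.R_right(2)[OF t' s'] by (simp add: r_def Kk distrib_left[symmetric])
      show "integrable M0 (\<lambda>\<theta>. k (fst z) \<theta> * r \<theta> (snd z)) \<and>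
        integrable M0 (\<lambda>\<theta>. r (fst z) \<theta> * k \<theta> (snd z)) \<and>
        r (fst z) (snd z) + (\<integral>\<theta>. k (fst z) \<theta> * r \<theta> (snd z) \<partial>M0) = k (fst z) (snd z) \<and>
        r (fst z) (snd z) + (\<integral>\<theta>. r (fst z) \<theta> * k \<theta> (snd z) \<partial>M0) = k (fst z) (snd z)"
        using i1 i2 q1' q2' unfolding t'_def s'_def by blast
    qed
  qed
  have P3: "AE z in M0 \<Otimes>\<^sub>M M0. r' (fst z) (snd z) = r (fst z) (snd z)"
    if R'res: "fredholm_resolvent_L2w (- mu) k r'" for r'
  proof -
    define R' where "R' t s = exp (- mu * (t - s)) * r' t s" for t s
    have F': "fredholm_L2 R'" using R'res unfolding fredholm_resolvent_L2w_def fredholm_L2w_def R'_def by simp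
    have e: "S.K t \<theta> * R' \<theta> s = exp (- mu * (t - s)) * (k t \<theta> * r' \<theta> s)" for t \<theta> s
      unfolding R'_def S.K_def k_def by (simp add: mult_ac exp_add[symmetric] algebra_simps)
    have hyp: "AE z in M0 \<Otimes>\<^sub>M M0. integrable M0 (\<lambda>\<theta>. S.K (fst z) \<theta> * R' \<theta> (snd z)) \<and>
        R' (fst z) (snd z) + (\<integral>\<theta>. S.K (fst z) \<theta> * R' \<theta> (snd z) \<partial>M0) = S.K (fst z) (snd z)"
      using R'res[unfolded fredholm_resolvent_L2w_def, THEN conjunct2]
    proof eventually_elim
      case (elim z)
      then show ?case
        unfolding e integral_mult_right_zero
        by (auto simp: R'_def S.K_def k_def distrib_left[symmetric])
    qed
    have wm: "(\<lambda>t. exp (- t)) \<in> borel_measurable M0"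
    proof -
      have [measurable]: "(\<lambda>t::real. t) \<in> borel_measurable M0" by (rule M0_id)
      show ?thesis by measurable
    qed
    have "AE z in M0 \<Otimes>\<^sub>M M0. R' (fst z) (snd z) = KK.R (fst z) (snd z)"
      by (rule KK.resolvent_unique[OF F' hyp wm _ _ w_L2]) auto
    then show ?thesis
    proof eventually_elim
      case (elim z)
      have "exp (mu * (fst z - snd z)) * KK.R (fst z) (snd z) = exp (mu * (fst z - snd z)) * (exp (- mu * (fst z - snd z)) * r' (fst z) (snd z))"
        using elim by (simp add: R'_def)
      also have "\<dots> = r' (fst z) (snd z)" by (simp add: mult.assoc[symmetric] exp_add[symmetric])
      finally show ?case by (simp add: r_def)
    qed
  qed
  have P4: "\<exists>x. Lpw 2 (- mu) x \<and> solves_fredholm k a x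
                \<and> (\<forall>y. Lpw 2 (- mu) y \<and> solves_fredholm k a y \<longrightarrow> (AE t in M0. y t = x t))
                \<and> (AE t in M0. x t = a t - (\<integral>s. r t s * a s \<partial>M0))"
    if La: "Lpw 2 (- mu) a" for a
  proof -
    have [measurable]: "(\<lambda>t::real. t) \<in> borel_measurable M0" by (rule M0_id)
    define f where "f t = exp (- mu * t) * a t" for t
    have fm[measurable]: "f \<in> borel_measurable M0" and fin: "(\<integral>\<^sup>+t. ennreal ((f t)\<^sup>2) \<partial>M0) < \<infinity>"
      using La unfolding Lpw_iff f_def by auto
    obtain Fn where fn: "(\<integral>\<^sup>+t. ennreal ((f t)\<^sup>2) \<partial>M0) \<le> ennreal Fn" "Fn \<ge> 0"
      using L2_bound_obtain[OF fin] by blast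
    define X where "X t = f t - (\<integral>s. KK.R t s * f s \<partial>M0)" for t
    have Xm[measurable]: "X \<in> borel_measurable M0"
      unfolding X_def using KK.Rf_meas[OF fm] by measurable
    have Xfin: "(\<integral>\<^sup>+t. ennreal ((X t)\<^sup>2) \<partial>M0) < \<infinity>"
      unfolding X_def by (rule L2_diff[OF fm KK.Rf_meas[OF fm] fin KK.Rf_L2[OF fm fin]])
    obtain Xn where xn: "(\<integral>\<^sup>+t. ennreal ((X t)\<^sup>2) \<partial>M0) \<le> ennreal Xn" "Xn \<ge> 0"
      using L2_bound_obtain[OF Xfin] by blast
    define x where "x t = a t - (\<integral>s. r t s * a s \<partial>M0)" for t
    have aeq: "a s = exp (mu * s) * f s" for s
      unfolding f_def by (simp add: mult.assoc[symmetric] exp_add[symmetric])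
    have ex1: "exp (mu * (t - s)) * exp (mu * s) = exp (mu * t)" for t s
      by (simp add: exp_add[symmetric] algebra_simps)
    have xX: "x t = exp (mu * t) * X t" for t
    proof -
      have "(\<lambda>s. r t s * a s) = (\<lambda>s. exp (mu * t) * (KK.R t s * f s))"
        by (intro ext) (simp add: r_def aeq mult_ac, simp add: exp_add[symmetric] algebra_simps)
      then have "(\<integral>s. r t s * a s \<partial>M0) = exp (mu * t) * (\<integral>s. KK.R t s * f s \<partial>M0)" by simp
      then show ?thesis unfolding x_def X_def by (simp add: aeq[of t] algebra_simps)
    qed
    have Xx: "(\<lambda>t. exp (- mu * t) * x t) = X"
      by (intro ext) (simp add: xX mult.assoc[symmetric] exp_add[symmetric])
    have Xx': "exp (- mu * t) * x t = X t" for t using fun_cong[OF Xx, of t] by simp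
    have Lx: "Lpw 2 (- mu) x" unfolding Lpw_iff Xx' using Xfin Xm by simp
    have kxe: "(\<lambda>s. k t s * x s) = (\<lambda>s. exp (mu * t) * (S.K t s * X s))" for t
      by (intro ext) (simp add: Kk xX mult_ac, simp add: exp_add[symmetric] algebra_simps)
    have Sx: "solves_fredholm k a x"
      unfolding solves_fredholm_def
    proof (rule AE_I2)
      fix t assume "t \<in> space M0"
      then have t: "t \<ge> 0" by simp
      have i: "integrable M0 (\<lambda>s. S.K t s * X s)"
        using KK.sol_eq(1)[OF fm fn t] unfolding X_def .
      have id: "X t + (\<integral>s. S.K t s * X s \<partial>M0) = f t"
        using KK.sol_eq(2)[OF fm fn t] unfolding X_def .
      show "integrable M0 (\<lambda>s. k t s * x s) \<and> x t + (\<integral>s. k t s * x s \<partial>M0) = a t"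
      proof
        show "integrable M0 (\<lambda>s. k t s * x s)" unfolding kxe by (intro integrable_mult_right i)
        have j: "(\<integral>s. k t s * x s \<partial>M0) = exp (mu * t) * (\<integral>s. S.K t s * X s \<partial>M0)"
          by (simp only: kxe integral_mult_right_zero)
        have "x t + (\<integral>s. k t s * x s \<partial>M0) = exp (mu * t) * (X t + (\<integral>s. S.K t s * X s \<partial>M0))"
          unfolding j xX[of t] by (simp add: distrib_left)
        also have "\<dots> = a t" unfolding id aeq[of t] ..
        finally show "x t + (\<integral>s. k t s * x s \<partial>M0) = a t" .
      qed
    qed
    have Uq: "AE t in M0. y t = x t" if Ly: "Lpw 2 (- mu) y" and Sy: "solves_fredholm k a y" for y
    proof -
      define Y where "Y t = exp (- mu * t) * y t" for t
      have Ym[measurable]: "Y \<in> borel_measurable M0" and Yfin: "(\<integral>\<^sup>+t. ennreal ((Y t)\<^sup>2) \<partial>M0) < \<infinity>"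
        using Ly unfolding Lpw_iff Y_def by auto
      obtain Yn where yn: "(\<integral>\<^sup>+t. ennreal ((Y t)\<^sup>2) \<partial>M0) \<le> ennreal Yn" "Yn \<ge> 0"
        using L2_bound_obtain[OF Yfin] by blast
      have yY: "y t = exp (mu * t) * Y t" for t
        unfolding Y_def by (simp add: mult.assoc[symmetric] exp_add[symmetric])
      have kye: "(\<lambda>s. k t s * y s) = (\<lambda>s. exp (mu * t) * (S.K t s * Y s))" for t
        by (intro ext) (simp add: Kk yY mult_ac, simp add: exp_add[symmetric] algebra_simps)
      define Z where "Z t = Y t - X t" for t
      have Zm[measurable]: "Z \<in> borel_measurable M0" unfolding Z_def by measurable
      have Zfin: "(\<integral>\<^sup>+t. ennreal ((Z t)\<^sup>2) \<partial>M0) < \<infinity>"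
        unfolding Z_def by (rule L2_diff[OF Ym Xm Yfin Xfin])
      obtain Zn where zn: "(\<integral>\<^sup>+t. ennreal ((Z t)\<^sup>2) \<partial>M0) \<le> ennreal Zn" "Zn \<ge> 0"
        using L2_bound_obtain[OF Zfin] by blast
      have "AE t in M0. Z t + (\<integral>s. S.K t s * Z s \<partial>M0) = 0"
        using Sy[unfolded solves_fredholm_def] AE_space
      proof eventually_elim
        case (elim t)
        then have t: "t \<ge> 0" and yt: "y t + (\<integral>s. k t s * y s \<partial>M0) = a t" by auto
        have j: "(\<integral>s. k t s * y s \<partial>M0) = exp (mu * t) * (\<integral>s. S.K t s * Y s \<partial>M0)"
          by (simp only: kye integral_mult_right_zero)
        have "exp (mu * t) * (Y t + (\<integral>s. S.K t s * Y s \<partial>M0)) = exp (mu * t) * f t"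
          using yt unfolding j yY[of t] aeq[of t] by (simp add: distrib_left)
        then have Yid: "Y t + (\<integral>s. S.K t s * Y s \<partial>M0) = f t" by simp
        have iY: "integrable M0 (\<lambda>s. S.K t s * Y s)"
          by (rule integrable_nn_bound[OF _ KK.K_row_fbound[OF Ym yn t]]) (use KK.K_row_meas[OF t] in measurable)
        have iX: "integrable M0 (\<lambda>s. S.K t s * X s)"
          using KK.sol_eq(1)[OF fm fn t] unfolding X_def .
        have Xid: "X t + (\<integral>s. S.K t s * X s \<partial>M0) = f t"
          using KK.sol_eq(2)[OF fm fn t] unfolding X_def .
        have "(\<integral>s. S.K t s * Z s \<partial>M0) = (\<integral>s. S.K t s * Y s \<partial>M0) - (\<integral>s. S.K t s * X s \<partial>M0)"
          unfolding Z_def right_diff_distrib by (rule Bochner_Integration.integral_diff[OF iY iX])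
        then show ?case using Yid Xid unfolding Z_def by simp
      qed
      then have "AE t in M0. Z t = 0" by (rule KK.sol_unique[OF Zm zn])
      then show ?thesis
        by eventually_elim (simp add: Z_def yY xX)
    qed
    have "AE t in M0. x t = a t - (\<integral>s. r t s * a s \<partial>M0)" by (simp add: x_def)
    then show ?thesis using Lx Sx Uq by blast
  qed
  show ?thesis
    using P1 P2 P3 P4 unfolding k_def by blast
qed


end
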